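(* Assume the inverse theorem $\mathrm{GI}(s)$ (as in the context). For every $s\ge1$, $M$, $\epsilon>0$ and growth function $\Phi$ there exist $K=K(s,M,\epsilon)$ and a growth function $\Phi'=\Phi'(s,\epsilon,M,\Phi)$ such that for every $s$-factor $\mathcal{B}$ of complexity $\le M$ and growth function $\Phi$ and every $f:[N]\to[0,1]$ there is a refinement $\mathcal{B}'$ of $\mathcal{B}$ of complexity $\le K$ and growth function $\Phi'$ with $\|f-\mathbb{E}(f|\mathcal{B}')\|_{U^{s+1}[N]}\le\epsilon$.
   Context: $\mathrm{GI}(s)$: for every $\delta>0$ there are $C,c>0$ such that any $f:[N]\to\mathbb{C}$ with $|f|\le1$ and $\|f\|_{U^{s+1}[N]}\ge\delta$ satisfies $|\mathbb{E}_{n\in[N]}f\overline{\psi}|\ge c$ for some degree $\le s$ polynomial nilsequence $\psi$ of complexity $\le C$ (i.e. $\psi(n)=F(g(n)\Gamma)$ with $(G/\Gamma,G_\bullet)$ a filtered nilmanifold of degree $\le s$ and complexity $\le C$, $g$ a polynomial sequence adapted to $G_\bullet$, $F$ of Lipschitz norm $\le C$). Growth function: monotone increasing $\Phi:\mathbb{R}^+\to\mathbb{R}^+$, $\Phi(M)\ge M$. $E\subseteq[N]$ is $s$-measurable with growth function $\Phi$ if for every $M\ge1$ there is a degree $\le s$ polynomial nilsequence $\psi:\mathbb{Z}\to[0,1]$ of complexity $\le\Phi(M)$ with $\|\psi-1_E\|_{L^2[N]}\le1/M$. An $s$-factor of complexity $\le M$ and growth function $\Phi$ is a partition of $[N]$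 into at most $M$ cells, each $s$-measurable with growth function $\Phi$. $\mathbb{E}(f|\mathcal{B})$ equals $\mathbb{E}_{n\in E_j}f(n)$ on each cell $E_j$. Refinement: every cell of $\mathcal{B}'$ is contained in a cell of $\mathcal{B}$. $U^k[N]$ is the normalised Gowers norm on $[N]$. *)

theory Defs
  imports "HOL-Analysis.Analysis"
begin

definition avgN :: "nat \<Rightarrow> (int \<Rightarrow> 'a::field) \<Rightarrow> 'a" where
  "avgN N h = (\<Sum>n\<in>{1..int N}. h n) / of_nat N"

definition L2N :: "nat \<Rightarrow> (int \<Rightarrow> complex) \<Rightarrow> real" where
  "L2N N h = sqrt (avgN N (\<lambda>n. (cmod (h n))\<^sup>2))"

definition cj :: "nat \<Rightarrow> complex \<Rightarrow> complex" where
  "cj j z = (if even j then z else cnj z)"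

definition gsum :: "nat \<Rightarrow> nat \<Rightarrow> (int \<Rightarrow> complex) \<Rightarrow> complex" where
  "gsum k N f =
     (\<Sum>x\<in>{1..int N}. \<Sum>h\<in>PiE {..<k} (\<lambda>_. {- int N..int N}).
        \<Prod>w\<in>Pow {..<k}. cj (card w)
           (let z = x + (\<Sum>i\<in>w. h i) in if z \<in> {1..int N} then f z else 0))"

text \<open>Normalised Gowers norm U^k[N]: the U^k norm of f 1_[N] divided by that of 1_[N].\<close>
definition gowersU :: "nat \<Rightarrow> nat \<Rightarrow> (int \<Rightarrow> complex) \<Rightarrow> real" where
  "gowersU k N f = (Re (gsum k N f) / Re (gsum k N (\<lambda>_. 1))) powr (1 / 2 ^ k)"

text \<open>A filtered nilmanifold with a Mal'cev basis X_0..X_{m-1} is modelled by its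
  Mal'cev coordinates: G is identified with R^m (vectors nat => real vanishing from m on),
  the group law mul is polynomial, exp(t X_i) is t e_i, every x equals
  exp(x_0 X_0) ... exp(x_{m-1} X_{m-1}), Gamma is the integer points, and
  G_i is the set of points whose first m - d i coordinates vanish.\<close>

definition gid :: "nat \<Rightarrow> real" where
  "gid = (\<lambda>_. 0)"

definition Vm :: "nat \<Rightarrow> (nat \<Rightarrow> real) set" where
  "Vm m = {x. \<forall>k\<ge>m. x k = 0}"

inductive polyfn :: "('a \<Rightarrow> real) set \<Rightarrow> ('a \<Rightarrow> real) \<Rightarrow> bool" for V where
  pconst: "polyfn V (\<lambda>_. a)"
| pvar: "v \<in> V \<Longrightarrow> polyfn V v"
| padd: "polyfn V p \<Longrightarrow> polyfn V q \<Longrightarrow> polyfn V (\<lambda>z. p z + q z)"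
| pmul: "polyfn V p \<Longrightarrow> polyfn V q \<Longrightarrow> polyfn V (\<lambda>z. p z * q z)"

definition ecoord :: "nat \<Rightarrow> real \<Rightarrow> (nat \<Rightarrow> real)" where
  "ecoord i t = (\<lambda>k. if k = i then t else 0)"

definition ginv :: "nat \<Rightarrow> ((nat \<Rightarrow> real) \<Rightarrow> (nat \<Rightarrow> real) \<Rightarrow> (nat \<Rightarrow> real))
                    \<Rightarrow> (nat \<Rightarrow> real) \<Rightarrow> (nat \<Rightarrow> real)" where
  "ginv m mul x = (THE y. y \<in> Vm m \<and> mul x y = gid)"

definition gcomm :: "nat \<Rightarrow> ((nat \<Rightarrow> real) \<Rightarrow> (nat \<Rightarrow> real) \<Rightarrow> (nat \<Rightarrow> real))
                    \<Rightarrow> (nat \<Rightarrow> real) \<Rightarrow> (nat \<Rightarrow> real) \<Rightarrow> (nat \<Rightarrow> real)" where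
  "gcomm m mul x y = mul (mul (mul x y) (ginv m mul x)) (ginv m mul y)"

definition Gsub :: "nat \<Rightarrow> (nat \<Rightarrow> nat) \<Rightarrow> nat \<Rightarrow> (nat \<Rightarrow> real) set" where
  "Gsub m d i = {x \<in> Vm m. \<forall>k < m - d i. x k = 0}"

definition Gam :: "nat \<Rightarrow> (nat \<Rightarrow> real) set" where
  "Gam m = {x \<in> Vm m. \<forall>k. x k \<in> \<int>}"

text \<open>malcev_model s m mul c d: filtered nilmanifold of degree <= s, dimension m,
  Mal'cev basis adapted to the filtration with structure constants c i j k,
  i.e. [X_i, X_j] = sum_k c i j k X_k, and d i = dim G_i.\<close>
definition malcev_model :: "nat \<Rightarrow> nat \<Rightarrow> ((nat \<Rightarrow> real) \<Rightarrow> (nat \<Rightarrow> real) \<Rightarrow> (nat \<Rightarrow> real))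
      \<Rightarrow> (nat \<Rightarrow> nat \<Rightarrow> nat \<Rightarrow> real) \<Rightarrow> (nat \<Rightarrow> nat) \<Rightarrow> bool" where
  "malcev_model s m mul c d \<longleftrightarrow>
     (\<forall>x\<in>Vm m. \<forall>y\<in>Vm m. mul x y \<in> Vm m) \<and>
     (\<forall>x\<in>Vm m. \<forall>y\<in>Vm m. \<forall>z\<in>Vm m. mul (mul x y) z = mul x (mul y z)) \<and>
     (\<forall>x\<in>Vm m. mul gid x = x \<and> mul x gid = x) \<and>
     (\<forall>x\<in>Vm m. \<exists>y\<in>Vm m. mul x y = gid \<and> mul y x = gid) \<and>
     (\<forall>k<m. \<exists>p. polyfn ({\<lambda>(x, y). x j | j. j < m} \<union> {\<lambda>(x, y). y j | j. j < m}) p \<and>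
                  (\<forall>x\<in>Vm m. \<forall>y\<in>Vm m. mul x y k = p (x, y))) \<and>
     (\<forall>i<m. \<forall>a b. mul (ecoord i a) (ecoord i b) = ecoord i (a + b)) \<and>
     (\<forall>x\<in>Vm m. x = foldr (\<lambda>i acc. mul (ecoord i (x i)) acc) [0..<m] gid) \<and>
     (\<forall>i<m. \<forall>j<m. \<forall>k<m.
        ((\<lambda>(a, b). gcomm m mul (ecoord i a) (ecoord j b) k / (a * b)) \<longlongrightarrow> c i j k)
          (at (0, 0) within {(a, b). a \<noteq> 0 \<and> b \<noteq> 0})) \<and>
     (\<forall>i<m. \<forall>j<m. \<forall>k<m. c i j k \<noteq> 0 \<longrightarrow> max i j < k) \<and>
     d 0 = m \<and> d 1 = m \<and> (\<forall>i. d (Suc i) \<le> d i) \<and> d (Suc s) = 0 \<and>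
     (\<forall>i. \<forall>x\<in>Gsub m d i. \<forall>y\<in>Gsub m d i. mul x y \<in> Gsub m d i \<and> ginv m mul x \<in> Gsub m d i) \<and>
     (\<forall>i j. \<forall>x\<in>Gsub m d i. \<forall>y\<in>Gsub m d j. gcomm m mul x y \<in> Gsub m d (i + j)) \<and>
     (\<forall>x\<in>Gam m. \<forall>y\<in>Gam m. mul x y \<in> Gam m \<and> ginv m mul x \<in> Gam m)"

definition rat_height_le :: "real \<Rightarrow> real \<Rightarrow> bool" where
  "rat_height_le r C \<longleftrightarrow> (\<exists>a b::int. b > 0 \<and> coprime a b \<and> r = of_int a / of_int b \<and>
                             of_int (max \<bar>a\<bar> b) \<le> C)"

fun gderiv :: "((nat \<Rightarrow> real) \<Rightarrow> (nat \<Rightarrow> real) \<Rightarrow> (nat \<Rightarrow> real)) \<Rightarrow> ((nat \<Rightarrow> real) \<Rightarrow> (nat \<Rightarrow> real))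
               \<Rightarrow> int list \<Rightarrow> (int \<Rightarrow> (nat \<Rightarrow> real)) \<Rightarrow> int \<Rightarrow> (nat \<Rightarrow> real)" where
  "gderiv mul iv [] g = g"
| "gderiv mul iv (h # hs) g = gderiv mul iv hs (\<lambda>n. mul (g (n + h)) (iv (g n)))"

definition polyseq :: "nat \<Rightarrow> ((nat \<Rightarrow> real) \<Rightarrow> (nat \<Rightarrow> real) \<Rightarrow> (nat \<Rightarrow> real)) \<Rightarrow> (nat \<Rightarrow> nat)
                       \<Rightarrow> (int \<Rightarrow> (nat \<Rightarrow> real)) \<Rightarrow> bool" where
  "polyseq m mul d g \<longleftrightarrow> (\<forall>hs n. gderiv mul (ginv m mul) hs g n \<in> Gsub m d (length hs))"

definition gnorm :: "nat \<Rightarrow> (nat \<Rightarrow> real) \<Rightarrow> real" where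
  "gnorm m x = Max (insert 0 ((\<lambda>k. \<bar>x k\<bar>) ` {..<m}))"

text \<open>Green--Tao metric on G: the largest metric with d(x,y) <= |psi(x y^-1)|.\<close>
definition distG :: "nat \<Rightarrow> ((nat \<Rightarrow> real) \<Rightarrow> (nat \<Rightarrow> real) \<Rightarrow> (nat \<Rightarrow> real))
                     \<Rightarrow> (nat \<Rightarrow> real) \<Rightarrow> (nat \<Rightarrow> real) \<Rightarrow> real" where
  "distG m mul x y = Inf {(\<Sum>i<n. min (gnorm m (mul (xs i) (ginv m mul (xs (Suc i)))))
                                     (gnorm m (mul (xs (Suc i)) (ginv m mul (xs i)))))
                          | n xs. xs 0 = x \<and> xs n = y \<and> (\<forall>i\<le>n. xs i \<in> Vm m)}"

definition distGG :: "nat \<Rightarrow> ((nat \<Rightarrow> real) \<Rightarrow> (nat \<Rightarrow> real) \<Rightarrow> (nat \<Rightarrow> real))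
                     \<Rightarrow> (nat \<Rightarrow> real) \<Rightarrow> (nat \<Rightarrow> real) \<Rightarrow> real" where
  "distGG m mul x y = Inf {distG m mul (mul x a) (mul y b) | a b. a \<in> Gam m \<and> b \<in> Gam m}"

definition nilseq :: "nat \<Rightarrow> real \<Rightarrow> (int \<Rightarrow> complex) \<Rightarrow> bool" where
  "nilseq s C \<psi> \<longleftrightarrow>
     (\<exists>m mul c d g F.
        malcev_model s m mul c d \<and> real m \<le> C \<and>
        (\<forall>i<m. \<forall>j<m. \<forall>k<m. rat_height_le (c i j k) C) \<and>
        polyseq m mul d g \<and>
        (\<forall>x\<in>Vm m. \<forall>a\<in>Gam m. F (mul x a) = F x) \<and>
        (\<exists>A B. 0 \<le> A \<and> 0 \<le> B \<and> A + B \<le> C \<and>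
               (\<forall>x\<in>Vm m. cmod (F x) \<le> A) \<and>
               (\<forall>x\<in>Vm m. \<forall>y\<in>Vm m. cmod (F x - F y) \<le> B * distGG m mul x y)) \<and>
        (\<forall>n. \<psi> n = F (g n)))"

definition GI :: "nat \<Rightarrow> bool" where
  "GI s \<longleftrightarrow> (\<forall>\<delta>>0. \<exists>C c. C > 0 \<and> c > 0 \<and>
     (\<forall>N::nat. \<forall>f::int \<Rightarrow> complex. (\<forall>n\<in>{1..int N}. cmod (f n) \<le> 1) \<longrightarrow>
        gowersU (s + 1) N f \<ge> \<delta> \<longrightarrow>
        (\<exists>\<psi>. nilseq s C \<psi> \<and> cmod (avgN N (\<lambda>n. f n * cnj (\<psi> n))) \<ge> c)))"

definition growth :: "(real \<Rightarrow> real) \<Rightarrow> bool" where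
  "growth \<Phi> \<longleftrightarrow> (\<forall>x y. 0 < x \<longrightarrow> x \<le> y \<longrightarrow> \<Phi> x \<le> \<Phi> y) \<and> (\<forall>x>0. x \<le> \<Phi> x)"

definition smeasurable :: "nat \<Rightarrow> (real \<Rightarrow> real) \<Rightarrow> nat \<Rightarrow> int set \<Rightarrow> bool" where
  "smeasurable s \<Phi> N E \<longleftrightarrow> E \<subseteq> {1..int N} \<and>
     (\<forall>M\<ge>1. \<exists>\<psi>. nilseq s (\<Phi> M) \<psi> \<and> (\<forall>n. \<psi> n \<in> complex_of_real ` {0..1}) \<and>
              L2N N (\<lambda>n. \<psi> n - complex_of_real (indicator E n)) \<le> 1 / M)"

definition sfactor :: "nat \<Rightarrow> nat \<Rightarrow> nat \<Rightarrow> (real \<Rightarrow> real) \<Rightarrow> int set set \<Rightarrow> bool" where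
  "sfactor s N M \<Phi> B \<longleftrightarrow> finite B \<and> \<Union>B = {1..int N} \<and> {} \<notin> B \<and>
     (\<forall>E\<in>B. \<forall>E'\<in>B. E \<noteq> E' \<longrightarrow> E \<inter> E' = {}) \<and> card B \<le> M \<and>
     (\<forall>E\<in>B. smeasurable s \<Phi> N E)"

definition condexp :: "int set set \<Rightarrow> (int \<Rightarrow> real) \<Rightarrow> int \<Rightarrow> real" where
  "condexp B f n = (\<Sum>E\<in>B. if n \<in> E then (\<Sum>m\<in>E. f m) / real (card E) else 0)"

definition refines :: "int set set \<Rightarrow> int set set \<Rightarrow> bool" where
  "refines B' B \<longleftrightarrow> (\<forall>E'\<in>B'. \<exists>E\<in>B. E' \<subseteq> E)"

end

theory Submission
  imports Defs
begin

definition lev :: "(nat \<Rightarrow> nat) \<Rightarrow> nat \<Rightarrow> nat" where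
  "lev a k = (LEAST i. k < a (Suc i))"

lemma lev_props:
  assumes "mono a" "a 0 = 0" "k < a S"
  shows "a (lev a k) \<le> k" "k < a (Suc (lev a k))"
proof -
  have ex: "\<exists>i. k < a (Suc i)"
  proof (cases S)
    case 0 then show ?thesis using assms by simp
  next
    case (Suc j) then show ?thesis using assms by blast
  qed
  show "k < a (Suc (lev a k))" unfolding lev_def using ex by (rule LeastI_ex)
  show "a (lev a k) \<le> k"
  proof (cases "lev a k")
    case 0 then show ?thesis using assms by simp
  next
    case (Suc j)
    then have "j < lev a k" by simp
    then have "\<not> k < a (Suc j)" unfolding lev_def using not_less_Least by blast
    then show ?thesis using Suc by simp
  qed
qed

lemma lev_iff:
  assumes "mono a" "a 0 = 0" "k < a S"
  shows "k < a i \<longleftrightarrow> lev a k < i"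
proof
  assume "k < a i"
  show "lev a k < i"
  proof (rule ccontr)
    assume "\<not> lev a k < i"
    then have "a i \<le> a (lev a k)" using assms(1) by (simp add: monoD)
    then show False using lev_props(1)[OF assms] \<open>k < a i\<close> by simp
  qed
next
  assume "lev a k < i"
  then have "a (Suc (lev a k)) \<le> a i" using assms(1) by (simp add: monoD)
  then show "k < a i" using lev_props(2)[OF assms] by simp
qed

locale twofilt =
  fixes m1 m2 :: nat and d1 d2 :: "nat \<Rightarrow> nat" and s :: nat
  assumes d1_0: "d1 0 = m1" and d2_0: "d2 0 = m2"
    and d1_S: "\<And>i. d1 (Suc i) \<le> d1 i" and d2_S: "\<And>i. d2 (Suc i) \<le> d2 i"
    and d1_s: "d1 (Suc s) = 0" and d2_s: "d2 (Suc s) = 0"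
begin

definition a1 :: "nat \<Rightarrow> nat" where "a1 i = m1 - d1 i"
definition a2 :: "nat \<Rightarrow> nat" where "a2 i = m2 - d2 i"

lemma d1_anti: "i \<le> j \<Longrightarrow> d1 j \<le> d1 i"
  using lift_Suc_antimono_le[of d1] d1_S by blast
lemma d2_anti: "i \<le> j \<Longrightarrow> d2 j \<le> d2 i"
  using lift_Suc_antimono_le[of d2] d2_S by blast

lemma mono_a1: "mono a1" unfolding mono_def a1_def using d1_anti by (simp add: diff_le_mono2)
lemma mono_a2: "mono a2" unfolding mono_def a2_def using d2_anti by (simp add: diff_le_mono2)
lemma a1_0: "a1 0 = 0" by (simp add: a1_def d1_0)
lemma a2_0: "a2 0 = 0" by (simp add: a2_def d2_0)
lemma a1_S: "a1 (Suc s) = m1" by (simp add: a1_def d1_s)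
lemma a2_S: "a2 (Suc s) = m2" by (simp add: a2_def d2_s)
lemma d1_le: "d1 i \<le> m1" using d1_anti[of 0 i] d1_0 by simp
lemma d2_le: "d2 i \<le> m2" using d2_anti[of 0 i] d2_0 by simp

definition pos1 :: "nat \<Rightarrow> nat" where "pos1 k = k + a2 (lev a1 k)"
definition pos2 :: "nat \<Rightarrow> nat" where "pos2 k = k + a1 (Suc (lev a2 k))"

lemma lev1_iff: "k < m1 \<Longrightarrow> k < a1 i \<longleftrightarrow> lev a1 k < i"
  using lev_iff[OF mono_a1 a1_0, of k "Suc s"] a1_S by simp
lemma lev2_iff: "k < m2 \<Longrightarrow> k < a2 i \<longleftrightarrow> lev a2 k < i"
  using lev_iff[OF mono_a2 a2_0, of k "Suc s"] a2_S by simp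

lemma pos1_lt: "k < m1 \<Longrightarrow> pos1 k < a1 i + a2 i \<longleftrightarrow> k < a1 i"
proof
  assume k: "k < m1" and "pos1 k < a1 i + a2 i"
  show "k < a1 i"
  proof (rule ccontr)
    assume "\<not> k < a1 i"
    then have "\<not> lev a1 k < i" using lev1_iff[OF k] by simp
    then have "a2 i \<le> a2 (lev a1 k)" using mono_a2 by (simp add: monoD)
    then show False using \<open>pos1 k < a1 i + a2 i\<close> \<open>\<not> k < a1 i\<close> unfolding pos1_def by simp
  qed
next
  assume k: "k < m1" and "k < a1 i"
  then have "lev a1 k < i" using lev1_iff by simp
  then have "a2 (lev a1 k) \<le> a2 i" using mono_a2 by (simp add: monoD)
  then show "pos1 k < a1 i + a2 i" using \<open>k < a1 i\<close> unfolding pos1_def by simp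
qed

lemma pos2_lt: "k < m2 \<Longrightarrow> pos2 k < a1 i + a2 i \<longleftrightarrow> k < a2 i"
proof
  assume k: "k < m2" and "pos2 k < a1 i + a2 i"
  show "k < a2 i"
  proof (rule ccontr)
    assume "\<not> k < a2 i"
    then have "\<not> lev a2 k < i" using lev2_iff[OF k] by simp
    then have "a1 i \<le> a1 (Suc (lev a2 k))" using mono_a1 by (simp add: monoD)
    then show False using \<open>pos2 k < a1 i + a2 i\<close> \<open>\<not> k < a2 i\<close> unfolding pos2_def by simp
  qed
next
  assume k: "k < m2" and "k < a2 i"
  then have "lev a2 k < i" using lev2_iff by simp
  then have "a1 (Suc (lev a2 k)) \<le> a1 i" using mono_a1 by (simp add: monoD)
  then show "pos2 k < a1 i + a2 i" using \<open>k < a2 i\<close> unfolding pos2_def by simp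
qed

lemma pos1_m: "k < m1 \<Longrightarrow> pos1 k < m1 + m2"
  using pos1_lt[of k "Suc s"] a1_S a2_S by simp
lemma pos2_m: "k < m2 \<Longrightarrow> pos2 k < m1 + m2"
  using pos2_lt[of k "Suc s"] a1_S a2_S by simp

lemma pos_disj: "k < m1 \<Longrightarrow> k' < m2 \<Longrightarrow> pos1 k \<noteq> pos2 k'"
proof
  assume k: "k < m1" and k': "k' < m2" and eq: "pos1 k = pos2 k'"
  define i where "i = lev a1 k"
  have "k < a1 (Suc i)" using lev1_iff[OF k] i_def by simp
  then have "pos2 k' < a1 (Suc i) + a2 (Suc i)" using pos1_lt[OF k] eq by simp
  then have "k' < a2 (Suc i)" using pos2_lt[OF k'] by simp
  then have "lev a2 k' \<le> i" using lev2_iff[OF k'] by simp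
  have "\<not> k < a1 i" using lev1_iff[OF k] i_def by simp
  then have "\<not> pos2 k' < a1 i + a2 i" using pos1_lt[OF k] eq by simp
  then have "\<not> k' < a2 i" using pos2_lt[OF k'] by simp
  then have "i \<le> lev a2 k'" using lev2_iff[OF k'] by simp
  then have li: "lev a2 k' = i" using \<open>lev a2 k' \<le> i\<close> by simp
  have "pos1 k = k + a2 i" unfolding pos1_def i_def by simp
  moreover have "pos2 k' = k' + a1 (Suc i)" unfolding pos2_def li by simp
  ultimately show False using eq \<open>k < a1 (Suc i)\<close> \<open>\<not> k' < a2 i\<close> by simp
qed

lemma pos1_mono: "k < k' \<Longrightarrow> k' < m1 \<Longrightarrow> pos1 k < pos1 k'"
proof -
  assume kk: "k < k'" "k' < m1"
  have "lev a1 k \<le> lev a1 k'"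
  proof (rule ccontr)
    assume "\<not> ?thesis"
    then have "lev a1 k' < lev a1 k" by simp
    then have "k' < a1 (lev a1 k)" using lev1_iff kk by simp
    moreover have "\<not> k < a1 (lev a1 k)" using lev1_iff kk by simp
    ultimately show False using kk by simp
  qed
  then have "a2 (lev a1 k) \<le> a2 (lev a1 k')" using mono_a2 by (simp add: monoD)
  then show ?thesis using kk unfolding pos1_def by simp
qed

lemma pos2_mono: "k < k' \<Longrightarrow> k' < m2 \<Longrightarrow> pos2 k < pos2 k'"
proof -
  assume kk: "k < k'" "k' < m2"
  have "lev a2 k \<le> lev a2 k'"
  proof (rule ccontr)
    assume "\<not> ?thesis"
    then have "lev a2 k' < lev a2 k" by simp
    then have "k' < a2 (lev a2 k)" using lev2_iff kk by simp
    moreover have "\<not> k < a2 (lev a2 k)" using lev2_iff kk by simp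
    ultimately show False using kk by simp
  qed
  then have "a1 (Suc (lev a2 k)) \<le> a1 (Suc (lev a2 k'))" using mono_a1 by (simp add: monoD)
  then show ?thesis using kk unfolding pos2_def by simp
qed

lemma inj1: "inj_on pos1 {..<m1}"
proof (rule inj_onI)
  fix x y assume "x \<in> {..<m1}" "y \<in> {..<m1}" "pos1 x = pos1 y"
  then show "x = y" using pos1_mono[of x y] pos1_mono[of y x] by (cases x y rule: linorder_cases) auto
qed
lemma inj2: "inj_on pos2 {..<m2}"
proof (rule inj_onI)
  fix x y assume "x \<in> {..<m2}" "y \<in> {..<m2}" "pos2 x = pos2 y"
  then show "x = y" using pos2_mono[of x y] pos2_mono[of y x] by (cases x y rule: linorder_cases) auto
qed

lemma cover: "pos1 ` {..<m1} \<union> pos2 ` {..<m2} = {..<m1+m2}"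
proof (rule card_subset_eq)
  show "finite {..<m1 + m2}" by simp
  show "pos1 ` {..<m1} \<union> pos2 ` {..<m2} \<subseteq> {..<m1 + m2}"
  proof
    fix x assume "x \<in> pos1 ` {..<m1} \<union> pos2 ` {..<m2}"
    then show "x \<in> {..<m1 + m2}" using pos1_m pos2_m by blast
  qed
  have "pos1 ` {..<m1} \<inter> pos2 ` {..<m2} = {}"
  proof (rule ccontr)
    assume "\<not> ?thesis"
    then obtain k k' where "k < m1" "k' < m2" "pos1 k = pos2 k'" by blast
    then show False using pos_disj by blast
  qed
  then have "card (pos1 ` {..<m1} \<union> pos2 ` {..<m2}) = card (pos1 ` {..<m1}) + card (pos2 ` {..<m2})"
    by (simp add: card_Un_disjoint)
  also have "\<dots> = m1 + m2" using inj1 inj2 by (simp add: card_image)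
  finally show "card (pos1 ` {..<m1} \<union> pos2 ` {..<m2}) = card {..<m1 + m2}" by simp
qed

end

definition grp :: "nat \<Rightarrow> ((nat \<Rightarrow> real) \<Rightarrow> (nat \<Rightarrow> real) \<Rightarrow> (nat \<Rightarrow> real)) \<Rightarrow> bool" where
  "grp m mul \<longleftrightarrow>
     (\<forall>x\<in>Vm m. \<forall>y\<in>Vm m. mul x y \<in> Vm m) \<and>
     (\<forall>x\<in>Vm m. \<forall>y\<in>Vm m. \<forall>z\<in>Vm m. mul (mul x y) z = mul x (mul y z)) \<and>
     (\<forall>x\<in>Vm m. mul gid x = x \<and> mul x gid = x) \<and>
     (\<forall>x\<in>Vm m. \<exists>y\<in>Vm m. mul x y = gid \<and> mul y x = gid)"

lemma malcev_grp: "malcev_model s m mul c d \<Longrightarrow> grp m mul"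
  unfolding malcev_model_def grp_def by (elim conjE) (intro conjI; assumption)

lemma gid_Vm[simp]: "gid \<in> Vm m" by (simp add: gid_def Vm_def)

lemma grp_closed: "grp m mul \<Longrightarrow> x \<in> Vm m \<Longrightarrow> y \<in> Vm m \<Longrightarrow> mul x y \<in> Vm m"
  unfolding grp_def by blast
lemma grp_assoc: "grp m mul \<Longrightarrow> x \<in> Vm m \<Longrightarrow> y \<in> Vm m \<Longrightarrow> z \<in> Vm m \<Longrightarrow> mul (mul x y) z = mul x (mul y z)"
  unfolding grp_def by blast
lemma grp_idl: "grp m mul \<Longrightarrow> x \<in> Vm m \<Longrightarrow> mul gid x = x"
  unfolding grp_def by blast
lemma grp_idr: "grp m mul \<Longrightarrow> x \<in> Vm m \<Longrightarrow> mul x gid = x"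
  unfolding grp_def by blast

lemma ginv_unique:
  assumes "grp m mul" "x \<in> Vm m" "y \<in> Vm m" "mul x y = gid"
  shows "ginv m mul x = y"
  unfolding ginv_def
proof (rule the_equality)
  show "y \<in> Vm m \<and> mul x y = gid" using assms by simp
next
  fix y' assume y': "y' \<in> Vm m \<and> mul x y' = gid"
  obtain z where z: "z \<in> Vm m" "mul x z = gid" "mul z x = gid" using assms(1,2) unfolding grp_def by blast
  have "y' = mul (mul z x) y'" using assms(1) y' z by (simp add: grp_idl)
  also have "\<dots> = mul z (mul x y')" using y' by (intro grp_assoc[OF assms(1) z(1) assms(2)]) simp
  also have "\<dots> = mul z gid" using y' by simp
  also have "\<dots> = z" using assms(1) z(1) by (simp add: grp_idr)
  finally have 1: "y' = z" .
  have "y = mul (mul z x) y" using assms(1,3) z by (simp add: grp_idl)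
  also have "\<dots> = mul z (mul x y)" by (rule grp_assoc[OF assms(1) z(1) assms(2,3)])
  also have "\<dots> = mul z gid" using assms(4) by simp
  also have "\<dots> = z" using assms(1) z(1) by (simp add: grp_idr)
  finally show "y' = y" using 1 by simp
qed

lemma ginv_props:
  assumes "grp m mul" "x \<in> Vm m"
  shows "ginv m mul x \<in> Vm m" "mul x (ginv m mul x) = gid" "mul (ginv m mul x) x = gid"
proof -
  obtain z where z: "z \<in> Vm m" "mul x z = gid" "mul z x = gid" using assms unfolding grp_def by blast
  have "ginv m mul x = z" using ginv_unique[OF assms z(1,2)] .
  then show "ginv m mul x \<in> Vm m" "mul x (ginv m mul x) = gid" "mul (ginv m mul x) x = gid"
    using z by auto
qed

lemma ginv_gid: "grp m mul \<Longrightarrow> ginv m mul gid = gid"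
  using ginv_unique[of m mul gid gid] grp_idl by simp

lemma gcomm_gid1: "grp m mul \<Longrightarrow> y \<in> Vm m \<Longrightarrow> gcomm m mul gid y = gid"
  unfolding gcomm_def by (simp add: grp_idl grp_idr ginv_gid ginv_props)
lemma gcomm_gid2: "grp m mul \<Longrightarrow> x \<in> Vm m \<Longrightarrow> gcomm m mul x gid = gid"
  unfolding gcomm_def by (simp add: grp_idl grp_idr ginv_gid ginv_props)

context twofilt begin

lemma pos_disj': "k < m1 \<Longrightarrow> k' < m2 \<Longrightarrow> pos2 k' \<noteq> pos1 k"
  using pos_disj by metis

definition split1 :: "(nat \<Rightarrow> real) \<Rightarrow> (nat \<Rightarrow> real)" where
  "split1 x = (\<lambda>k. if k < m1 then x (pos1 k) else 0)"
definition split2 :: "(nat \<Rightarrow> real) \<Rightarrow> (nat \<Rightarrow> real)" where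
  "split2 x = (\<lambda>k. if k < m2 then x (pos2 k) else 0)"
definition comb :: "(nat \<Rightarrow> real) \<Rightarrow> (nat \<Rightarrow> real) \<Rightarrow> (nat \<Rightarrow> real)" where
  "comb u v = (\<lambda>p. if p \<in> pos1 ` {..<m1} then u (the_inv_into {..<m1} pos1 p)
                   else if p \<in> pos2 ` {..<m2} then v (the_inv_into {..<m2} pos2 p) else 0)"

lemma comb_pos1: "k < m1 \<Longrightarrow> comb u v (pos1 k) = u k"
  unfolding comb_def using the_inv_into_f_f[OF inj1] by simp

lemma comb_pos2: "k < m2 \<Longrightarrow> comb u v (pos2 k) = v k"
proof -
  assume k: "k < m2"
  have "pos2 k \<notin> pos1 ` {..<m1}" using pos_disj' k by auto
  then show ?thesis unfolding comb_def using the_inv_into_f_f[OF inj2] k by simp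
qed

lemma comb_out: "m1 + m2 \<le> p \<Longrightarrow> comb u v p = 0"
proof -
  assume p: "m1 + m2 \<le> p"
  have "p \<notin> pos1 ` {..<m1}" "p \<notin> pos2 ` {..<m2}" using pos1_m pos2_m p by fastforce+
  then show ?thesis unfolding comb_def by simp
qed

lemma comb_Vm[simp]: "comb u v \<in> Vm (m1 + m2)"
  unfolding Vm_def using comb_out by simp

lemma split1_Vm[simp]: "split1 x \<in> Vm m1" unfolding Vm_def split1_def by simp
lemma split2_Vm[simp]: "split2 x \<in> Vm m2" unfolding Vm_def split2_def by simp

lemma split1_comb[simp]: "u \<in> Vm m1 \<Longrightarrow> split1 (comb u v) = u"
  unfolding split1_def by (rule ext) (auto simp: comb_pos1 Vm_def)
lemma split2_comb[simp]: "v \<in> Vm m2 \<Longrightarrow> split2 (comb u v) = v"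
  unfolding split2_def by (rule ext) (auto simp: comb_pos2 Vm_def)

lemma Vm_cases:
  assumes "p < m1 + m2"
  obtains k where "k < m1" "p = pos1 k" | k where "k < m2" "p = pos2 k"
  using cover assms by blast

lemma Vm_eqI:
  assumes "x \<in> Vm (m1 + m2)" "y \<in> Vm (m1 + m2)" "split1 x = split1 y" "split2 x = split2 y"
  shows "x = y"
proof
  fix p show "x p = y p"
  proof (cases "p < m1 + m2")
    case True
    then show ?thesis
    proof (cases rule: Vm_cases)
      case (1 k) then show ?thesis using fun_cong[OF assms(3), of k] unfolding split1_def by simp
    next
      case (2 k) then show ?thesis using fun_cong[OF assms(4), of k] unfolding split2_def by simp
    qed
  next
    case False then show ?thesis using assms(1,2) unfolding Vm_def by simp
  qed
qed

lemma comb_split[simp]: "x \<in> Vm (m1 + m2) \<Longrightarrow> comb (split1 x) (split2 x) = x"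
  by (rule Vm_eqI) simp_all

lemma split1_gid[simp]: "split1 gid = gid" unfolding split1_def gid_def by auto
lemma split2_gid[simp]: "split2 gid = gid" unfolding split2_def gid_def by auto

lemma split1_ecoord1: "k < m1 \<Longrightarrow> split1 (ecoord (pos1 k) t) = ecoord k t"
  unfolding split1_def ecoord_def
  by (rule ext) (auto dest: inj_onD[OF inj1])
lemma split2_ecoord1: "k < m1 \<Longrightarrow> split2 (ecoord (pos1 k) t) = gid"
  unfolding split2_def ecoord_def gid_def using pos_disj pos_disj' by (auto intro!: ext)
lemma split1_ecoord2: "k < m2 \<Longrightarrow> split1 (ecoord (pos2 k) t) = gid"
  unfolding split1_def ecoord_def gid_def using pos_disj pos_disj' by (auto intro!: ext)
lemma split2_ecoord2: "k < m2 \<Longrightarrow> split2 (ecoord (pos2 k) t) = ecoord k t"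
  unfolding split2_def ecoord_def
  by (rule ext) (auto dest: inj_onD[OF inj2])

lemma ecoord_Vm: "k < m \<Longrightarrow> ecoord k t \<in> Vm m" unfolding ecoord_def Vm_def by simp

definition mulP :: "((nat \<Rightarrow> real) \<Rightarrow> (nat \<Rightarrow> real) \<Rightarrow> (nat \<Rightarrow> real)) \<Rightarrow>
   ((nat \<Rightarrow> real) \<Rightarrow> (nat \<Rightarrow> real) \<Rightarrow> (nat \<Rightarrow> real)) \<Rightarrow> (nat \<Rightarrow> real) \<Rightarrow> (nat \<Rightarrow> real) \<Rightarrow> (nat \<Rightarrow> real)" where
  "mulP mul1 mul2 x y = comb (mul1 (split1 x) (split1 y)) (mul2 (split2 x) (split2 y))"

lemma split1_mulP: "grp m1 mul1 \<Longrightarrow> split1 (mulP mul1 mul2 x y) = mul1 (split1 x) (split1 y)"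
  unfolding mulP_def by (simp add: grp_closed)
lemma split2_mulP: "grp m2 mul2 \<Longrightarrow> split2 (mulP mul1 mul2 x y) = mul2 (split2 x) (split2 y)"
  unfolding mulP_def by (simp add: grp_closed)

lemma mulP_Vm[simp]: "mulP mul1 mul2 x y \<in> Vm (m1 + m2)" unfolding mulP_def by simp

lemma grpP: assumes g1: "grp m1 mul1" and g2: "grp m2 mul2"
  shows "grp (m1 + m2) (mulP mul1 mul2)"
proof -
  have A: "\<forall>x\<in>Vm (m1 + m2). \<forall>y\<in>Vm (m1 + m2). \<forall>z\<in>Vm (m1 + m2).
     mulP mul1 mul2 (mulP mul1 mul2 x y) z = mulP mul1 mul2 x (mulP mul1 mul2 y z)"
    by (intro ballI, rule Vm_eqI) (simp_all add: split1_mulP[OF g1] split2_mulP[OF g2] grp_assoc[OF g1] grp_assoc[OF g2])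
  have I: "\<forall>x\<in>Vm (m1 + m2). mulP mul1 mul2 gid x = x \<and> mulP mul1 mul2 x gid = x"
    by (simp add: mulP_def grp_idl[OF g1] grp_idl[OF g2] grp_idr[OF g1] grp_idr[OF g2])
  have V: "\<forall>x\<in>Vm (m1 + m2). \<exists>y\<in>Vm (m1 + m2). mulP mul1 mul2 x y = gid \<and> mulP mul1 mul2 y x = gid"
  proof
    fix x assume x: "x \<in> Vm (m1 + m2)"
    define y where "y = comb (ginv m1 mul1 (split1 x)) (ginv m2 mul2 (split2 x))"
    have "y \<in> Vm (m1 + m2)" unfolding y_def by simp
    moreover have "mulP mul1 mul2 x y = gid" "mulP mul1 mul2 y x = gid"
      unfolding y_def mulP_def using ginv_props[OF g1, of "split1 x"] ginv_props[OF g2, of "split2 x"]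
      by (simp_all add: Vm_eqI)
    ultimately show "\<exists>y\<in>Vm (m1 + m2). mulP mul1 mul2 x y = gid \<and> mulP mul1 mul2 y x = gid" by blast
  qed
  show ?thesis unfolding grp_def using A I V by simp
qed

lemma ginvP: assumes g1: "grp m1 mul1" and g2: "grp m2 mul2" and x: "x \<in> Vm (m1 + m2)"
  shows "ginv (m1 + m2) (mulP mul1 mul2) x = comb (ginv m1 mul1 (split1 x)) (ginv m2 mul2 (split2 x))"
proof (rule ginv_unique[OF grpP[OF g1 g2] x])
  show "comb (ginv m1 mul1 (split1 x)) (ginv m2 mul2 (split2 x)) \<in> Vm (m1 + m2)" by simp
  show "mulP mul1 mul2 x (comb (ginv m1 mul1 (split1 x)) (ginv m2 mul2 (split2 x))) = gid"
    unfolding mulP_def using ginv_props[OF g1, of "split1 x"] ginv_props[OF g2, of "split2 x"]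
    by (simp add: Vm_eqI)
qed

lemma split1_ginvP: "grp m1 mul1 \<Longrightarrow> grp m2 mul2 \<Longrightarrow> x \<in> Vm (m1 + m2) \<Longrightarrow>
   split1 (ginv (m1 + m2) (mulP mul1 mul2) x) = ginv m1 mul1 (split1 x)"
  using ginvP ginv_props by simp
lemma split2_ginvP: "grp m1 mul1 \<Longrightarrow> grp m2 mul2 \<Longrightarrow> x \<in> Vm (m1 + m2) \<Longrightarrow>
   split2 (ginv (m1 + m2) (mulP mul1 mul2) x) = ginv m2 mul2 (split2 x)"
  using ginvP ginv_props by simp


lemma split1_gcommP: "grp m1 mul1 \<Longrightarrow> grp m2 mul2 \<Longrightarrow> x \<in> Vm (m1 + m2) \<Longrightarrow> y \<in> Vm (m1 + m2) \<Longrightarrow>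
   split1 (gcomm (m1 + m2) (mulP mul1 mul2) x y) = gcomm m1 mul1 (split1 x) (split1 y)"
  unfolding gcomm_def by (simp add: split1_mulP split1_ginvP)
lemma split2_gcommP: "grp m1 mul1 \<Longrightarrow> grp m2 mul2 \<Longrightarrow> x \<in> Vm (m1 + m2) \<Longrightarrow> y \<in> Vm (m1 + m2) \<Longrightarrow>
   split2 (gcomm (m1 + m2) (mulP mul1 mul2) x y) = gcomm m2 mul2 (split2 x) (split2 y)"
  unfolding gcomm_def by (simp add: split2_mulP split2_ginvP)

end

lemma polyfn_comp:
  assumes "polyfn V p" "\<And>v. v \<in> V \<Longrightarrow> (\<lambda>z. v (h z)) \<in> V'"
  shows "polyfn V' (\<lambda>z. p (h z))"
  using assms(1)
proof (induction rule: polyfn.induct)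
  case (pconst a) then show ?case by (rule polyfn.pconst)
next
  case (pvar v) then show ?case using assms(2) by (simp add: polyfn.pvar)
next
  case (padd p q) then show ?case using polyfn.padd by blast
next
  case (pmul p q) then show ?case using polyfn.pmul by blast
qed

lemma ecoordVm: "k < m \<Longrightarrow> ecoord k t \<in> Vm m" unfolding ecoord_def Vm_def by simp

lemma foldr_Vm:
  assumes "grp m mul" "\<forall>k\<in>set L. k < m"
  shows "foldr (\<lambda>k acc. mul (ecoord k (f k)) acc) L gid \<in> Vm m"
  using assms(2)
proof (induction L)
  case Nil then show ?case by simp
next
  case (Cons a L) then show ?case using grp_closed[OF assms(1)] by (simp add: ecoordVm)
qed

context twofilt begin

definition inv1 where "inv1 = the_inv_into {..<m1} pos1"
definition inv2 where "inv2 = the_inv_into {..<m2} pos2"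
abbreviation "I1 \<equiv> pos1 ` {..<m1}"
abbreviation "I2 \<equiv> pos2 ` {..<m2}"

lemma inv1_pos1[simp]: "k < m1 \<Longrightarrow> inv1 (pos1 k) = k"
  unfolding inv1_def using the_inv_into_f_f[OF inj1] by simp
lemma inv2_pos2[simp]: "k < m2 \<Longrightarrow> inv2 (pos2 k) = k"
  unfolding inv2_def using the_inv_into_f_f[OF inj2] by simp
lemma inv1_lt: "p \<in> I1 \<Longrightarrow> inv1 p < m1" by auto
lemma inv2_lt: "p \<in> I2 \<Longrightarrow> inv2 p < m2" by auto

definition cP :: "(nat \<Rightarrow> nat \<Rightarrow> nat \<Rightarrow> real) \<Rightarrow> (nat \<Rightarrow> nat \<Rightarrow> nat \<Rightarrow> real) \<Rightarrow> nat \<Rightarrow> nat \<Rightarrow> nat \<Rightarrow> real" where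
  "cP c1 c2 p q r = (if p \<in> I1 \<and> q \<in> I1 \<and> r \<in> I1 then c1 (inv1 p) (inv1 q) (inv1 r)
       else if p \<in> I2 \<and> q \<in> I2 \<and> r \<in> I2 then c2 (inv2 p) (inv2 q) (inv2 r) else 0)"

definition dP :: "nat \<Rightarrow> nat" where "dP i = d1 i + d2 i"

lemma notI2: "k < m1 \<Longrightarrow> pos1 k \<notin> I2" using pos_disj by auto
lemma notI1: "k < m2 \<Longrightarrow> pos2 k \<notin> I1" using pos_disj' by auto

lemma Gsub_char: "x \<in> Gsub (m1 + m2) dP i \<longleftrightarrow>
    x \<in> Vm (m1 + m2) \<and> split1 x \<in> Gsub m1 d1 i \<and> split2 x \<in> Gsub m2 d2 i"
proof -
  have e: "m1 + m2 - dP i = a1 i + a2 i" unfolding dP_def a1_def a2_def using d1_le[of i] d2_le[of i] by simp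
  have a1l: "a1 i \<le> m1" and a2l: "a2 i \<le> m2" unfolding a1_def a2_def by simp_all
  show ?thesis
  proof
    assume x: "x \<in> Gsub (m1 + m2) dP i"
    then have xv: "x \<in> Vm (m1 + m2)" and z: "\<forall>p < a1 i + a2 i. x p = 0" unfolding Gsub_def e by auto
    have "split1 x \<in> Gsub m1 d1 i" unfolding Gsub_def
    proof (simp, intro allI impI)
      fix k assume "k < m1 - d1 i"
      then have k: "k < a1 i" "k < m1" unfolding a1_def by simp_all
      then show "split1 x k = 0" unfolding split1_def using z pos1_lt[of k i] by simp
    qed
    moreover have "split2 x \<in> Gsub m2 d2 i" unfolding Gsub_def
    proof (simp, intro allI impI)
      fix k assume "k < m2 - d2 i"
      then have k: "k < a2 i" "k < m2" unfolding a2_def by simp_all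
      then show "split2 x k = 0" unfolding split2_def using z pos2_lt[of k i] by simp
    qed
    ultimately show "x \<in> Vm (m1 + m2) \<and> split1 x \<in> Gsub m1 d1 i \<and> split2 x \<in> Gsub m2 d2 i" using xv by simp
  next
    assume A: "x \<in> Vm (m1 + m2) \<and> split1 x \<in> Gsub m1 d1 i \<and> split2 x \<in> Gsub m2 d2 i"
    have "x p = 0" if p: "p < a1 i + a2 i" for p
    proof -
      have pm: "p < m1 + m2" using p a1l a2l by simp
      then show ?thesis
      proof (cases rule: Vm_cases)
        case (1 k)
        then have "k < a1 i" using pos1_lt[of k i] p by simp
        then have "split1 x k = 0" using A unfolding Gsub_def a1_def by simp
        then show ?thesis using 1 unfolding split1_def by simp
      next
        case (2 k)
        then have "k < a2 i" using pos2_lt[of k i] p by simp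
        then have "split2 x k = 0" using A unfolding Gsub_def a2_def by simp
        then show ?thesis using 2 unfolding split2_def by simp
      qed
    qed
    then show "x \<in> Gsub (m1 + m2) dP i" using A unfolding Gsub_def e by simp
  qed
qed

lemma Gam_char: "x \<in> Gam (m1 + m2) \<longleftrightarrow> x \<in> Vm (m1 + m2) \<and> split1 x \<in> Gam m1 \<and> split2 x \<in> Gam m2"
proof
  assume x: "x \<in> Gam (m1 + m2)"
  have "split1 x k \<in> \<int>" for k using x unfolding Gam_def split1_def by auto
  moreover have "split2 x k \<in> \<int>" for k using x unfolding Gam_def split2_def by auto
  ultimately show "x \<in> Vm (m1 + m2) \<and> split1 x \<in> Gam m1 \<and> split2 x \<in> Gam m2"
    using x unfolding Gam_def by simp
next
  assume A: "x \<in> Vm (m1 + m2) \<and> split1 x \<in> Gam m1 \<and> split2 x \<in> Gam m2"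
  have "x p \<in> \<int>" for p
  proof (cases "p < m1 + m2")
    case True then show ?thesis
    proof (cases rule: Vm_cases)
      case (1 k)
      have "split1 x k \<in> \<int>" using A unfolding Gam_def by blast
      moreover have "split1 x k = x p" using 1 unfolding split1_def by simp
      ultimately show ?thesis by simp
    next
      case (2 k)
      have "split2 x k \<in> \<int>" using A unfolding Gam_def by blast
      moreover have "split2 x k = x p" using 2 unfolding split2_def by simp
      ultimately show ?thesis by simp
    qed
  next
    case False then show ?thesis using A unfolding Vm_def by simp
  qed
  then show "x \<in> Gam (m1 + m2)" using A unfolding Gam_def by simp
qed

lemma sorted_map_pos1: "sorted (map pos1 [0..<m1])"
  unfolding sorted_wrt_iff_nth_less by (auto intro: less_imp_le pos1_mono)
lemma sorted_map_pos2: "sorted (map pos2 [0..<m2])"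
  unfolding sorted_wrt_iff_nth_less by (auto intro: less_imp_le pos2_mono)

lemma filter1: "filter (\<lambda>p. p \<in> I1) [0..<m1 + m2] = map pos1 [0..<m1]"
proof (rule sorted_distinct_set_unique)
  show "sorted (filter (\<lambda>p. p \<in> I1) [0..<m1 + m2])" by (intro sorted_wrt_filter) simp
  show "distinct (filter (\<lambda>p. p \<in> I1) [0..<m1 + m2])" by simp
  show "sorted (map pos1 [0..<m1])" by (rule sorted_map_pos1)
  show "distinct (map pos1 [0..<m1])" using inj1 by (simp add: distinct_map lessThan_atLeast0)
  show "set (filter (\<lambda>p. p \<in> I1) [0..<m1 + m2]) = set (map pos1 [0..<m1])"
    using pos1_m by auto
qed
lemma filter2: "filter (\<lambda>p. p \<in> I2) [0..<m1 + m2] = map pos2 [0..<m2]"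
proof (rule sorted_distinct_set_unique)
  show "sorted (filter (\<lambda>p. p \<in> I2) [0..<m1 + m2])" by (intro sorted_wrt_filter) simp
  show "distinct (filter (\<lambda>p. p \<in> I2) [0..<m1 + m2])" by simp
  show "sorted (map pos2 [0..<m2])" by (rule sorted_map_pos2)
  show "distinct (map pos2 [0..<m2])" using inj2 by (simp add: distinct_map lessThan_atLeast0)
  show "set (filter (\<lambda>p. p \<in> I2) [0..<m1 + m2]) = set (map pos2 [0..<m2])"
    using pos2_m by auto
qed

lemma ecoord_pos1: "k < m1 \<Longrightarrow> ecoord (pos1 k) t = comb (ecoord k t) gid"
  by (rule Vm_eqI) (simp_all add: ecoord_Vm pos1_m split1_ecoord1 split2_ecoord1)
lemma ecoord_pos2: "k < m2 \<Longrightarrow> ecoord (pos2 k) t = comb gid (ecoord k t)"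
  by (rule Vm_eqI) (simp_all add: ecoord_Vm pos2_m split1_ecoord2 split2_ecoord2)

lemma foldr_prod:
  assumes g1: "grp m1 mul1" and g2: "grp m2 mul2" and L: "\<forall>p\<in>set L. p < m1 + m2"
  shows "foldr (\<lambda>i acc. mulP mul1 mul2 (ecoord i (x i)) acc) L gid =
    comb (foldr (\<lambda>k acc. mul1 (ecoord k (split1 x k)) acc) (map inv1 (filter (\<lambda>p. p \<in> I1) L)) gid)
         (foldr (\<lambda>k acc. mul2 (ecoord k (split2 x k)) acc) (map inv2 (filter (\<lambda>p. p \<in> I2) L)) gid)"
  using L
proof (induction L)
  case Nil
  have "gid = comb gid gid" by (rule Vm_eqI) simp_all
  then show ?case by simp
next
  case (Cons i L)
  let ?U = "foldr (\<lambda>k acc. mul1 (ecoord k (split1 x k)) acc) (map inv1 (filter (\<lambda>p. p \<in> I1) L)) gid"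
  let ?V = "foldr (\<lambda>k acc. mul2 (ecoord k (split2 x k)) acc) (map inv2 (filter (\<lambda>p. p \<in> I2) L)) gid"
  have U: "?U \<in> Vm m1" by (rule foldr_Vm[OF g1]) auto
  have V: "?V \<in> Vm m2" by (rule foldr_Vm[OF g2]) auto
  have IH: "foldr (\<lambda>i acc. mulP mul1 mul2 (ecoord i (x i)) acc) L gid = comb ?U ?V" using Cons by simp
  have "i < m1 + m2" using Cons by simp
  then show ?case
  proof (cases rule: Vm_cases)
    case (1 k)
    have sx: "split1 x k = x (pos1 k)" unfolding split1_def using 1 by simp
    have s1: "split1 (ecoord i (x i)) = ecoord k (split1 x k)" using 1 sx split1_ecoord1 by simp
    have s2: "split2 (ecoord i (x i)) = gid" using 1 split2_ecoord1 by simp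
    have "foldr (\<lambda>i acc. mulP mul1 mul2 (ecoord i (x i)) acc) (i # L) gid
       = mulP mul1 mul2 (ecoord i (x i)) (comb ?U ?V)" using IH by simp
    also have "\<dots> = comb (mul1 (ecoord k (split1 x k)) ?U) (mul2 gid ?V)"
      unfolding mulP_def s1 s2 split1_comb[OF U] split2_comb[OF V] by (rule refl)
    also have "\<dots> = comb (mul1 (ecoord k (split1 x k)) ?U) ?V" using grp_idl[OF g2 V] by simp
    finally have "foldr (\<lambda>i acc. mulP mul1 mul2 (ecoord i (x i)) acc) (i # L) gid
       = comb (mul1 (ecoord k (split1 x k)) ?U) ?V" .
    then show ?thesis using 1 notI2 by simp
  next
    case (2 k)
    have sx: "split2 x k = x (pos2 k)" unfolding split2_def using 2 by simp
    have s2: "split2 (ecoord i (x i)) = ecoord k (split2 x k)" using 2 sx split2_ecoord2 by simp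
    have s1: "split1 (ecoord i (x i)) = gid" using 2 split1_ecoord2 by simp
    have "foldr (\<lambda>i acc. mulP mul1 mul2 (ecoord i (x i)) acc) (i # L) gid
       = mulP mul1 mul2 (ecoord i (x i)) (comb ?U ?V)" using IH by simp
    also have "\<dots> = comb (mul1 gid ?U) (mul2 (ecoord k (split2 x k)) ?V)"
      unfolding mulP_def s1 s2 split1_comb[OF U] split2_comb[OF V] by (rule refl)
    also have "\<dots> = comb ?U (mul2 (ecoord k (split2 x k)) ?V)" using grp_idl[OF g1 U] by simp
    finally have "foldr (\<lambda>i acc. mulP mul1 mul2 (ecoord i (x i)) acc) (i # L) gid
       = comb ?U (mul2 (ecoord k (split2 x k)) ?V)" .
    then show ?thesis using 2 notI1 by simp
  qed
qed

lemma map_inv1: "map inv1 (map pos1 [0..<m1]) = [0..<m1]"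
  by (simp only: map_map) (rule map_idI, auto)
lemma map_inv2: "map inv2 (map pos2 [0..<m2]) = [0..<m2]"
  by (simp only: map_map) (rule map_idI, auto)

end

lemma mm_poly: "malcev_model s m mul c d \<Longrightarrow> (\<forall>k<m. \<exists>p. polyfn ({\<lambda>(x, y). x j | j. j < m} \<union> {\<lambda>(x, y). y j | j. j < m}) p \<and>
                  (\<forall>x\<in>Vm m. \<forall>y\<in>Vm m. mul x y k = p (x, y)))"
  unfolding malcev_model_def by (elim conjE) ((intro conjI)?; assumption)

lemma mm_ecoord: "malcev_model s m mul c d \<Longrightarrow> (\<forall>i<m. \<forall>a b. mul (ecoord i a) (ecoord i b) = ecoord i (a + b))"
  unfolding malcev_model_def by (elim conjE) ((intro conjI)?; assumption)

lemma mm_foldr: "malcev_model s m mul c d \<Longrightarrow> (\<forall>x\<in>Vm m. x = foldr (\<lambda>i acc. mul (ecoord i (x i)) acc) [0..<m] gid)"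
  unfolding malcev_model_def by (elim conjE) ((intro conjI)?; assumption)

lemma mm_lim: "malcev_model s m mul c d \<Longrightarrow> (\<forall>i<m. \<forall>j<m. \<forall>k<m.
        ((\<lambda>(a, b). gcomm m mul (ecoord i a) (ecoord j b) k / (a * b)) \<longlongrightarrow> c i j k)
          (at (0, 0) within {(a, b). a \<noteq> 0 \<and> b \<noteq> 0}))"
  unfolding malcev_model_def by (elim conjE) ((intro conjI)?; assumption)

lemma mm_c: "malcev_model s m mul c d \<Longrightarrow> (\<forall>i<m. \<forall>j<m. \<forall>k<m. c i j k \<noteq> 0 \<longrightarrow> max i j < k)"
  unfolding malcev_model_def by (elim conjE) ((intro conjI)?; assumption)

lemma mm_d: "malcev_model s m mul c d \<Longrightarrow> d 0 = m \<and> d 1 = m \<and> (\<forall>i. d (Suc i) \<le> d i) \<and> d (Suc s) = 0"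
  unfolding malcev_model_def by (elim conjE) ((intro conjI)?; assumption)

lemma mm_Gsub: "malcev_model s m mul c d \<Longrightarrow> (\<forall>i. \<forall>x\<in>Gsub m d i. \<forall>y\<in>Gsub m d i. mul x y \<in> Gsub m d i \<and> ginv m mul x \<in> Gsub m d i)"
  unfolding malcev_model_def by (elim conjE) ((intro conjI)?; assumption)

lemma mm_comm: "malcev_model s m mul c d \<Longrightarrow> (\<forall>i j. \<forall>x\<in>Gsub m d i. \<forall>y\<in>Gsub m d j. gcomm m mul x y \<in> Gsub m d (i + j))"
  unfolding malcev_model_def by (elim conjE) ((intro conjI)?; assumption)

lemma mm_Gam: "malcev_model s m mul c d \<Longrightarrow> (\<forall>x\<in>Gam m. \<forall>y\<in>Gam m. mul x y \<in> Gam m \<and> ginv m mul x \<in> Gam m)"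
  unfolding malcev_model_def by (elim conjE) ((intro conjI)?; assumption)

context twofilt begin

lemma pos1_inv1: "p \<in> I1 \<Longrightarrow> pos1 (inv1 p) = p" by auto
lemma pos2_inv2: "p \<in> I2 \<Longrightarrow> pos2 (inv2 p) = p" by auto

lemma comb_gid: "comb gid gid = gid" by (rule Vm_eqI) simp_all

lemma gcommP_eq:
  assumes g1: "grp m1 mul1" and g2: "grp m2 mul2" and x: "x \<in> Vm (m1 + m2)" and y: "y \<in> Vm (m1 + m2)"
  shows "gcomm (m1 + m2) (mulP mul1 mul2) x y = comb (gcomm m1 mul1 (split1 x) (split1 y)) (gcomm m2 mul2 (split2 x) (split2 y))"
proof (rule Vm_eqI)
  show "gcomm (m1 + m2) (mulP mul1 mul2) x y \<in> Vm (m1 + m2)" unfolding gcomm_def by simp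
  show "comb (gcomm m1 mul1 (split1 x) (split1 y)) (gcomm m2 mul2 (split2 x) (split2 y)) \<in> Vm (m1 + m2)" by simp
  have v1: "gcomm m1 mul1 (split1 x) (split1 y) \<in> Vm m1" unfolding gcomm_def by (simp add: grp_closed[OF g1] ginv_props[OF g1])
  have v2: "gcomm m2 mul2 (split2 x) (split2 y) \<in> Vm m2" unfolding gcomm_def by (simp add: grp_closed[OF g2] ginv_props[OF g2])
  show "split1 (gcomm (m1 + m2) (mulP mul1 mul2) x y) = split1 (comb (gcomm m1 mul1 (split1 x) (split1 y)) (gcomm m2 mul2 (split2 x) (split2 y)))"
    using split1_gcommP[OF g1 g2 x y] v1 by simp
  show "split2 (gcomm (m1 + m2) (mulP mul1 mul2) x y) = split2 (comb (gcomm m1 mul1 (split1 x) (split1 y)) (gcomm m2 mul2 (split2 x) (split2 y)))"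
    using split2_gcommP[OF g1 g2 x y] v2 by simp
qed

lemma cP11: "i < m1 \<Longrightarrow> j < m1 \<Longrightarrow> k < m1 \<Longrightarrow> cP c1 c2 (pos1 i) (pos1 j) (pos1 k) = c1 i j k"
  unfolding cP_def by simp
lemma cP22: "i < m2 \<Longrightarrow> j < m2 \<Longrightarrow> k < m2 \<Longrightarrow> cP c1 c2 (pos2 i) (pos2 j) (pos2 k) = c2 i j k"
  unfolding cP_def using notI1 by simp

theorem malcev_prod:
  assumes M1: "malcev_model s m1 mul1 c1 d1" and M2: "malcev_model s m2 mul2 c2 d2"
  shows "malcev_model s (m1 + m2) (mulP mul1 mul2) (cP c1 c2) dP"
proof -
  have g1: "grp m1 mul1" using malcev_grp[OF M1] .
  have g2: "grp m2 mul2" using malcev_grp[OF M2] .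
  have gP: "grp (m1 + m2) (mulP mul1 mul2)" using grpP[OF g1 g2] .
  let ?m = "m1 + m2" and ?mul = "mulP mul1 mul2"
  let ?V = "{\<lambda>(x, y). x j | j. j < ?m} \<union> {\<lambda>(x, y). y j | j. j < ?m}"
  have C1: "\<forall>x\<in>Vm ?m. \<forall>y\<in>Vm ?m. ?mul x y \<in> Vm ?m" by simp
  have C2: "\<forall>x\<in>Vm ?m. \<forall>y\<in>Vm ?m. \<forall>z\<in>Vm ?m. ?mul (?mul x y) z = ?mul x (?mul y z)"
    using gP unfolding grp_def by blast
  have C3: "\<forall>x\<in>Vm ?m. ?mul gid x = x \<and> ?mul x gid = x" using gP unfolding grp_def by blast
  have C4: "\<forall>x\<in>Vm ?m. \<exists>y\<in>Vm ?m. ?mul x y = gid \<and> ?mul y x = gid" using gP unfolding grp_def by blast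
  have C5: "\<forall>k<?m. \<exists>p. polyfn ?V p \<and> (\<forall>x\<in>Vm ?m. \<forall>y\<in>Vm ?m. ?mul x y k = p (x, y))"
  proof (intro allI impI)
    fix k assume "k < ?m"
    then show "\<exists>p. polyfn ?V p \<and> (\<forall>x\<in>Vm ?m. \<forall>y\<in>Vm ?m. ?mul x y k = p (x, y))"
    proof (cases rule: Vm_cases)
      case (1 k')
      obtain p where p: "polyfn ({\<lambda>(x, y). x j | j. j < m1} \<union> {\<lambda>(x, y). y j | j. j < m1}) p"
        "\<forall>x\<in>Vm m1. \<forall>y\<in>Vm m1. mul1 x y k' = p (x, y)" using mm_poly[OF M1] 1 by blast
      define h where "h = (\<lambda>(x::nat\<Rightarrow>real, y::nat\<Rightarrow>real). (split1 x, split1 y))"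
      have "polyfn ?V (\<lambda>z. p (h z))"
      proof (rule polyfn_comp[OF p(1)])
        fix v :: "(nat \<Rightarrow> real) \<times> (nat \<Rightarrow> real) \<Rightarrow> real" assume "v \<in> {\<lambda>(x, y). x j | j. j < m1} \<union> {\<lambda>(x, y). y j | j. j < m1}"
        then obtain j where j: "j < m1" "v = (\<lambda>(x, y). x j) \<or> v = (\<lambda>(x, y). y j)" by blast
        from j(2) show "(\<lambda>z. v (h z)) \<in> ?V"
        proof
          assume v: "v = (\<lambda>(x, y). x j)"
          have "(\<lambda>z. v (h z)) = (\<lambda>(x, y). x (pos1 j))" unfolding v h_def split1_def using j(1) by (auto intro!: ext)
          then show ?thesis using pos1_m[OF j(1)] by blast
        next
          assume v: "v = (\<lambda>(x, y). y j)"
          have "(\<lambda>z. v (h z)) = (\<lambda>(x, y). y (pos1 j))" unfolding v h_def split1_def using j(1) by (auto intro!: ext)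
          then show ?thesis using pos1_m[OF j(1)] by blast
        qed
      qed
      moreover have "\<forall>x\<in>Vm ?m. \<forall>y\<in>Vm ?m. ?mul x y k = p (h (x, y))"
        using p(2) 1 unfolding h_def mulP_def by (simp add: comb_pos1)
      ultimately show ?thesis by blast
    next
      case (2 k')
      obtain p where p: "polyfn ({\<lambda>(x, y). x j | j. j < m2} \<union> {\<lambda>(x, y). y j | j. j < m2}) p"
        "\<forall>x\<in>Vm m2. \<forall>y\<in>Vm m2. mul2 x y k' = p (x, y)" using mm_poly[OF M2] 2 by blast
      define h where "h = (\<lambda>(x::nat\<Rightarrow>real, y::nat\<Rightarrow>real). (split2 x, split2 y))"
      have "polyfn ?V (\<lambda>z. p (h z))"
      proof (rule polyfn_comp[OF p(1)])
        fix v :: "(nat \<Rightarrow> real) \<times> (nat \<Rightarrow> real) \<Rightarrow> real" assume "v \<in> {\<lambda>(x, y). x j | j. j < m2} \<union> {\<lambda>(x, y). y j | j. j < m2}"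
        then obtain j where j: "j < m2" "v = (\<lambda>(x, y). x j) \<or> v = (\<lambda>(x, y). y j)" by blast
        from j(2) show "(\<lambda>z. v (h z)) \<in> ?V"
        proof
          assume v: "v = (\<lambda>(x, y). x j)"
          have "(\<lambda>z. v (h z)) = (\<lambda>(x, y). x (pos2 j))" unfolding v h_def split2_def using j(1) by (auto intro!: ext)
          then show ?thesis using pos2_m[OF j(1)] by blast
        next
          assume v: "v = (\<lambda>(x, y). y j)"
          have "(\<lambda>z. v (h z)) = (\<lambda>(x, y). y (pos2 j))" unfolding v h_def split2_def using j(1) by (auto intro!: ext)
          then show ?thesis using pos2_m[OF j(1)] by blast
        qed
      qed
      moreover have "\<forall>x\<in>Vm ?m. \<forall>y\<in>Vm ?m. ?mul x y k = p (h (x, y))"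
        using p(2) 2 unfolding h_def mulP_def by (simp add: comb_pos2)
      ultimately show ?thesis by blast
    qed
  qed
  have C6: "\<forall>i<?m. \<forall>a b. ?mul (ecoord i a) (ecoord i b) = ecoord i (a + b)"
  proof (intro allI impI)
    fix i a b assume "i < ?m"
    then show "?mul (ecoord i a) (ecoord i b) = ecoord i (a + b)"
    proof (cases rule: Vm_cases)
      case (1 k)
      have e: "mul1 (ecoord k a) (ecoord k b) = ecoord k (a + b)" using mm_ecoord[OF M1] 1 by blast
      show ?thesis using 1 e by (simp add: ecoord_pos1 mulP_def ecoordVm grp_idl[OF g2])
    next
      case (2 k)
      have e: "mul2 (ecoord k a) (ecoord k b) = ecoord k (a + b)" using mm_ecoord[OF M2] 2 by blast
      show ?thesis using 2 e by (simp add: ecoord_pos2 mulP_def ecoordVm grp_idl[OF g1])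
    qed
  qed
  have C7: "\<forall>x\<in>Vm ?m. x = foldr (\<lambda>i acc. ?mul (ecoord i (x i)) acc) [0..<?m] gid"
  proof
    fix x assume x: "x \<in> Vm ?m"
    have f1: "split1 x = foldr (\<lambda>i acc. mul1 (ecoord i (split1 x i)) acc) [0..<m1] gid"
      using mm_foldr[OF M1] split1_Vm by blast
    have f2: "split2 x = foldr (\<lambda>i acc. mul2 (ecoord i (split2 x i)) acc) [0..<m2] gid"
      using mm_foldr[OF M2] split2_Vm by blast
    have "foldr (\<lambda>i acc. ?mul (ecoord i (x i)) acc) [0..<?m] gid = comb (split1 x) (split2 x)"
      using foldr_prod[OF g1 g2, of "[0..<?m]" x] unfolding filter1 filter2 map_inv1 map_inv2
      using f1 f2 by simp
    then show "x = foldr (\<lambda>i acc. ?mul (ecoord i (x i)) acc) [0..<?m] gid" using x by simp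
  qed
  have C8: "\<forall>i<?m. \<forall>j<?m. \<forall>k<?m.
        ((\<lambda>(a, b). gcomm ?m ?mul (ecoord i a) (ecoord j b) k / (a * b)) \<longlongrightarrow> cP c1 c2 i j k)
          (at (0, 0) within {(a, b). a \<noteq> 0 \<and> b \<noteq> 0})"
  proof (intro allI impI)
    fix p q r assume p: "p < ?m" and q: "q < ?m" and r: "r < ?m"
    let ?F = "at (0::real, 0::real) within {(a, b). a \<noteq> 0 \<and> b \<noteq> 0}"
    have z: "((\<lambda>(a::real, b::real). gid r' / (a * b)) \<longlongrightarrow> 0) ?F" for r'
    proof -
      have ze: "(\<lambda>(a::real, b::real). gid r' / (a * b)) = (\<lambda>_. 0::real)" by (auto simp: gid_def)
      show ?thesis unfolding ze by simp
    qed
    from p show "((\<lambda>(a, b). gcomm ?m ?mul (ecoord p a) (ecoord q b) r / (a * b)) \<longlongrightarrow> cP c1 c2 p q r) ?F"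
    proof (cases rule: Vm_cases)
      case (1 i)
      from q show ?thesis
      proof (cases rule: Vm_cases)
        case (1 j)
        have gc: "gcomm ?m ?mul (ecoord p a) (ecoord q b) = comb (gcomm m1 mul1 (ecoord i a) (ecoord j b)) gid" for a b
          using gcommP_eq[OF g1 g2, of "ecoord p a" "ecoord q b"] \<open>p = pos1 i\<close> \<open>q = pos1 j\<close> \<open>i < m1\<close> \<open>j < m1\<close>
          by (simp add: ecoordVm pos1_m pos2_m p q split1_ecoord1 split2_ecoord1 gcomm_gid1[OF g2])
        from r show ?thesis
        proof (cases rule: Vm_cases)
          case (1 k)
          have "c1 i j k = cP c1 c2 p q r" using cP11 \<open>p = pos1 i\<close> \<open>q = pos1 j\<close> 1 \<open>i < m1\<close> \<open>j < m1\<close> by simp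
          moreover have "((\<lambda>(a, b). gcomm m1 mul1 (ecoord i a) (ecoord j b) k / (a * b)) \<longlongrightarrow> c1 i j k) ?F"
            using mm_lim[OF M1] \<open>i < m1\<close> \<open>j < m1\<close> \<open>k < m1\<close> by blast
          ultimately show ?thesis unfolding gc using 1 by (simp add: comb_pos1)
        next
          case (2 k)
          have "cP c1 c2 p q r = 0" unfolding cP_def using 2 \<open>p = pos1 i\<close> \<open>i < m1\<close> notI1 notI2 by simp
          then show ?thesis unfolding gc using 2 z[of k] by (simp add: comb_pos2)
        qed
      next
        case (2 j)
        have gc: "gcomm ?m ?mul (ecoord p a) (ecoord q b) = gid" for a b
          using gcommP_eq[OF g1 g2, of "ecoord p a" "ecoord q b"] \<open>p = pos1 i\<close> \<open>q = pos2 j\<close> \<open>i < m1\<close> \<open>j < m2\<close>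
          by (simp add: ecoordVm pos1_m pos2_m p q split1_ecoord1 split2_ecoord1 split1_ecoord2 split2_ecoord2 gcomm_gid1[OF g2] gcomm_gid2[OF g1] comb_gid)
        have "cP c1 c2 p q r = 0" unfolding cP_def using 2 \<open>p = pos1 i\<close> \<open>i < m1\<close> notI1 notI2 by auto
        then show ?thesis unfolding gc using z[of r] by simp
      qed
    next
      case (2 i)
      from q show ?thesis
      proof (cases rule: Vm_cases)
        case (2 j)
        have gc: "gcomm ?m ?mul (ecoord p a) (ecoord q b) = comb gid (gcomm m2 mul2 (ecoord i a) (ecoord j b))" for a b
          using gcommP_eq[OF g1 g2, of "ecoord p a" "ecoord q b"] \<open>p = pos2 i\<close> \<open>q = pos2 j\<close> \<open>i < m2\<close> \<open>j < m2\<close>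
          by (simp add: ecoordVm pos1_m pos2_m p q split1_ecoord2 split2_ecoord2 gcomm_gid1[OF g1])
        from r show ?thesis
        proof (cases rule: Vm_cases)
          case (2 k)
          have "c2 i j k = cP c1 c2 p q r" using cP22 \<open>p = pos2 i\<close> \<open>q = pos2 j\<close> 2 \<open>i < m2\<close> \<open>j < m2\<close> by simp
          moreover have "((\<lambda>(a, b). gcomm m2 mul2 (ecoord i a) (ecoord j b) k / (a * b)) \<longlongrightarrow> c2 i j k) ?F"
            using mm_lim[OF M2] \<open>i < m2\<close> \<open>j < m2\<close> \<open>k < m2\<close> by blast
          ultimately show ?thesis unfolding gc using 2 by (simp add: comb_pos2)
        next
          case (1 k)
          have "cP c1 c2 p q r = 0" unfolding cP_def using 1 \<open>p = pos2 i\<close> \<open>i < m2\<close> notI1 notI2 by simp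
          then show ?thesis unfolding gc using 1 z[of k] by (simp add: comb_pos1)
        qed
      next
        case (1 j)
        have gc: "gcomm ?m ?mul (ecoord p a) (ecoord q b) = gid" for a b
          using gcommP_eq[OF g1 g2, of "ecoord p a" "ecoord q b"] \<open>p = pos2 i\<close> \<open>q = pos1 j\<close> \<open>i < m2\<close> \<open>j < m1\<close>
          by (simp add: ecoordVm pos1_m pos2_m p q split1_ecoord1 split2_ecoord1 split1_ecoord2 split2_ecoord2 gcomm_gid1[OF g1] gcomm_gid2[OF g2] comb_gid)
        have "cP c1 c2 p q r = 0" unfolding cP_def using 1 \<open>p = pos2 i\<close> \<open>i < m2\<close> notI1 notI2 by auto
        then show ?thesis unfolding gc using z[of r] by simp
      qed
    qed
  qed
  have C9: "\<forall>i<?m. \<forall>j<?m. \<forall>k<?m. cP c1 c2 i j k \<noteq> 0 \<longrightarrow> max i j < k"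
  proof (intro allI impI)
    fix i j k assume ijk: "i < ?m" "j < ?m" "k < ?m" and nz: "cP c1 c2 i j k \<noteq> 0"
    show "max i j < k"
    proof (cases "i \<in> I1 \<and> j \<in> I1 \<and> k \<in> I1")
      case True
      then have "c1 (inv1 i) (inv1 j) (inv1 k) \<noteq> 0" using nz unfolding cP_def by simp
      then have "max (inv1 i) (inv1 j) < inv1 k" using mm_c[OF M1] True inv1_lt by blast
      then have "pos1 (inv1 i) < pos1 (inv1 k)" "pos1 (inv1 j) < pos1 (inv1 k)"
        using pos1_mono True inv1_lt by auto
      then show ?thesis using True pos1_inv1 by simp
    next
      case False
      then have T: "i \<in> I2 \<and> j \<in> I2 \<and> k \<in> I2" and "c2 (inv2 i) (inv2 j) (inv2 k) \<noteq> 0"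
        using nz unfolding cP_def by (auto split: if_splits)
      then have "max (inv2 i) (inv2 j) < inv2 k" using mm_c[OF M2] inv2_lt by blast
      then have "pos2 (inv2 i) < pos2 (inv2 k)" "pos2 (inv2 j) < pos2 (inv2 k)"
        using pos2_mono T inv2_lt by auto
      then show ?thesis using T pos2_inv2 by simp
    qed
  qed
  have C10: "dP 0 = ?m \<and> dP 1 = ?m \<and> (\<forall>i. dP (Suc i) \<le> dP i) \<and> dP (Suc s) = 0"
    using mm_d[OF M1] mm_d[OF M2] d1_S d2_S unfolding dP_def by (simp add: add_mono)
  have C11: "\<forall>i. \<forall>x\<in>Gsub ?m dP i. \<forall>y\<in>Gsub ?m dP i. ?mul x y \<in> Gsub ?m dP i \<and> ginv ?m ?mul x \<in> Gsub ?m dP i"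
  proof (intro allI ballI)
    fix i x y assume x: "x \<in> Gsub ?m dP i" and y: "y \<in> Gsub ?m dP i"
    then have xs: "x \<in> Vm ?m" "split1 x \<in> Gsub m1 d1 i" "split2 x \<in> Gsub m2 d2 i"
      and ys: "y \<in> Vm ?m" "split1 y \<in> Gsub m1 d1 i" "split2 y \<in> Gsub m2 d2 i"
      using Gsub_char by auto
    have "mul1 (split1 x) (split1 y) \<in> Gsub m1 d1 i \<and> ginv m1 mul1 (split1 x) \<in> Gsub m1 d1 i"
      using mm_Gsub[OF M1] xs ys by blast
    moreover have "mul2 (split2 x) (split2 y) \<in> Gsub m2 d2 i \<and> ginv m2 mul2 (split2 x) \<in> Gsub m2 d2 i"
      using mm_Gsub[OF M2] xs ys by blast
    ultimately show "?mul x y \<in> Gsub ?m dP i \<and> ginv ?m ?mul x \<in> Gsub ?m dP i"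
      unfolding Gsub_char using xs ys
      by (simp add: split1_mulP[OF g1] split2_mulP[OF g2] split1_ginvP[OF g1 g2] split2_ginvP[OF g1 g2] ginv_props[OF gP])
  qed
  have C12: "\<forall>i j. \<forall>x\<in>Gsub ?m dP i. \<forall>y\<in>Gsub ?m dP j. gcomm ?m ?mul x y \<in> Gsub ?m dP (i + j)"
  proof (intro allI ballI)
    fix i j x y assume x: "x \<in> Gsub ?m dP i" and y: "y \<in> Gsub ?m dP j"
    then have xs: "x \<in> Vm ?m" "split1 x \<in> Gsub m1 d1 i" "split2 x \<in> Gsub m2 d2 i"
      and ys: "y \<in> Vm ?m" "split1 y \<in> Gsub m1 d1 j" "split2 y \<in> Gsub m2 d2 j"
      using Gsub_char by auto
    have "gcomm m1 mul1 (split1 x) (split1 y) \<in> Gsub m1 d1 (i + j)" using mm_comm[OF M1] xs ys by blast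
    moreover have "gcomm m2 mul2 (split2 x) (split2 y) \<in> Gsub m2 d2 (i + j)" using mm_comm[OF M2] xs ys by blast
    moreover have "gcomm ?m ?mul x y \<in> Vm ?m" unfolding gcomm_def by simp
    ultimately show "gcomm ?m ?mul x y \<in> Gsub ?m dP (i + j)"
      unfolding Gsub_char using xs ys by (simp add: split1_gcommP[OF g1 g2] split2_gcommP[OF g1 g2])
  qed
  have C13: "\<forall>x\<in>Gam ?m. \<forall>y\<in>Gam ?m. ?mul x y \<in> Gam ?m \<and> ginv ?m ?mul x \<in> Gam ?m"
  proof (intro ballI)
    fix x y assume x: "x \<in> Gam ?m" and y: "y \<in> Gam ?m"
    then have xs: "x \<in> Vm ?m" "split1 x \<in> Gam m1" "split2 x \<in> Gam m2"
      and ys: "y \<in> Vm ?m" "split1 y \<in> Gam m1" "split2 y \<in> Gam m2"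
      using Gam_char by auto
    have "mul1 (split1 x) (split1 y) \<in> Gam m1 \<and> ginv m1 mul1 (split1 x) \<in> Gam m1"
      using mm_Gam[OF M1] xs ys by blast
    moreover have "mul2 (split2 x) (split2 y) \<in> Gam m2 \<and> ginv m2 mul2 (split2 x) \<in> Gam m2"
      using mm_Gam[OF M2] xs ys by blast
    ultimately show "?mul x y \<in> Gam ?m \<and> ginv ?m ?mul x \<in> Gam ?m"
      unfolding Gam_char using xs ys
      by (simp add: split1_mulP[OF g1] split2_mulP[OF g2] split1_ginvP[OF g1 g2] split2_ginvP[OF g1 g2] ginv_props[OF gP])
  qed
  from C10 have D1: "dP 0 = ?m" and D2: "dP 1 = ?m" and D3: "\<forall>i. dP (Suc i) \<le> dP i" and D4: "dP (Suc s) = 0"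
    by blast+
  show ?thesis unfolding malcev_model_def
    by (intro conjI C1 C2 C3 C4 C5 C6 C7 C8 C9 C11 C12 C13 D1 D2 D3 D4)
qed

end

lemma gnorm_nonneg: "0 \<le> gnorm m x"
  unfolding gnorm_def by (rule Max_ge) auto

lemma gnorm_ge: "k < m \<Longrightarrow> \<bar>x k\<bar> \<le> gnorm m x"
  unfolding gnorm_def by (rule Max_ge) auto

lemma distG_set_ne: "x \<in> Vm m \<Longrightarrow> y \<in> Vm m \<Longrightarrow>
  {(\<Sum>i<n. min (gnorm m (mul (xs i) (ginv m mul (xs (Suc i)))))
                                     (gnorm m (mul (xs (Suc i)) (ginv m mul (xs i)))))
                          | n xs. xs 0 = x \<and> xs n = y \<and> (\<forall>i\<le>n. xs i \<in> Vm m)} \<noteq> {}"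
proof -
  assume x: "x \<in> Vm m" and y: "y \<in> Vm m"
  define xs where "xs = (\<lambda>i::nat. if i = 0 then x else y)"
  have "xs 0 = x \<and> xs 1 = y \<and> (\<forall>i\<le>1. xs i \<in> Vm m)" unfolding xs_def using x y by auto
  then show ?thesis by blast
qed

lemma distG_nonneg: "x \<in> Vm m \<Longrightarrow> y \<in> Vm m \<Longrightarrow> 0 \<le> distG m mul x y"
  unfolding distG_def
  by (rule cInf_greatest[OF distG_set_ne]) (auto intro!: sum_nonneg simp: gnorm_nonneg)

context twofilt begin

lemma gnorm_split1: "gnorm m1 (split1 z) \<le> gnorm (m1 + m2) z"
  unfolding gnorm_def[of m1]
proof (rule Max.boundedI)
  show "finite (insert 0 ((\<lambda>k. \<bar>split1 z k\<bar>) ` {..<m1}))" by simp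
  show "insert 0 ((\<lambda>k. \<bar>split1 z k\<bar>) ` {..<m1}) \<noteq> {}" by simp
  fix a assume "a \<in> insert 0 ((\<lambda>k. \<bar>split1 z k\<bar>) ` {..<m1})"
  then show "a \<le> gnorm (m1 + m2) z"
    using gnorm_nonneg gnorm_ge[OF pos1_m] unfolding split1_def by auto
qed
lemma gnorm_split2: "gnorm m2 (split2 z) \<le> gnorm (m1 + m2) z"
  unfolding gnorm_def[of m2]
proof (rule Max.boundedI)
  show "finite (insert 0 ((\<lambda>k. \<bar>split2 z k\<bar>) ` {..<m2}))" by simp
  show "insert 0 ((\<lambda>k. \<bar>split2 z k\<bar>) ` {..<m2}) \<noteq> {}" by simp
  fix a assume "a \<in> insert 0 ((\<lambda>k. \<bar>split2 z k\<bar>) ` {..<m2})"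
  then show "a \<le> gnorm (m1 + m2) z"
    using gnorm_nonneg gnorm_ge[OF pos2_m] unfolding split2_def by auto
qed

lemma distG_le1:
  assumes g1: "grp m1 mul1" and g2: "grp m2 mul2" and x: "x \<in> Vm (m1 + m2)" and y: "y \<in> Vm (m1 + m2)"
  shows "distG m1 mul1 (split1 x) (split1 y) \<le> distG (m1 + m2) (mulP mul1 mul2) x y"
  unfolding distG_def
proof (rule cInf_mono)
  show "{\<Sum>i<n. min (gnorm (m1 + m2) (mulP mul1 mul2 (xs i) (ginv (m1 + m2) (mulP mul1 mul2) (xs (Suc i)))))
                (gnorm (m1 + m2) (mulP mul1 mul2 (xs (Suc i)) (ginv (m1 + m2) (mulP mul1 mul2) (xs i)))) |n xs.
          xs 0 = x \<and> xs n = y \<and> (\<forall>i\<le>n. xs i \<in> Vm (m1 + m2))} \<noteq> {}"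
    by (rule distG_set_ne[OF x y])
  show "bdd_below {\<Sum>i<n. min (gnorm m1 (mul1 (xs i) (ginv m1 mul1 (xs (Suc i))))) (gnorm m1 (mul1 (xs (Suc i)) (ginv m1 mul1 (xs i)))) |n xs.
          xs 0 = split1 x \<and> xs n = split1 y \<and> (\<forall>i\<le>n. xs i \<in> Vm m1)}"
    by (rule bdd_belowI[of _ 0]) (auto intro!: sum_nonneg simp: gnorm_nonneg)
  fix b assume "b \<in> {\<Sum>i<n. min (gnorm (m1 + m2) (mulP mul1 mul2 (xs i) (ginv (m1 + m2) (mulP mul1 mul2) (xs (Suc i)))))
                (gnorm (m1 + m2) (mulP mul1 mul2 (xs (Suc i)) (ginv (m1 + m2) (mulP mul1 mul2) (xs i)))) |n xs.
          xs 0 = x \<and> xs n = y \<and> (\<forall>i\<le>n. xs i \<in> Vm (m1 + m2))}"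
  then obtain n xs where b: "b = (\<Sum>i<n. min (gnorm (m1 + m2) (mulP mul1 mul2 (xs i) (ginv (m1 + m2) (mulP mul1 mul2) (xs (Suc i)))))
                (gnorm (m1 + m2) (mulP mul1 mul2 (xs (Suc i)) (ginv (m1 + m2) (mulP mul1 mul2) (xs i)))))"
    and xs: "xs 0 = x" "xs n = y" "\<forall>i\<le>n. xs i \<in> Vm (m1 + m2)" by blast
  define ys where "ys = (\<lambda>i. split1 (xs i))"
  let ?a = "\<Sum>i<n. min (gnorm m1 (mul1 (ys i) (ginv m1 mul1 (ys (Suc i))))) (gnorm m1 (mul1 (ys (Suc i)) (ginv m1 mul1 (ys i))))"
  have "?a \<in> {\<Sum>i<n. min (gnorm m1 (mul1 (xs i) (ginv m1 mul1 (xs (Suc i))))) (gnorm m1 (mul1 (xs (Suc i)) (ginv m1 mul1 (xs i)))) |n xs.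
          xs 0 = split1 x \<and> xs n = split1 y \<and> (\<forall>i\<le>n. xs i \<in> Vm m1)}"
    unfolding ys_def using xs by (intro CollectI exI[of _ n] exI[of _ "\<lambda>i. split1 (xs i)"]) simp
  moreover have "?a \<le> b" unfolding b
  proof (rule sum_mono)
    fix i assume i: "i \<in> {..<n}"
    then have v: "xs i \<in> Vm (m1 + m2)" "xs (Suc i) \<in> Vm (m1 + m2)" using xs(3) by auto
    have e1: "mul1 (ys i) (ginv m1 mul1 (ys (Suc i))) = split1 (mulP mul1 mul2 (xs i) (ginv (m1 + m2) (mulP mul1 mul2) (xs (Suc i))))"
      unfolding ys_def using v by (simp add: split1_mulP[OF g1] split1_ginvP[OF g1 g2])
    have e2: "mul1 (ys (Suc i)) (ginv m1 mul1 (ys i)) = split1 (mulP mul1 mul2 (xs (Suc i)) (ginv (m1 + m2) (mulP mul1 mul2) (xs i)))"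
      unfolding ys_def using v by (simp add: split1_mulP[OF g1] split1_ginvP[OF g1 g2])
    show "min (gnorm m1 (mul1 (ys i) (ginv m1 mul1 (ys (Suc i))))) (gnorm m1 (mul1 (ys (Suc i)) (ginv m1 mul1 (ys i))))
        \<le> min (gnorm (m1 + m2) (mulP mul1 mul2 (xs i) (ginv (m1 + m2) (mulP mul1 mul2) (xs (Suc i)))))
              (gnorm (m1 + m2) (mulP mul1 mul2 (xs (Suc i)) (ginv (m1 + m2) (mulP mul1 mul2) (xs i))))"
      unfolding e1 e2 by (intro min.mono gnorm_split1)
  qed
  ultimately show "\<exists>a\<in>{\<Sum>i<n. min (gnorm m1 (mul1 (xs i) (ginv m1 mul1 (xs (Suc i))))) (gnorm m1 (mul1 (xs (Suc i)) (ginv m1 mul1 (xs i)))) |n xs.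
          xs 0 = split1 x \<and> xs n = split1 y \<and> (\<forall>i\<le>n. xs i \<in> Vm m1)}. a \<le> b" by blast
qed

lemma distG_le2:
  assumes g1: "grp m1 mul1" and g2: "grp m2 mul2" and x: "x \<in> Vm (m1 + m2)" and y: "y \<in> Vm (m1 + m2)"
  shows "distG m2 mul2 (split2 x) (split2 y) \<le> distG (m1 + m2) (mulP mul1 mul2) x y"
  unfolding distG_def
proof (rule cInf_mono)
  show "{\<Sum>i<n. min (gnorm (m1 + m2) (mulP mul1 mul2 (xs i) (ginv (m1 + m2) (mulP mul1 mul2) (xs (Suc i)))))
                (gnorm (m1 + m2) (mulP mul1 mul2 (xs (Suc i)) (ginv (m1 + m2) (mulP mul1 mul2) (xs i)))) |n xs.
          xs 0 = x \<and> xs n = y \<and> (\<forall>i\<le>n. xs i \<in> Vm (m1 + m2))} \<noteq> {}"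
    by (rule distG_set_ne[OF x y])
  show "bdd_below {\<Sum>i<n. min (gnorm m2 (mul2 (xs i) (ginv m2 mul2 (xs (Suc i))))) (gnorm m2 (mul2 (xs (Suc i)) (ginv m2 mul2 (xs i)))) |n xs.
          xs 0 = split2 x \<and> xs n = split2 y \<and> (\<forall>i\<le>n. xs i \<in> Vm m2)}"
    by (rule bdd_belowI[of _ 0]) (auto intro!: sum_nonneg simp: gnorm_nonneg)
  fix b assume "b \<in> {\<Sum>i<n. min (gnorm (m1 + m2) (mulP mul1 mul2 (xs i) (ginv (m1 + m2) (mulP mul1 mul2) (xs (Suc i)))))
                (gnorm (m1 + m2) (mulP mul1 mul2 (xs (Suc i)) (ginv (m1 + m2) (mulP mul1 mul2) (xs i)))) |n xs.
          xs 0 = x \<and> xs n = y \<and> (\<forall>i\<le>n. xs i \<in> Vm (m1 + m2))}"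
  then obtain n xs where b: "b = (\<Sum>i<n. min (gnorm (m1 + m2) (mulP mul1 mul2 (xs i) (ginv (m1 + m2) (mulP mul1 mul2) (xs (Suc i)))))
                (gnorm (m1 + m2) (mulP mul1 mul2 (xs (Suc i)) (ginv (m1 + m2) (mulP mul1 mul2) (xs i)))))"
    and xs: "xs 0 = x" "xs n = y" "\<forall>i\<le>n. xs i \<in> Vm (m1 + m2)" by blast
  define ys where "ys = (\<lambda>i. split2 (xs i))"
  let ?a = "\<Sum>i<n. min (gnorm m2 (mul2 (ys i) (ginv m2 mul2 (ys (Suc i))))) (gnorm m2 (mul2 (ys (Suc i)) (ginv m2 mul2 (ys i))))"
  have "?a \<in> {\<Sum>i<n. min (gnorm m2 (mul2 (xs i) (ginv m2 mul2 (xs (Suc i))))) (gnorm m2 (mul2 (xs (Suc i)) (ginv m2 mul2 (xs i)))) |n xs.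
          xs 0 = split2 x \<and> xs n = split2 y \<and> (\<forall>i\<le>n. xs i \<in> Vm m2)}"
    unfolding ys_def using xs by (intro CollectI exI[of _ n] exI[of _ "\<lambda>i. split2 (xs i)"]) simp
  moreover have "?a \<le> b" unfolding b
  proof (rule sum_mono)
    fix i assume i: "i \<in> {..<n}"
    then have v: "xs i \<in> Vm (m1 + m2)" "xs (Suc i) \<in> Vm (m1 + m2)" using xs(3) by auto
    have e1: "mul2 (ys i) (ginv m2 mul2 (ys (Suc i))) = split2 (mulP mul1 mul2 (xs i) (ginv (m1 + m2) (mulP mul1 mul2) (xs (Suc i))))"
      unfolding ys_def using v by (simp add: split2_mulP[OF g2] split2_ginvP[OF g1 g2])
    have e2: "mul2 (ys (Suc i)) (ginv m2 mul2 (ys i)) = split2 (mulP mul1 mul2 (xs (Suc i)) (ginv (m1 + m2) (mulP mul1 mul2) (xs i)))"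
      unfolding ys_def using v by (simp add: split2_mulP[OF g2] split2_ginvP[OF g1 g2])
    show "min (gnorm m2 (mul2 (ys i) (ginv m2 mul2 (ys (Suc i))))) (gnorm m2 (mul2 (ys (Suc i)) (ginv m2 mul2 (ys i))))
        \<le> min (gnorm (m1 + m2) (mulP mul1 mul2 (xs i) (ginv (m1 + m2) (mulP mul1 mul2) (xs (Suc i)))))
              (gnorm (m1 + m2) (mulP mul1 mul2 (xs (Suc i)) (ginv (m1 + m2) (mulP mul1 mul2) (xs i))))"
      unfolding e1 e2 by (intro min.mono gnorm_split2)
  qed
  ultimately show "\<exists>a\<in>{\<Sum>i<n. min (gnorm m2 (mul2 (xs i) (ginv m2 mul2 (xs (Suc i))))) (gnorm m2 (mul2 (xs (Suc i)) (ginv m2 mul2 (xs i)))) |n xs.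
          xs 0 = split2 x \<and> xs n = split2 y \<and> (\<forall>i\<le>n. xs i \<in> Vm m2)}. a \<le> b" by blast
qed

lemma gid_Gam: "gid \<in> Gam m" unfolding Gam_def gid_def Vm_def by simp

lemma distGG_le1:
  assumes g1: "grp m1 mul1" and g2: "grp m2 mul2" and x: "x \<in> Vm (m1 + m2)" and y: "y \<in> Vm (m1 + m2)"
  shows "distGG m1 mul1 (split1 x) (split1 y) \<le> distGG (m1 + m2) (mulP mul1 mul2) x y"
  unfolding distGG_def
proof (rule cInf_mono)
  show "{distG (m1 + m2) (mulP mul1 mul2) (mulP mul1 mul2 x a) (mulP mul1 mul2 y b) |a b. a \<in> Gam (m1 + m2) \<and> b \<in> Gam (m1 + m2)} \<noteq> {}"
    using gid_Gam by blast
  show "bdd_below {distG m1 mul1 (mul1 (split1 x) a) (mul1 (split1 y) b) |a b. a \<in> Gam m1 \<and> b \<in> Gam m1}"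
    by (rule bdd_belowI[of _ 0]) (auto intro!: distG_nonneg grp_closed[OF g1] simp: Gam_def)
  fix r assume "r \<in> {distG (m1 + m2) (mulP mul1 mul2) (mulP mul1 mul2 x a) (mulP mul1 mul2 y b) |a b. a \<in> Gam (m1 + m2) \<and> b \<in> Gam (m1 + m2)}"
  then obtain a b where r: "r = distG (m1 + m2) (mulP mul1 mul2) (mulP mul1 mul2 x a) (mulP mul1 mul2 y b)"
    and ab: "a \<in> Gam (m1 + m2)" "b \<in> Gam (m1 + m2)" by blast
  have "distG m1 mul1 (mul1 (split1 x) (split1 a)) (mul1 (split1 y) (split1 b)) \<le> r"
    using distG_le1[OF g1 g2, of "mulP mul1 mul2 x a" "mulP mul1 mul2 y b"] r by (simp add: split1_mulP[OF g1])
  moreover have "split1 a \<in> Gam m1" "split1 b \<in> Gam m1" using ab Gam_char by auto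
  ultimately show "\<exists>a\<in>{distG m1 mul1 (mul1 (split1 x) a) (mul1 (split1 y) b) |a b. a \<in> Gam m1 \<and> b \<in> Gam m1}. a \<le> r"
    by blast
qed

lemma distGG_le2:
  assumes g1: "grp m1 mul1" and g2: "grp m2 mul2" and x: "x \<in> Vm (m1 + m2)" and y: "y \<in> Vm (m1 + m2)"
  shows "distGG m2 mul2 (split2 x) (split2 y) \<le> distGG (m1 + m2) (mulP mul1 mul2) x y"
  unfolding distGG_def
proof (rule cInf_mono)
  show "{distG (m1 + m2) (mulP mul1 mul2) (mulP mul1 mul2 x a) (mulP mul1 mul2 y b) |a b. a \<in> Gam (m1 + m2) \<and> b \<in> Gam (m1 + m2)} \<noteq> {}"
    using gid_Gam by blast
  show "bdd_below {distG m2 mul2 (mul2 (split2 x) a) (mul2 (split2 y) b) |a b. a \<in> Gam m2 \<and> b \<in> Gam m2}"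
    by (rule bdd_belowI[of _ 0]) (auto intro!: distG_nonneg grp_closed[OF g2] simp: Gam_def)
  fix r assume "r \<in> {distG (m1 + m2) (mulP mul1 mul2) (mulP mul1 mul2 x a) (mulP mul1 mul2 y b) |a b. a \<in> Gam (m1 + m2) \<and> b \<in> Gam (m1 + m2)}"
  then obtain a b where r: "r = distG (m1 + m2) (mulP mul1 mul2) (mulP mul1 mul2 x a) (mulP mul1 mul2 y b)"
    and ab: "a \<in> Gam (m1 + m2)" "b \<in> Gam (m1 + m2)" by blast
  have "distG m2 mul2 (mul2 (split2 x) (split2 a)) (mul2 (split2 y) (split2 b)) \<le> r"
    using distG_le2[OF g1 g2, of "mulP mul1 mul2 x a" "mulP mul1 mul2 y b"] r by (simp add: split2_mulP[OF g2])
  moreover have "split2 a \<in> Gam m2" "split2 b \<in> Gam m2" using ab Gam_char by auto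
  ultimately show "\<exists>a\<in>{distG m2 mul2 (mul2 (split2 x) a) (mul2 (split2 y) b) |a b. a \<in> Gam m2 \<and> b \<in> Gam m2}. a \<le> r"
    by blast
qed

lemma gderiv_prod:
  assumes g1: "grp m1 mul1" and g2: "grp m2 mul2"
  shows "(\<forall>n. u n \<in> Vm m1) \<Longrightarrow> (\<forall>n. v n \<in> Vm m2) \<Longrightarrow>
    gderiv (mulP mul1 mul2) (ginv (m1 + m2) (mulP mul1 mul2)) hs (\<lambda>n. comb (u n) (v n)) =
    (\<lambda>n. comb (gderiv mul1 (ginv m1 mul1) hs u n) (gderiv mul2 (ginv m2 mul2) hs v n))"
proof (induction hs arbitrary: u v)
  case Nil then show ?case by simp
next
  case (Cons h hs)
  have e: "(\<lambda>n. mulP mul1 mul2 (comb (u (n + h)) (v (n + h))) (ginv (m1 + m2) (mulP mul1 mul2) (comb (u n) (v n))))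
     = (\<lambda>n. comb (mul1 (u (n + h)) (ginv m1 mul1 (u n))) (mul2 (v (n + h)) (ginv m2 mul2 (v n))))"
    using Cons.prems by (simp add: mulP_def ginvP[OF g1 g2] ginv_props[OF g1] ginv_props[OF g2])
  have "\<forall>n. mul1 (u (n + h)) (ginv m1 mul1 (u n)) \<in> Vm m1" using Cons.prems by (simp add: grp_closed[OF g1] ginv_props[OF g1])
  moreover have "\<forall>n. mul2 (v (n + h)) (ginv m2 mul2 (v n)) \<in> Vm m2" using Cons.prems by (simp add: grp_closed[OF g2] ginv_props[OF g2])
  ultimately show ?case using Cons.IH e by simp
qed

end

lemma rat_height_mono: "rat_height_le r C \<Longrightarrow> C \<le> C' \<Longrightarrow> rat_height_le r C'"
  unfolding rat_height_le_def by force

lemma rat_height_0: "1 \<le> C \<Longrightarrow> rat_height_le 0 C"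
  unfolding rat_height_le_def by (rule exI[of _ 0], rule exI[of _ 1]) simp

lemma nilseq_C_nonneg: "nilseq s C \<psi> \<Longrightarrow> 0 \<le> C"
  unfolding nilseq_def by force

lemma nilseq_mono: "nilseq s C \<psi> \<Longrightarrow> C \<le> C' \<Longrightarrow> nilseq s C' \<psi>"
  unfolding nilseq_def
  apply (elim exE conjE)
  subgoal for m mul c d g F A B
    apply (rule exI[of _ m], rule exI[of _ mul], rule exI[of _ c], rule exI[of _ d], rule exI[of _ g], rule exI[of _ F])
    apply (intro conjI)
          apply assumption
         apply simp
        apply (blast intro: rat_height_mono)
       apply assumption
      apply assumption
     apply (rule exI[of _ A], rule exI[of _ B]) apply simp
    apply assumption
    done
  done

theorem nilseq_mult:
  assumes N1: "nilseq s C1 \<psi>1" and N2: "nilseq s C2 \<psi>2"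
  shows "nilseq s (C1 + C2 + C1 * C2 + 1) (\<lambda>n. \<psi>1 n * \<psi>2 n)"
proof -
  have C1: "0 \<le> C1" and C2: "0 \<le> C2" using nilseq_C_nonneg N1 N2 by auto
  obtain m1 mul1 c1 d1 g1 F1 where M1: "malcev_model s m1 mul1 c1 d1" and m1C: "real m1 \<le> C1"
    and h1: "\<forall>i<m1. \<forall>j<m1. \<forall>k<m1. rat_height_le (c1 i j k) C1"
    and p1: "polyseq m1 mul1 d1 g1" and G1: "\<forall>x\<in>Vm m1. \<forall>a\<in>Gam m1. F1 (mul1 x a) = F1 x"
    and AB1: "\<exists>A B. 0 \<le> A \<and> 0 \<le> B \<and> A + B \<le> C1 \<and> (\<forall>x\<in>Vm m1. cmod (F1 x) \<le> A) \<and>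
               (\<forall>x\<in>Vm m1. \<forall>y\<in>Vm m1. cmod (F1 x - F1 y) \<le> B * distGG m1 mul1 x y)"
    and e1: "\<forall>n. \<psi>1 n = F1 (g1 n)"
    using N1 unfolding nilseq_def by blast
  obtain A1 B1 where A1: "0 \<le> A1" "0 \<le> B1" "A1 + B1 \<le> C1" "\<forall>x\<in>Vm m1. cmod (F1 x) \<le> A1"
    "\<forall>x\<in>Vm m1. \<forall>y\<in>Vm m1. cmod (F1 x - F1 y) \<le> B1 * distGG m1 mul1 x y" using AB1 by blast
  obtain m2 mul2 c2 d2 g2 F2 where M2: "malcev_model s m2 mul2 c2 d2" and m2C: "real m2 \<le> C2"
    and h2: "\<forall>i<m2. \<forall>j<m2. \<forall>k<m2. rat_height_le (c2 i j k) C2"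
    and p2: "polyseq m2 mul2 d2 g2" and G2: "\<forall>x\<in>Vm m2. \<forall>a\<in>Gam m2. F2 (mul2 x a) = F2 x"
    and AB2: "\<exists>A B. 0 \<le> A \<and> 0 \<le> B \<and> A + B \<le> C2 \<and> (\<forall>x\<in>Vm m2. cmod (F2 x) \<le> A) \<and>
               (\<forall>x\<in>Vm m2. \<forall>y\<in>Vm m2. cmod (F2 x - F2 y) \<le> B * distGG m2 mul2 x y)"
    and e2: "\<forall>n. \<psi>2 n = F2 (g2 n)"
    using N2 unfolding nilseq_def by blast
  obtain A2 B2 where A2: "0 \<le> A2" "0 \<le> B2" "A2 + B2 \<le> C2" "\<forall>x\<in>Vm m2. cmod (F2 x) \<le> A2"
    "\<forall>x\<in>Vm m2. \<forall>y\<in>Vm m2. cmod (F2 x - F2 y) \<le> B2 * distGG m2 mul2 x y" using AB2 by blast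
  interpret T: twofilt m1 m2 d1 d2 s
    using mm_d[OF M1] mm_d[OF M2] by unfold_locales auto
  have g1: "grp m1 mul1" using malcev_grp[OF M1] .
  have g2: "grp m2 mul2" using malcev_grp[OF M2] .
  let ?C = "C1 + C2 + C1 * C2 + 1"
  let ?m = "m1 + m2" and ?mul = "T.mulP mul1 mul2"
  define g where "g = (\<lambda>n. T.comb (g1 n) (g2 n))"
  define F where "F = (\<lambda>z. F1 (T.split1 z) * F2 (T.split2 z))"
  have MP: "malcev_model s ?m ?mul (T.cP c1 c2) T.dP" by (rule T.malcev_prod[OF M1 M2])
  have mC: "real ?m \<le> ?C" proof - have "0 \<le> C1 * C2" using C1 C2 by simp then show ?thesis using m1C m2C by linarith qed
  have hC: "\<forall>i<?m. \<forall>j<?m. \<forall>k<?m. rat_height_le (T.cP c1 c2 i j k) ?C"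
  proof (intro allI impI)
    fix i j k assume "i < ?m" "j < ?m" "k < ?m"
    have cc: "0 \<le> C1 * C2" using C1 C2 by simp
    have L1: "C1 \<le> ?C" "C2 \<le> ?C" "1 \<le> ?C" using C1 C2 cc by linarith+
    show "rat_height_le (T.cP c1 c2 i j k) ?C"
    proof (cases "i \<in> T.I1 \<and> j \<in> T.I1 \<and> k \<in> T.I1")
      case True
      then have "rat_height_le (c1 (T.inv1 i) (T.inv1 j) (T.inv1 k)) C1" using h1 T.inv1_lt by blast
      then show ?thesis unfolding T.cP_def if_P[OF True] using L1 rat_height_mono by blast
    next
      case F: False
      show ?thesis
      proof (cases "i \<in> T.I2 \<and> j \<in> T.I2 \<and> k \<in> T.I2")
        case True
        then have "rat_height_le (c2 (T.inv2 i) (T.inv2 j) (T.inv2 k)) C2" using h2 T.inv2_lt by blast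
        then show ?thesis unfolding T.cP_def if_not_P[OF F] if_P[OF True] using L1 rat_height_mono by blast
      next
        case False
        then show ?thesis unfolding T.cP_def if_not_P[OF F] if_not_P[OF False] using L1 rat_height_0 by blast
      qed
    qed
  qed
  have g1V: "\<forall>n. g1 n \<in> Vm m1" using p1 unfolding polyseq_def Gsub_def
    by (metis (no_types, lifting) gderiv.simps(1) list.size(3) mem_Collect_eq)
  have g2V: "\<forall>n. g2 n \<in> Vm m2" using p2 unfolding polyseq_def Gsub_def
    by (metis (no_types, lifting) gderiv.simps(1) list.size(3) mem_Collect_eq)
  have pP: "polyseq ?m ?mul T.dP g"
    unfolding polyseq_def
  proof (intro allI)
    fix hs n
    have gd: "gderiv ?mul (ginv ?m ?mul) hs g n
      = T.comb (gderiv mul1 (ginv m1 mul1) hs g1 n) (gderiv mul2 (ginv m2 mul2) hs g2 n)"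
      unfolding g_def using T.gderiv_prod[OF g1 g2 g1V g2V] by simp
    have a: "gderiv mul1 (ginv m1 mul1) hs g1 n \<in> Gsub m1 d1 (length hs)" using p1 unfolding polyseq_def by blast
    have b: "gderiv mul2 (ginv m2 mul2) hs g2 n \<in> Gsub m2 d2 (length hs)" using p2 unfolding polyseq_def by blast
    have aV: "gderiv mul1 (ginv m1 mul1) hs g1 n \<in> Vm m1" using a unfolding Gsub_def by simp
    have bV: "gderiv mul2 (ginv m2 mul2) hs g2 n \<in> Vm m2" using b unfolding Gsub_def by simp
    show "gderiv ?mul (ginv ?m ?mul) hs g n \<in> Gsub ?m T.dP (length hs)"
      unfolding gd T.Gsub_char using a b aV bV by simp
  qed
  have GP: "\<forall>x\<in>Vm ?m. \<forall>a\<in>Gam ?m. F (?mul x a) = F x"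
  proof (intro ballI)
    fix x a assume x: "x \<in> Vm ?m" and a: "a \<in> Gam ?m"
    then have "T.split1 a \<in> Gam m1" "T.split2 a \<in> Gam m2" using T.Gam_char by auto
    then show "F (?mul x a) = F x" unfolding F_def using G1 G2
      by (simp add: T.split1_mulP[OF g1] T.split2_mulP[OF g2])
  qed
  have bnd: "\<forall>x\<in>Vm ?m. cmod (F x) \<le> A1 * A2"
    unfolding F_def using A1(4) A2(4) by (simp add: norm_mult mult_mono A1(1) A2(1))
  have lip: "\<forall>x\<in>Vm ?m. \<forall>y\<in>Vm ?m. cmod (F x - F y) \<le> (A1 * B2 + A2 * B1) * distGG ?m ?mul x y"
  proof (intro ballI)
    fix x y assume x: "x \<in> Vm ?m" and y: "y \<in> Vm ?m"
    let ?x1 = "T.split1 x" and ?x2 = "T.split2 x" and ?y1 = "T.split1 y" and ?y2 = "T.split2 y"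
    let ?D = "distGG ?m ?mul x y"
    have d1: "distGG m1 mul1 ?x1 ?y1 \<le> ?D" by (rule T.distGG_le1[OF g1 g2 x y])
    have d2: "distGG m2 mul2 ?x2 ?y2 \<le> ?D" by (rule T.distGG_le2[OF g1 g2 x y])
    have "F x - F y = F1 ?x1 * (F2 ?x2 - F2 ?y2) + F2 ?y2 * (F1 ?x1 - F1 ?y1)"
      unfolding F_def by (simp add: algebra_simps)
    then have "cmod (F x - F y) \<le> cmod (F1 ?x1) * cmod (F2 ?x2 - F2 ?y2) + cmod (F2 ?y2) * cmod (F1 ?x1 - F1 ?y1)"
      by (metis norm_mult norm_triangle_ineq)
    also have "\<dots> \<le> A1 * (B2 * distGG m2 mul2 ?x2 ?y2) + A2 * (B1 * distGG m1 mul1 ?x1 ?y1)"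
      using A1 A2 by (intro add_mono mult_mono) (simp_all add: distG_nonneg)
    also have "\<dots> \<le> A1 * (B2 * ?D) + A2 * (B1 * ?D)"
      using A1 A2 d1 d2 by (intro add_mono mult_left_mono) simp_all
    finally show "cmod (F x - F y) \<le> (A1 * B2 + A2 * B1) * ?D" by (simp add: algebra_simps)
  qed
  have ABC: "A1 * A2 + (A1 * B2 + A2 * B1) \<le> ?C"
  proof -
    have "A1 * A2 + (A1 * B2 + A2 * B1) \<le> (A1 + B1) * (A2 + B2)" using A1 A2 by (simp add: algebra_simps)
    also have "\<dots> \<le> C1 * C2" using A1 A2 by (intro mult_mono) simp_all
    finally show ?thesis using C1 C2 by simp
  qed
  have eP: "\<forall>n. \<psi>1 n * \<psi>2 n = F (g n)" unfolding F_def g_def using e1 e2 g1V g2V by simp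
  show ?thesis unfolding nilseq_def
    apply (rule exI[of _ ?m], rule exI[of _ ?mul], rule exI[of _ "T.cP c1 c2"], rule exI[of _ T.dP],
           rule exI[of _ g], rule exI[of _ F])
    apply (intro conjI MP mC hC pP GP eP)
    apply (rule exI[of _ "A1 * A2"], rule exI[of _ "A1 * B2 + A2 * B1"])
    using A1 A2 bnd lip ABC by simp
qed


lemma nilseq_comp:
  assumes N: "nilseq s C \<psi>" and L: "0 \<le> L"
    and lip: "\<And>z w. \<bar>G z - G w\<bar> \<le> L * cmod (z - w)" and bd: "\<And>z. \<bar>G z\<bar> \<le> 1"
  shows "nilseq s (C + L * C + 1) (\<lambda>n. complex_of_real (G (\<psi> n)))"
proof -
  have C0: "0 \<le> C" using nilseq_C_nonneg[OF N] .
  obtain m mul c d g F where M: "malcev_model s m mul c d" and mC: "real m \<le> C"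
    and h: "\<forall>i<m. \<forall>j<m. \<forall>k<m. rat_height_le (c i j k) C"
    and p: "polyseq m mul d g" and Gi: "\<forall>x\<in>Vm m. \<forall>a\<in>Gam m. F (mul x a) = F x"
    and AB: "\<exists>A B. 0 \<le> A \<and> 0 \<le> B \<and> A + B \<le> C \<and> (\<forall>x\<in>Vm m. cmod (F x) \<le> A) \<and>
               (\<forall>x\<in>Vm m. \<forall>y\<in>Vm m. cmod (F x - F y) \<le> B * distGG m mul x y)"
    and e: "\<forall>n. \<psi> n = F (g n)"
    using N unfolding nilseq_def by blast
  obtain A B where A: "0 \<le> A" "0 \<le> B" "A + B \<le> C" "\<forall>x\<in>Vm m. cmod (F x) \<le> A"
    "\<forall>x\<in>Vm m. \<forall>y\<in>Vm m. cmod (F x - F y) \<le> B * distGG m mul x y" using AB by blast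
  let ?C = "C + L * C + 1"
  have LC: "0 \<le> L * C" using L C0 by simp
  define F' where "F' = (\<lambda>x. complex_of_real (G (F x)))"
  have h': "\<forall>i<m. \<forall>j<m. \<forall>k<m. rat_height_le (c i j k) ?C"
    using h LC by (meson rat_height_mono le_add_same_cancel1 add_increasing2 add_nonneg_nonneg zero_le_one order_refl)
  have m': "real m \<le> ?C" using mC LC by linarith
  have Gi': "\<forall>x\<in>Vm m. \<forall>a\<in>Gam m. F' (mul x a) = F' x" unfolding F'_def using Gi by simp
  have b': "\<forall>x\<in>Vm m. cmod (F' x) \<le> 1" unfolding F'_def using bd by simp
  have l': "\<forall>x\<in>Vm m. \<forall>y\<in>Vm m. cmod (F' x - F' y) \<le> (L * B) * distGG m mul x y"
  proof (intro ballI)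
    fix x y assume x: "x \<in> Vm m" and y: "y \<in> Vm m"
    have "cmod (F' x - F' y) = \<bar>G (F x) - G (F y)\<bar>" unfolding F'_def
      by (metis norm_of_real of_real_diff)
    also have "\<dots> \<le> L * cmod (F x - F y)" by (rule lip)
    also have "\<dots> \<le> L * (B * distGG m mul x y)" using A(5) x y L by (simp add: mult_left_mono)
    finally show "cmod (F' x - F' y) \<le> (L * B) * distGG m mul x y" by (simp add: mult.assoc)
  qed
  have ab': "1 + L * B \<le> ?C"
  proof -
    have "L * B \<le> L * C" using A L by (intro mult_left_mono) simp_all
    then show ?thesis using C0 by linarith
  qed
  show ?thesis unfolding nilseq_def
    apply (rule exI[of _ m], rule exI[of _ mul], rule exI[of _ c], rule exI[of _ d], rule exI[of _ g], rule exI[of _ F'])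
    apply (intro conjI M m' h' p Gi')
     apply (rule exI[of _ 1], rule exI[of _ "L * B"])
    using b' l' ab' A L apply simp
    using e unfolding F'_def by simp
qed

definition clip :: "real \<Rightarrow> real \<Rightarrow> real" where
  "clip \<eta> t = max 0 (min 1 (t / \<eta> + 1 / 2))"

lemma clip_01: "0 \<le> clip \<eta> t" "clip \<eta> t \<le> 1" unfolding clip_def by auto

lemma clamp_lip: "\<bar>max 0 (min 1 u) - max 0 (min 1 v)\<bar> \<le> \<bar>u - (v::real)\<bar>"
  by (cases "u \<le> 0"; cases "u \<le> 1"; cases "v \<le> 0"; cases "v \<le> 1") (auto simp: max_def min_def)

lemma clip_lip: "0 < \<eta> \<Longrightarrow> \<bar>clip \<eta> t - clip \<eta> t'\<bar> \<le> \<bar>t - t'\<bar> / \<eta>"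
proof -
  assume e: "0 < \<eta>"
  have "\<bar>clip \<eta> t - clip \<eta> t'\<bar> \<le> \<bar>(t / \<eta> + 1/2) - (t' / \<eta> + 1/2)\<bar>"
    unfolding clip_def by (rule clamp_lip)
  also have "\<dots> = \<bar>t - t'\<bar> / \<eta>" using e by (simp add: diff_divide_distrib[symmetric])
  finally show ?thesis .
qed

lemma clip_one: "0 < \<eta> \<Longrightarrow> \<eta> / 2 \<le> t \<Longrightarrow> clip \<eta> t = 1"
proof -
  assume "0 < \<eta>" "\<eta> / 2 \<le> t"
  then have "1/2 \<le> t / \<eta>" by (simp add: field_simps)
  then have "1 \<le> t / \<eta> + 1/2" by linarith
  then show ?thesis unfolding clip_def by (simp add: min_def)
qed

lemma clip_zero: "0 < \<eta> \<Longrightarrow> t \<le> - \<eta> / 2 \<Longrightarrow> clip \<eta> t = 0"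
proof -
  assume "0 < \<eta>" "t \<le> - \<eta> / 2"
  then have "t / \<eta> \<le> - 1/2" by (simp add: field_simps)
  then have "t / \<eta> + 1/2 \<le> 0" by linarith
  then show ?thesis unfolding clip_def by (simp add: min_def max_def)
qed

lemma prod01_lip:
  fixes a b a' b' :: real
  assumes "0 \<le> a" "a \<le> 1" "0 \<le> b" "b \<le> 1" "0 \<le> a'" "a' \<le> 1" "0 \<le> b'" "b' \<le> 1"
  shows "\<bar>a * b - a' * b'\<bar> \<le> \<bar>a - a'\<bar> + \<bar>b - b'\<bar>"
proof -
  have "a * b - a' * b' = a * (b - b') + b' * (a - a')" by (simp add: algebra_simps)
  then have "\<bar>a * b - a' * b'\<bar> \<le> \<bar>a\<bar> * \<bar>b - b'\<bar> + \<bar>b'\<bar> * \<bar>a - a'\<bar>" by (simp add: abs_mult[symmetric] abs_triangle_ineq)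
  also have "\<dots> \<le> 1 * \<bar>b - b'\<bar> + 1 * \<bar>a - a'\<bar>" using assms by (intro add_mono mult_right_mono) simp_all
  finally show ?thesis by simp
qed

definition cellfun :: "real \<Rightarrow> real \<Rightarrow> real \<Rightarrow> int \<Rightarrow> int \<Rightarrow> complex \<Rightarrow> real" where
  "cellfun \<eta> w \<theta> j k z = clip \<eta> (Re z - \<theta> - w * j) * clip \<eta> (\<theta> + w * (j + 1) - Re z) *
                          (clip \<eta> (Im z - \<theta> - w * k) * clip \<eta> (\<theta> + w * (k + 1) - Im z))"

lemma cellfun_01: "0 \<le> cellfun \<eta> w \<theta> j k z" "cellfun \<eta> w \<theta> j k z \<le> 1"
  unfolding cellfun_def using clip_01 by (simp_all add: mult_le_one)

lemma cellfun_lip: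
  assumes "0 < \<eta>"
  shows "\<bar>cellfun \<eta> w \<theta> j k z - cellfun \<eta> w \<theta> j k z'\<bar> \<le> (4 / \<eta>) * cmod (z - z')"
proof -
  have r: "\<bar>Re z - Re z'\<bar> \<le> cmod (z - z')" by (metis abs_Re_le_cmod minus_complex.simps(1))
  have i: "\<bar>Im z - Im z'\<bar> \<le> cmod (z - z')" by (metis abs_Im_le_cmod minus_complex.simps(2))
  let ?a = "clip \<eta> (Re z - \<theta> - w * j)" and ?a' = "clip \<eta> (Re z' - \<theta> - w * j)"
  let ?b = "clip \<eta> (\<theta> + w * (j + 1) - Re z)" and ?b' = "clip \<eta> (\<theta> + w * (j + 1) - Re z')"
  let ?c = "clip \<eta> (Im z - \<theta> - w * k)" and ?c' = "clip \<eta> (Im z' - \<theta> - w * k)"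
  let ?d = "clip \<eta> (\<theta> + w * (k + 1) - Im z)" and ?d' = "clip \<eta> (\<theta> + w * (k + 1) - Im z')"
  have ab: "\<bar>?a * ?b - ?a' * ?b'\<bar> \<le> \<bar>?a - ?a'\<bar> + \<bar>?b - ?b'\<bar>" by (rule prod01_lip) (simp_all add: clip_01)
  have cd: "\<bar>?c * ?d - ?c' * ?d'\<bar> \<le> \<bar>?c - ?c'\<bar> + \<bar>?d - ?d'\<bar>" by (rule prod01_lip) (simp_all add: clip_01)
  have abcd: "\<bar>(?a * ?b) * (?c * ?d) - (?a' * ?b') * (?c' * ?d')\<bar> \<le> \<bar>?a * ?b - ?a' * ?b'\<bar> + \<bar>?c * ?d - ?c' * ?d'\<bar>"
    by (rule prod01_lip) (simp_all add: clip_01 mult_le_one)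
  have "\<bar>?a - ?a'\<bar> \<le> \<bar>Re z - Re z'\<bar> / \<eta>" using clip_lip[OF assms] by (metis (no_types, opaque_lifting) diff_diff_eq2 diff_diff_add add_diff_cancel_left')
  moreover have "\<bar>?b - ?b'\<bar> \<le> \<bar>Re z - Re z'\<bar> / \<eta>" using clip_lip[OF assms, of "\<theta> + w * (j + 1) - Re z" "\<theta> + w * (j + 1) - Re z'"] by (simp add: abs_minus_commute)
  moreover have "\<bar>?c - ?c'\<bar> \<le> \<bar>Im z - Im z'\<bar> / \<eta>" using clip_lip[OF assms, of "Im z - \<theta> - w * k" "Im z' - \<theta> - w * k"] by simp
  moreover have "\<bar>?d - ?d'\<bar> \<le> \<bar>Im z - Im z'\<bar> / \<eta>" using clip_lip[OF assms, of "\<theta> + w * (k + 1) - Im z" "\<theta> + w * (k + 1) - Im z'"] by (simp add: abs_minus_commute)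
  moreover have "\<bar>Re z - Re z'\<bar> / \<eta> \<le> cmod (z - z') / \<eta>" "\<bar>Im z - Im z'\<bar> / \<eta> \<le> cmod (z - z') / \<eta>"
    using r i assms by (simp_all add: divide_right_mono)
  ultimately have "\<bar>(?a * ?b) * (?c * ?d) - (?a' * ?b') * (?c' * ?d')\<bar> \<le> 4 * (cmod (z - z') / \<eta>)"
    using ab cd abcd by linarith
  then show ?thesis unfolding cellfun_def by simp
qed


lemma card_int_interval:
  fixes a b :: real assumes "a \<le> b"
  shows "real (card {z::int. a < of_int z \<and> of_int z < b}) \<le> b - a + 1"
proof -
  have sub: "{z::int. a < of_int z \<and> of_int z < b} \<subseteq> {\<lfloor>a\<rfloor> + 1 .. \<lceil>b\<rceil> - 1}"
  proof
    fix z assume "z \<in> {z::int. a < of_int z \<and> of_int z < b}"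
    then have "a < of_int z" "of_int z < b" by auto
    then have "\<lfloor>a\<rfloor> < z" "z < \<lceil>b\<rceil>" by (simp_all add: floor_less_iff less_ceiling_iff)
    then show "z \<in> {\<lfloor>a\<rfloor> + 1 .. \<lceil>b\<rceil> - 1}" by simp
  qed
  have "card {z::int. a < of_int z \<and> of_int z < b} \<le> card {\<lfloor>a\<rfloor> + 1 .. \<lceil>b\<rceil> - 1}"
    by (rule card_mono[OF _ sub]) simp
  also have "\<dots> = nat (\<lceil>b\<rceil> - 1 - \<lfloor>a\<rfloor>)" by simp
  finally have c: "real (card {z::int. a < of_int z \<and> of_int z < b}) \<le> real (nat (\<lceil>b\<rceil> - 1 - \<lfloor>a\<rfloor>))" by simp
  have "\<lfloor>a\<rfloor> \<le> \<lceil>b\<rceil>" using assms by (meson ceiling_le_iff floor_le_ceiling floor_mono order_trans le_of_int_ceiling)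
  have "real (nat (\<lceil>b\<rceil> - 1 - \<lfloor>a\<rfloor>)) \<le> max 0 (of_int \<lceil>b\<rceil> - 1 - of_int \<lfloor>a\<rfloor>)" by simp
  also have "\<dots> \<le> b - a + 1"
  proof -
    have h1: "of_int \<lceil>b\<rceil> < b + 1" using ceiling_correct[of b] by linarith
    have h2: "a - 1 < of_int \<lfloor>a\<rfloor>" using floor_correct[of a] by linarith
    show ?thesis by (intro max.boundedI) (use h1 h2 assms in linarith)+
  qed
  finally show ?thesis using c by simp
qed

lemma grid_count:
  fixes x r w :: real and Q :: nat
  assumes Q: "0 < Q" and r: "0 < r" and w: "0 < w"
  shows "real (card {q \<in> {..<Q}. \<exists>j::int. \<bar>x - real q * w / Q - w * of_int j\<bar> < r}) \<le> 2 * r * Q / w + 1"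
proof -
  let ?A = "{q \<in> {..<Q}. \<exists>j::int. \<bar>x - real q * w / Q - w * of_int j\<bar> < r}"
  define J where "J q = (SOME j::int. \<bar>x - real q * w / Q - w * of_int j\<bar> < r)" for q
  have J: "\<bar>x - real q * w / Q - w * of_int (J q)\<bar> < r" if "q \<in> ?A" for q
    using that unfolding J_def by (auto intro: someI_ex)
  define \<phi> where "\<phi> q = int q + int Q * J q" for q
  have inj: "inj_on \<phi> ?A"
  proof (rule inj_onI)
    fix q q' assume q: "q \<in> ?A" and q': "q' \<in> ?A" and e: "\<phi> q = \<phi> q'"
    have "int q mod int Q = int q' mod int Q" using e unfolding \<phi>_def by (metis mod_mult_self2)
    then show "q = q'" using q q' by simp
  qed
  let ?a = "x * Q / w - r * Q / w" and ?b = "x * Q / w + r * Q / w"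
  have img: "\<phi> ` ?A \<subseteq> {z::int. ?a < of_int z \<and> of_int z < ?b}"
  proof
    fix z assume "z \<in> \<phi> ` ?A"
    then obtain q where q: "q \<in> ?A" and z: "z = \<phi> q" by blast
    have h: "\<bar>x - real q * w / Q - w * of_int (J q)\<bar> < r" using J[OF q] .
    have "\<bar>x - real q * w / Q - w * of_int (J q)\<bar> * (Q / w) = \<bar>x * Q / w - of_int z\<bar>"
      unfolding z \<phi>_def using Q w by (simp add: abs_mult[symmetric] field_simps)
    moreover have "\<bar>x - real q * w / Q - w * of_int (J q)\<bar> * (Q / w) < r * (Q / w)"
      using h Q w by (intro mult_strict_right_mono) simp_all
    ultimately have "\<bar>x * Q / w - of_int z\<bar> < r * Q / w" by simp
    then show "z \<in> {z::int. ?a < of_int z \<and> of_int z < ?b}" by (simp add: abs_less_iff)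
  qed
  have "card ?A = card (\<phi> ` ?A)" using inj by (simp add: card_image)
  also have "\<dots> \<le> card {z::int. ?a < of_int z \<and> of_int z < ?b}"
  proof (rule card_mono[OF _ img])
    have "{z::int. ?a < of_int z \<and> of_int z < ?b} \<subseteq> {\<lfloor>?a\<rfloor> .. \<lceil>?b\<rceil>}"
      by (auto simp: floor_le_iff le_ceiling_iff)
    then show "finite {z::int. ?a < of_int z \<and> of_int z < ?b}" by (rule finite_subset) simp
  qed
  finally have "real (card ?A) \<le> real (card {z::int. ?a < of_int z \<and> of_int z < ?b})" by simp
  also have "\<dots> \<le> ?b - ?a + 1" using Q r w by (intro card_int_interval) (simp add: field_simps)
  also have "\<dots> = 2 * r * Q / w + 1" by (simp add: field_simps)
  finally show ?thesis .
qed

definition badset :: "real \<Rightarrow> ('a \<Rightarrow> real) \<Rightarrow> 'a set \<Rightarrow> real \<Rightarrow> real \<Rightarrow> 'a set" where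
  "badset w x S \<theta> r = {i \<in> S. \<exists>j::int. \<bar>x i - \<theta> - w * of_int j\<bar> < r}"

lemma badset_mono: "r \<le> r' \<Longrightarrow> badset w x S \<theta> r \<subseteq> badset w x S \<theta> r'"
  unfolding badset_def
proof
  fix i assume r: "r \<le> r'" and "i \<in> {i \<in> S. \<exists>j::int. \<bar>x i - \<theta> - w * of_int j\<bar> < r}"
  then obtain j::int where "i \<in> S" "\<bar>x i - \<theta> - w * of_int j\<bar> < r" by blast
  moreover have "\<bar>x i - \<theta> - w * of_int j\<bar> < r'" using r \<open>\<bar>x i - \<theta> - w * of_int j\<bar> < r\<close> by linarith
  ultimately show "i \<in> {i \<in> S. \<exists>j::int. \<bar>x i - \<theta> - w * of_int j\<bar> < r'}" by blast
qed

lemma card_filter_sum: "finite S \<Longrightarrow> real (card {i \<in> S. P i}) = (\<Sum>i\<in>S. if P i then 1 else 0)"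
proof -
  assume S: "finite S"
  have "{i \<in> S. P i} = S \<inter> {i. P i}" by blast
  then show ?thesis using S by (simp add: sum.If_cases)
qed

lemma double_count:
  fixes Q :: nat
  assumes S: "finite S" and Q: "0 < Q" and r: "0 < r" and w: "0 < w"
  shows "(\<Sum>q<Q. real (card (badset w x S (real q * w / Q) r))) \<le> real (card S) * (2 * r * Q / w + 1)"
proof -
  have "(\<Sum>q<Q. real (card (badset w x S (real q * w / Q) r)))
      = (\<Sum>q<Q. \<Sum>i\<in>S. if \<exists>j::int. \<bar>x i - real q * w / Q - w * of_int j\<bar> < r then 1 else 0)"
    unfolding badset_def using S by (simp add: card_filter_sum)
  also have "\<dots> = (\<Sum>i\<in>S. \<Sum>q<Q. if \<exists>j::int. \<bar>x i - real q * w / Q - w * of_int j\<bar> < r then 1 else 0)"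
    by (rule sum.swap)
  also have "\<dots> = (\<Sum>i\<in>S. real (card {q \<in> {..<Q}. \<exists>j::int. \<bar>x i - real q * w / Q - w * of_int j\<bar> < r}))"
    by (intro sum.cong refl, subst card_filter_sum) simp_all
  also have "\<dots> \<le> (\<Sum>i\<in>S. 2 * r * Q / w + 1)"
    by (rule sum_mono) (rule grid_count[OF Q r w])
  also have "\<dots> = real (card S) * (2 * r * Q / w + 1)" by simp
  finally show ?thesis .
qed

lemma markov_card:
  fixes f :: "'b \<Rightarrow> real"
  assumes "finite A" "\<And>q. q \<in> A \<Longrightarrow> 0 \<le> f q" "0 \<le> t"
  shows "real (card {q \<in> A. t < f q}) * t \<le> (\<Sum>q\<in>A. f q)"
proof -
  have "real (card {q \<in> A. t < f q}) * t = (\<Sum>q\<in>{q \<in> A. t < f q}. t)" by simp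
  also have "\<dots> \<le> (\<Sum>q\<in>{q \<in> A. t < f q}. f q)" by (rule sum_mono) simp
  also have "\<dots> \<le> (\<Sum>q\<in>A. f q)" using assms by (intro sum_mono2) auto
  finally show ?thesis .
qed


lemma geo_half: "(\<Sum>j<J. (1/2::real)^j) \<le> 2"
proof -
  have "(\<Sum>j<J. (1/2::real)^j) = (1 - (1/2)^J) / (1 - 1/2)" by (simp add: sum_gp_strict)
  also have "\<dots> \<le> 2" by simp
  finally show ?thesis .
qed

lemma geo_two: "(\<Sum>j<J. (2::real)^j) = 2^J - 1"
proof -
  have "(\<Sum>j<J. (2::real)^j) = (1 - 2^J) / (1 - 2)" by (simp add: sum_gp_strict)
  then show ?thesis by simp
qed

lemma good_theta:
  assumes S: "finite S" and w: "0 < w"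
  shows "\<exists>\<theta>. 0 \<le> \<theta> \<and> \<theta> < w \<and>
     (\<forall>j::nat. real (card (badset w x S \<theta> (w / (16 * 4^j)))) \<le> real (card S) / 2^j)"
proof (cases "card S = 0")
  case True
  then have "S = {}" using S by simp
  then show ?thesis using w unfolding badset_def by (intro exI[of _ 0]) simp
next
  case False
  define n where "n = card S"
  have n0: "0 < n" using False n_def by simp
  define J where "J = n"
  define Q where "Q = 2 * (2^J + n) + 1"
  have Q0: "0 < Q" unfolding Q_def by simp
  define r where "r j = w / (16 * 4^j)" for j :: nat
  have r0: "0 < r j" for j unfolding r_def using w by simp
  define th where "th q = real q * w / Q" for q :: nat
  define f where "f j q = real (card (badset w x S (th q) (r j)))" for j q
  have f0: "0 \<le> f j q" for j q unfolding f_def by simp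
  have sumf: "(\<Sum>q<Q. f j q) \<le> real n * (real Q / (8 * 4^j) + 1)" for j
  proof -
    have "(\<Sum>q<Q. f j q) \<le> real (card S) * (2 * r j * Q / w + 1)"
      unfolding f_def th_def by (rule double_count[OF S Q0 r0 w])
    also have "2 * r j * Q / w = real Q / (8 * 4^j)" unfolding r_def using w by (simp add: field_simps)
    finally show ?thesis unfolding n_def .
  qed
  define B where "B j = {q \<in> {..<Q}. real n / 2^j < f j q}" for j
  define Binf where "Binf = {q \<in> {..<Q}. 0 < f J q}"
  have cB: "real (card (B j)) \<le> real Q / 8 * (1/2)^j + 2^j" for j
  proof -
    have "real (card (B j)) * (real n / 2^j) \<le> (\<Sum>q<Q. f j q)"
      unfolding B_def by (rule markov_card) (simp_all add: f0)
    also have "\<dots> \<le> real n * (real Q / (8 * 4^j) + 1)" by (rule sumf)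
    finally have h: "real (card (B j)) * (real n / 2^j) \<le> real n * (real Q / (8 * 4^j) + 1)" .
    have "real (card (B j)) \<le> 2^j * (real Q / (8 * 4^j) + 1)"
    proof -
      have "real (card (B j)) * real n \<le> (2^j * (real Q / (8 * 4^j) + 1)) * real n"
        using h by (simp add: field_simps)
      then show ?thesis using n0 by simp
    qed
    also have "\<dots> = real Q / 8 * (1/2)^j + 2^j"
    proof -
      have "(4::real)^j = 2^j * 2^j" by (simp add: power_mult_distrib[symmetric])
      then show ?thesis by (simp add: field_simps power_divide)
    qed
    finally show ?thesis .
  qed
  have cBinf: "real (card Binf) \<le> real Q / 8 + real n"
  proof -
    have "real (card Binf) = (\<Sum>q\<in>Binf. 1)" by simp
    also have "\<dots> \<le> (\<Sum>q\<in>Binf. f J q)"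
    proof (rule sum_mono)
      fix q assume "q \<in> Binf"
      then have "0 < card (badset w x S (th q) (r J))" unfolding Binf_def f_def by simp
      then show "1 \<le> f J q" unfolding f_def by simp
    qed
    also have "\<dots> \<le> (\<Sum>q<Q. f J q)" unfolding Binf_def by (intro sum_mono2) (auto simp: f0)
    also have "\<dots> \<le> real n * (real Q / (8 * 4^J) + 1)" by (rule sumf)
    also have "\<dots> \<le> real Q / 8 + real n"
    proof -
      have "real n \<le> 4^J" unfolding J_def
      proof -
        have "n < 2^n" by (rule less_exp)
        also have "(2::nat)^n \<le> 4^n" by (simp add: power_mono)
        finally show "real n \<le> 4^n" by (metis less_imp_le of_nat_less_iff of_nat_numeral of_nat_power)
      qed
      then have "real Q * real n \<le> real Q * 4^J" by (intro mult_left_mono) simp_all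
      then have "real n * (real Q / (8 * 4^J)) \<le> real Q / 8"
        by (simp add: field_simps)
      then show ?thesis by (simp add: distrib_left)
    qed
    finally show ?thesis .
  qed
  let ?U = "(\<Union>j<J. B j) \<union> Binf"
  have "real (card ?U) \<le> real (card (\<Union>j<J. B j)) + real (card Binf)"
    using card_Un_le[of "\<Union>j<J. B j" Binf] by linarith
  also have "real (card (\<Union>j<J. B j)) \<le> (\<Sum>j<J. real (card (B j)))"
    using card_UN_le[of "{..<J}" B] by (simp flip: of_nat_sum)
  also have "(\<Sum>j<J. real (card (B j))) \<le> (\<Sum>j<J. real Q / 8 * (1/2)^j + 2^j)"
    by (rule sum_mono) (rule cB)
  also have "\<dots> = real Q / 8 * (\<Sum>j<J. (1/2)^j) + (2^J - 1)"
    by (simp add: sum.distrib sum_distrib_left geo_two)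
  also have "\<dots> \<le> real Q / 8 * 2 + (2^J - 1)"
    using geo_half[of J] by (intro add_mono mult_left_mono) simp_all
  finally have cu: "real (card ?U) \<le> real Q / 4 + (2^J - 1) + (real Q / 8 + real n)"
    using cBinf by linarith
  have "real Q = 2 * (2^J + real n) + 1" unfolding Q_def by simp
  moreover have "0 \<le> real Q" by simp
  ultimately have "real (card ?U) < real Q" using cu by argo
  then have "card ?U < card {..<Q}" by simp
  moreover have finU: "finite ?U" unfolding B_def Binf_def by auto
  ultimately have "\<not> {..<Q} \<subseteq> ?U"
    using card_mono[OF finU, of "{..<Q}"] by linarith
  then obtain q where q: "q < Q" "q \<notin> ?U" by blast
  show ?thesis
  proof (intro exI[of _ "th q"] conjI allI)
    show "0 \<le> th q" unfolding th_def using w by simp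
    show "th q < w" unfolding th_def using w q(1) Q0 by (simp add: field_simps)
    fix j :: nat
    show "real (card (badset w x S (th q) (w / (16 * 4^j)))) \<le> real (card S) / 2^j"
    proof (cases "j < J")
      case True
      then have "q \<notin> B j" using q by blast
      then show ?thesis using q(1) unfolding B_def f_def r_def n_def by simp
    next
      case False
      have "q \<notin> Binf" using q by blast
      then have z: "card (badset w x S (th q) (r J)) = 0" using q(1) unfolding Binf_def f_def by simp
      have "r j \<le> r J" unfolding r_def using False w by (simp add: frac_le power_increasing)
      then have "badset w x S (th q) (r j) \<subseteq> badset w x S (th q) (r J)" by (rule badset_mono)
      moreover have "finite (badset w x S (th q) (r J))" unfolding badset_def using S by simp
      ultimately have "card (badset w x S (th q) (r j)) = 0" using z by (metis card_0_eq subset_empty)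
      then show ?thesis unfolding r_def by simp
    qed
  qed
qed


definition partition :: "nat \<Rightarrow> int set set \<Rightarrow> bool" where
  "partition N B \<longleftrightarrow> finite B \<and> \<Union>B = {1..int N} \<and> {} \<notin> B \<and> (\<forall>E\<in>B. \<forall>E'\<in>B. E \<noteq> E' \<longrightarrow> E \<inter> E' = {})"

lemma sfactor_partition: "sfactor s N K \<Phi> B \<Longrightarrow> partition N B"
  unfolding sfactor_def partition_def by (elim conjE) (intro conjI; assumption)

lemma part_sub: "partition N B \<Longrightarrow> E \<in> B \<Longrightarrow> E \<subseteq> {1..int N}"
  unfolding partition_def by (elim conjE) (drule sym, simp add: Union_upper)
lemma part_fin: assumes "partition N B" "E \<in> B" shows "finite E"
  by (rule finite_subset[OF part_sub[OF assms]]) simp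
lemma part_ne: "partition N B \<Longrightarrow> E \<in> B \<Longrightarrow> E \<noteq> {}"
  unfolding partition_def by (elim conjE) (rule notI, simp)
lemma part_cover: "partition N B \<Longrightarrow> n \<in> {1..int N} \<Longrightarrow> \<exists>E\<in>B. n \<in> E"
  unfolding partition_def by (elim conjE) (drule sym, simp)
lemma part_disj: "partition N B \<Longrightarrow> E \<in> B \<Longrightarrow> E' \<in> B \<Longrightarrow> n \<in> E \<Longrightarrow> n \<in> E' \<Longrightarrow> E = E'"
  unfolding partition_def by (elim conjE) (rule ccontr, fastforce)

lemma ce_on:
  assumes P: "partition N B" and E: "E \<in> B" and n: "n \<in> E"
  shows "condexp B f n = (\<Sum>m\<in>E. f m) / real (card E)"
proof -
  have "condexp B f n = (\<Sum>E'\<in>B. if E' = E then (\<Sum>m\<in>E. f m) / real (card E) else 0)"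
    unfolding condexp_def
  proof (rule sum.cong[OF refl])
    fix E' assume E': "E' \<in> B"
    show "(if n \<in> E' then (\<Sum>m\<in>E'. f m) / real (card E') else 0) = (if E' = E then (\<Sum>m\<in>E. f m) / real (card E) else 0)"
    proof (cases "n \<in> E'")
      case True then have "E' = E" using part_disj[OF P E' E _ n] by simp
      then show ?thesis using n by simp
    next
      case False then have "E' \<noteq> E" using n by blast
      then show ?thesis using False by simp
    qed
  qed
  also have "\<dots> = (\<Sum>m\<in>E. f m) / real (card E)" using E P unfolding partition_def by (simp add: sum.delta')
  finally show ?thesis .
qed

lemma part_sum:
  assumes P: "partition N B"
  shows "(\<Sum>n\<in>{1..int N}. h n) = (\<Sum>E\<in>B. \<Sum>n\<in>E. h n)"
proof -
  have "(\<Sum>n\<in>{1..int N}. h n) = (\<Sum>n\<in>\<Union>B. h n)" using P unfolding partition_def by simp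
  also have "\<dots> = (\<Sum>E\<in>B. \<Sum>n\<in>E. h n)"
  proof -
    have "\<forall>A\<in>B. finite A" using part_fin[OF P] by blast
    moreover have "\<forall>A\<in>B. \<forall>B'\<in>B. A \<noteq> B' \<longrightarrow> A \<inter> B' = {}" using P unfolding partition_def by (elim conjE) assumption
    ultimately show ?thesis using sum.Union_disjoint[of B h] by (simp add: comp_def)
  qed
  finally show ?thesis .
qed

lemma ce_inner:
  fixes h :: "int \<Rightarrow> 'a::real_algebra_1"
  assumes P: "partition N B" and hc: "\<And>E n n'. E \<in> B \<Longrightarrow> n \<in> E \<Longrightarrow> n' \<in> E \<Longrightarrow> h n = h n'"
  shows "(\<Sum>n\<in>{1..int N}. of_real (condexp B f n) * h n) = (\<Sum>n\<in>{1..int N}. of_real (f n) * h n)"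
proof -
  have "(\<Sum>n\<in>E. of_real (condexp B f n) * h n) = (\<Sum>n\<in>E. of_real (f n) * h n)" if E: "E \<in> B" for E
  proof -
    obtain n0 where n0: "n0 \<in> E" using part_ne[OF P E] by blast
    have fE: "finite E" using part_fin[OF P E] .
    have cE: "card E > 0" using fE n0 card_gt_0_iff by blast
    have "(\<Sum>n\<in>E. of_real (condexp B f n) * h n) = (\<Sum>n\<in>E. of_real ((\<Sum>m\<in>E. f m) / real (card E)) * h n0)"
      by (rule sum.cong[OF refl]) (simp add: ce_on[OF P E] hc[OF E _ n0])
    also have "\<dots> = of_nat (card E) * (of_real ((\<Sum>m\<in>E. f m) / real (card E)) * h n0)"
      by simp
    also have "\<dots> = of_real (real (card E) * ((\<Sum>m\<in>E. f m) / real (card E))) * h n0"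
      by (simp only: of_real_mult of_real_of_nat_eq mult.assoc)
    also have "\<dots> = of_real (\<Sum>m\<in>E. f m) * h n0" using cE by simp
    also have "\<dots> = (\<Sum>n\<in>E. of_real (f n) * h n)"
      by (simp add: of_real_sum sum_distrib_right hc[OF E _ n0])
    finally show ?thesis .
  qed
  then show ?thesis unfolding part_sum[OF P] by simp
qed

lemma ce_range:
  assumes P: "partition N B" and f: "\<forall>n\<in>{1..int N}. f n \<in> {0..1}" and n: "n \<in> {1..int N}"
  shows "0 \<le> condexp B f n \<and> condexp B f n \<le> 1"
proof -
  obtain E where E: "E \<in> B" "n \<in> E" using part_cover[OF P n] by blast
  have fE: "finite E" using part_fin[OF P E(1)] .
  have cE: "0 < card E" using fE E(2) card_gt_0_iff by blast
  have sub: "E \<subseteq> {1..int N}" using part_sub[OF P E(1)] .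
  have "0 \<le> (\<Sum>m\<in>E. f m)" using f sub by (intro sum_nonneg) auto
  moreover have "(\<Sum>m\<in>E. f m) \<le> (\<Sum>m\<in>E. 1)" using f sub by (intro sum_mono) auto
  ultimately show ?thesis using cE unfolding ce_on[OF P E] by (simp add: field_simps)
qed

lemma ce_const:
  assumes P: "partition N B" and E: "E \<in> B" and n: "n \<in> E" and n': "n' \<in> E"
  shows "condexp B f n = condexp B f n'"
  using ce_on[OF P E n] ce_on[OF P E n'] by simp

lemma energy_id:
  assumes P: "partition N B" and P': "partition N B'" and R: "refines B' B"
  shows "(\<Sum>n\<in>{1..int N}. (condexp B' f n - condexp B f n)^2)
       = (\<Sum>n\<in>{1..int N}. (condexp B' f n)^2) - (\<Sum>n\<in>{1..int N}. (condexp B f n)^2)"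
proof -
  have c': "condexp B f n = condexp B f n'" if "E' \<in> B'" "n \<in> E'" "n' \<in> E'" for E' n n'
  proof -
    have "\<exists>E\<in>B. E' \<subseteq> E" using R that(1) unfolding refines_def by simp
    then obtain E where E: "E \<in> B" "E' \<subseteq> E" by (elim bexE) simp
    have "n \<in> E" "n' \<in> E" using E(2) that(2,3) by auto
    then show ?thesis by (rule ce_const[OF P E(1)])
  qed
  have a: "(\<Sum>n\<in>{1..int N}. of_real (condexp B' f n) * condexp B f n) = (\<Sum>n\<in>{1..int N}. of_real (f n) * condexp B f n)"
    by (rule ce_inner[OF P']) (rule c')
  have b: "(\<Sum>n\<in>{1..int N}. of_real (condexp B f n) * condexp B f n) = (\<Sum>n\<in>{1..int N}. of_real (f n) * condexp B f n)"
    by (rule ce_inner[OF P]) (rule ce_const[OF P])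
  have "(\<Sum>n\<in>{1..int N}. (condexp B' f n - condexp B f n)^2)
     = (\<Sum>n\<in>{1..int N}. (condexp B' f n)^2) - 2 * (\<Sum>n\<in>{1..int N}. condexp B' f n * condexp B f n) + (\<Sum>n\<in>{1..int N}. (condexp B f n)^2)"
    by (simp add: power2_diff sum.distrib sum_subtractf sum_distrib_left mult.assoc)
  also have "(\<Sum>n\<in>{1..int N}. condexp B' f n * condexp B f n) = (\<Sum>n\<in>{1..int N}. (condexp B f n)^2)"
    using a b by (simp add: power2_eq_square)
  finally show ?thesis by simp
qed

lemma energy_le:
  assumes P: "partition N B" and f: "\<forall>n\<in>{1..int N}. f n \<in> {0..1}"
  shows "(\<Sum>n\<in>{1..int N}. (condexp B f n)^2) \<le> real N"
proof -
  have "(\<Sum>n\<in>{1..int N}. (condexp B f n)^2) \<le> (\<Sum>n\<in>{1..int N}. 1)"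
    using ce_range[OF P f] by (intro sum_mono) (simp add: power_le_one)
  then show ?thesis by simp
qed


lemma nilseq_bound: "nilseq s C \<psi> \<Longrightarrow> cmod (\<psi> n) \<le> C"
proof -
  assume "nilseq s C \<psi>"
  then obtain m mul c d g F A B where p: "polyseq m mul d g" and A: "A + B \<le> C" "0 \<le> B"
    "\<forall>x\<in>Vm m. cmod (F x) \<le> A" and e: "\<forall>n. \<psi> n = F (g n)"
    unfolding nilseq_def by blast
  have "gderiv mul (ginv m mul) ([]::int list) g n \<in> Gsub m d (length ([]::int list))" using p unfolding polyseq_def by blast
  then have "g n \<in> Vm m" unfolding Gsub_def by simp
  then show ?thesis using A e by force
qed

definition L2r :: "nat \<Rightarrow> (int \<Rightarrow> real) \<Rightarrow> real" where
  "L2r N u = sqrt ((\<Sum>n\<in>{1..int N}. (u n)^2) / real N)"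

lemma L2N_L2r: "L2N N h = L2r N (\<lambda>n. cmod (h n))"
  unfolding L2N_def L2r_def avgN_def by simp

lemma L2r_L2set: "L2r N u = L2_set u {1..int N} / sqrt (real N)"
  unfolding L2r_def L2_set_def by (simp add: real_sqrt_divide)

lemma L2r_mink:
  assumes "\<And>n. n \<in> {1..int N} \<Longrightarrow> \<bar>h n\<bar> \<le> u n + v n" "\<And>n. 0 \<le> u n" "\<And>n. 0 \<le> v n"
  shows "L2r N h \<le> L2r N u + L2r N v"
proof -
  have "L2_set h {1..int N} = L2_set (\<lambda>n. \<bar>h n\<bar>) {1..int N}" unfolding L2_set_def by simp
  also have "\<dots> \<le> L2_set (\<lambda>n. u n + v n) {1..int N}" by (rule L2_set_mono) (use assms in auto)
  also have "\<dots> \<le> L2_set u {1..int N} + L2_set v {1..int N}" by (rule L2_set_triangle_ineq)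
  finally have "L2_set h {1..int N} \<le> L2_set u {1..int N} + L2_set v {1..int N}" .
  then have "L2_set h {1..int N} / sqrt (real N) \<le> (L2_set u {1..int N} + L2_set v {1..int N}) / sqrt (real N)"
    by (rule divide_right_mono) simp
  then show ?thesis unfolding L2r_L2set by (simp add: add_divide_distrib)
qed

lemma L2r_bad:
  assumes "\<And>n. n \<in> {1..int N} \<Longrightarrow> \<bar>u n\<bar> \<le> 1" "\<And>n. n \<in> {1..int N} \<Longrightarrow> n \<notin> Bad \<Longrightarrow> u n = 0"
    "real (card (Bad \<inter> {1..int N})) \<le> t * real N" "0 \<le> t"
  shows "L2r N u \<le> sqrt t"
proof (cases "N = 0")
  case True then show ?thesis unfolding L2r_def using assms(4) by simp
next
  case False
  have "(\<Sum>n\<in>{1..int N}. (u n)^2) \<le> (\<Sum>n\<in>{1..int N}. if n \<in> Bad then 1 else 0)"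
  proof (rule sum_mono)
    fix n assume n: "n \<in> {1..int N}"
    show "(u n)^2 \<le> (if n \<in> Bad then 1 else 0)"
      using assms(1)[OF n] assms(2)[OF n] by (auto simp: abs_le_square_iff power_le_one abs_square_le_1)
  qed
  also have "\<dots> = real (card (Bad \<inter> {1..int N}))"
    by (simp add: sum.If_cases Int_commute)
  finally have "(\<Sum>n\<in>{1..int N}. (u n)^2) / real N \<le> t * real N / real N"
    using assms(3) False by (intro divide_right_mono) simp_all
  then have "(\<Sum>n\<in>{1..int N}. (u n)^2) / real N \<le> t" using False by simp
  then show ?thesis unfolding L2r_def by simp
qed

lemma clip_pair:
  fixes y w :: real and a :: int
  assumes e: "0 < \<eta>" and w: "0 < w" and good: "\<forall>i::int. \<eta> / 2 \<le> \<bar>y - w * of_int i\<bar>"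
  shows "clip \<eta> (y - w * of_int a) * clip \<eta> (w * (of_int a + 1) - y) = (if \<lfloor>y / w\<rfloor> = a then 1 else 0)"
proof -
  have g1: "\<eta> / 2 \<le> \<bar>y - w * of_int a\<bar>" using good by blast
  have g2: "\<eta> / 2 \<le> \<bar>y - w * of_int (a + 1)\<bar>" using good by blast
  have c1: "clip \<eta> (y - w * of_int a) = (if w * of_int a \<le> y then 1 else 0)"
  proof (cases "w * of_int a \<le> y")
    case True then have "\<eta> / 2 \<le> y - w * of_int a" using g1 by simp
    then show ?thesis using True clip_one[OF e] by simp
  next
    case False then have "y - w * of_int a \<le> - \<eta> / 2" using g1 by simp
    then show ?thesis using False clip_zero[OF e] by simp
  qed
  have c2: "clip \<eta> (w * (of_int a + 1) - y) = (if y < w * (of_int a + 1) then 1 else 0)"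
  proof (cases "y < w * (of_int a + 1)")
    case True then have "\<eta> / 2 \<le> w * (of_int a + 1) - y" using g2 by simp
    then show ?thesis using True clip_one[OF e] by simp
  next
    case False then have "w * (of_int a + 1) - y \<le> - \<eta> / 2" using g2 by simp
    then show ?thesis using False clip_zero[OF e] by simp
  qed
  have fl: "\<lfloor>y / w\<rfloor> = a \<longleftrightarrow> w * of_int a \<le> y \<and> y < w * (of_int a + 1)"
    using w by (simp add: floor_eq_iff field_simps)
  show ?thesis unfolding c1 c2 fl by auto
qed


definition jj :: "real \<Rightarrow> nat" where "jj M = nat \<lceil>8 * M^2\<rceil>"
definition XX :: "real \<Rightarrow> real \<Rightarrow> real \<Rightarrow> real" where
  "XX C0 w M = C0 + (32 * 4 ^ jj M / w) * C0 + 1"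
definition HH :: "real \<Rightarrow> real \<Rightarrow> (real \<Rightarrow> real) \<Rightarrow> real \<Rightarrow> real" where
  "HH C0 w \<Phi> M = \<Phi> (2 * M) + XX C0 w M + \<Phi> (2 * M) * XX C0 w M + 1"

definition xre :: "(int \<Rightarrow> complex) \<Rightarrow> int \<times> bool \<Rightarrow> real" where
  "xre \<psi> = (\<lambda>(n, b). if b then Re (\<psi> n) else Im (\<psi> n))"

definition Lcell :: "(int \<Rightarrow> complex) \<Rightarrow> real \<Rightarrow> real \<Rightarrow> int \<Rightarrow> int \<Rightarrow> int set" where
  "Lcell \<psi> w \<theta> a b = {n. \<lfloor>(Re (\<psi> n) - \<theta>) / w\<rfloor> = a \<and> \<lfloor>(Im (\<psi> n) - \<theta>) / w\<rfloor> = b}"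

lemma cellfun_ind:
  assumes e: "0 < \<eta>" and w: "0 < w"
    and g1: "\<forall>i::int. \<eta> / 2 \<le> \<bar>Re z - \<theta> - w * of_int i\<bar>" and g2: "\<forall>i::int. \<eta> / 2 \<le> \<bar>Im z - \<theta> - w * of_int i\<bar>"
  shows "cellfun \<eta> w \<theta> a b z = (if \<lfloor>(Re z - \<theta>) / w\<rfloor> = a \<and> \<lfloor>(Im z - \<theta>) / w\<rfloor> = b then 1 else 0)"
proof -
  have r: "clip \<eta> (Re z - \<theta> - w * of_int a) * clip \<eta> (\<theta> + w * (of_int a + 1) - Re z) = (if \<lfloor>(Re z - \<theta>) / w\<rfloor> = a then 1 else 0)"
    using clip_pair[OF e w g1, of a] by (simp add: algebra_simps)
  have i: "clip \<eta> (Im z - \<theta> - w * of_int b) * clip \<eta> (\<theta> + w * (of_int b + 1) - Im z) = (if \<lfloor>(Im z - \<theta>) / w\<rfloor> = b then 1 else 0)"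
    using clip_pair[OF e w g2, of b] by (simp add: algebra_simps)
  show ?thesis unfolding cellfun_def using r i by simp
qed

lemma jj_bound: "1 \<le> M \<Longrightarrow> sqrt (2 / 2 ^ jj M) \<le> 1 / (2 * M)"
proof -
  assume M: "1 \<le> M"
  have "8 * M^2 \<le> real (jj M)" unfolding jj_def by (rule real_nat_ceiling_ge)
  also have "real (jj M) \<le> 2 ^ jj M" using less_exp[of "jj M"] by (metis less_imp_le of_nat_le_iff of_nat_numeral of_nat_power)
  finally have h: "8 * M^2 \<le> 2 ^ jj M" .
  have Mp: "0 < M" using M by simp
  have "2 / 2 ^ jj M \<le> 2 / (8 * M^2)" using h Mp by (intro divide_left_mono) simp_all
  also have "\<dots> = (1 / (2 * M))^2" using Mp by (simp add: field_simps power2_eq_square)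
  finally have "sqrt (2 / 2 ^ jj M) \<le> sqrt ((1 / (2 * M))^2)" by (rule real_sqrt_le_mono)
  also have "sqrt ((1 / (2 * M))^2) = 1 / (2 * M)" using Mp by simp
  finally show ?thesis .
qed

lemma card_S: "card ({1..int N} \<times> (UNIV :: bool set)) = 2 * N"
  by (simp add: card_cartesian_product)

lemma cell_meas:
  fixes \<psi> :: "int \<Rightarrow> complex"
  assumes E: "smeasurable s \<Phi> N E" and psi: "nilseq s C0 \<psi>" and w: "0 < w"
    and good: "\<forall>j::nat. real (card (badset w (xre \<psi>) ({1..int N} \<times> UNIV) \<theta> (w / (16 * 4^j)))) \<le> real (card ({1..int N} \<times> (UNIV::bool set))) / 2^j"
  shows "smeasurable s (HH C0 w \<Phi>) N (E \<inter> Lcell \<psi> w \<theta> a b)"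
  unfolding smeasurable_def
proof (intro conjI allI impI)
  have Esub: "E \<subseteq> {1..int N}" using E unfolding smeasurable_def by blast
  then show "E \<inter> Lcell \<psi> w \<theta> a b \<subseteq> {1..int N}" by blast
  fix M :: real assume M: "1 \<le> M"
  have M2: "1 \<le> 2 * M" using M by simp
  obtain \<psi>E where pE: "nilseq s (\<Phi> (2 * M)) \<psi>E" and rE: "\<forall>n. \<psi>E n \<in> complex_of_real ` {0..1}"
    and lE: "L2N N (\<lambda>n. \<psi>E n - complex_of_real (indicator E n)) \<le> 1 / (2 * M)"
    using E M2 unfolding smeasurable_def by blast
  define j where "j = jj M"
  define \<eta> where "\<eta> = w / (8 * 4 ^ j)"
  have e: "0 < \<eta>" unfolding \<eta>_def using w by simp
  have e4: "4 / \<eta> = 32 * 4 ^ j / w" unfolding \<eta>_def using w by (simp add: field_simps)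
  define chi where "chi n = complex_of_real (cellfun \<eta> w \<theta> a b (\<psi> n))" for n
  have pchi: "nilseq s (XX C0 w M) chi"
  proof -
    have "nilseq s (C0 + (4 / \<eta>) * C0 + 1) (\<lambda>n. complex_of_real (cellfun \<eta> w \<theta> a b (\<psi> n)))"
      by (rule nilseq_comp[OF psi]) (use e cellfun_lip[OF e] cellfun_01 in \<open>auto simp: abs_le_iff\<close>)
    then show ?thesis unfolding chi_def XX_def e4 j_def .
  qed
  define \<psi>D where "\<psi>D n = \<psi>E n * chi n" for n
  have pD: "nilseq s (HH C0 w \<Phi> M) \<psi>D"
    unfolding \<psi>D_def HH_def by (rule nilseq_mult[OF pE pchi])
  have rD: "\<forall>n. \<psi>D n \<in> complex_of_real ` {0..1}"
  proof
    fix n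
    obtain e where e: "\<psi>E n = complex_of_real e" "0 \<le> e" "e \<le> 1" using rE by force
    have "\<psi>D n = complex_of_real (e * cellfun \<eta> w \<theta> a b (\<psi> n))" unfolding \<psi>D_def chi_def e by simp
    moreover have "e * cellfun \<eta> w \<theta> a b (\<psi> n) \<in> {0..1}" using e cellfun_01 by (simp add: mult_le_one)
    ultimately show "\<psi>D n \<in> complex_of_real ` {0..1}" by blast
  qed
  define u where "u n = cmod (\<psi>E n - complex_of_real (indicator E n))" for n
  define v where "v n = \<bar>cellfun \<eta> w \<theta> a b (\<psi> n) - indicator (Lcell \<psi> w \<theta> a b) n\<bar>" for n
  have ptw: "\<bar>cmod (\<psi>D n - complex_of_real (indicator (E \<inter> Lcell \<psi> w \<theta> a b) n))\<bar> \<le> u n + v n" for n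
  proof -
    obtain e where e: "\<psi>E n = complex_of_real e" "0 \<le> e" "e \<le> 1" using rE by force
    let ?c = "cellfun \<eta> w \<theta> a b (\<psi> n)" and ?iE = "indicator E n :: real" and ?iL = "indicator (Lcell \<psi> w \<theta> a b) n :: real"
    have c01: "0 \<le> ?c" "?c \<le> 1" using cellfun_01 by auto
    have iE: "?iE = 0 \<or> ?iE = 1" by (simp add: indicator_def)
    have ind: "indicator (E \<inter> Lcell \<psi> w \<theta> a b) n = ?iE * ?iL" by (simp add: indicator_def)
    have "cmod (\<psi>D n - complex_of_real (indicator (E \<inter> Lcell \<psi> w \<theta> a b) n)) = \<bar>e * ?c - ?iE * ?iL\<bar>"
      unfolding \<psi>D_def chi_def e ind by (metis norm_of_real of_real_diff of_real_mult)
    also have "e * ?c - ?iE * ?iL = (e - ?iE) * ?c + ?iE * (?c - ?iL)" by (simp add: algebra_simps)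
    also have "\<bar>(e - ?iE) * ?c + ?iE * (?c - ?iL)\<bar> \<le> \<bar>e - ?iE\<bar> * ?c + ?iE * \<bar>?c - ?iL\<bar>"
      using c01 iE by (auto simp: abs_mult intro: order_trans[OF abs_triangle_ineq])
    also have "\<dots> \<le> \<bar>e - ?iE\<bar> * 1 + 1 * \<bar>?c - ?iL\<bar>"
      using c01 iE by (intro add_mono mult_left_mono mult_right_mono) auto
    also have "\<bar>e - ?iE\<bar> = u n" unfolding u_def e by (metis norm_of_real of_real_diff)
    finally show ?thesis unfolding v_def by simp
  qed
  have Lu: "L2r N u \<le> 1 / (2 * M)" using lE unfolding L2N_L2r u_def .
  define Bad where "Bad = fst ` badset w (xre \<psi>) ({1..int N} \<times> UNIV) \<theta> (w / (16 * 4^j))"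
  have Lv: "L2r N v \<le> sqrt (2 / 2 ^ j)"
  proof (rule L2r_bad[where Bad = Bad])
    fix n assume "n \<in> {1..int N}"
    show "\<bar>v n\<bar> \<le> 1" unfolding v_def using cellfun_01[of \<eta> w \<theta> a b "\<psi> n"] by (auto simp: indicator_def)
  next
    fix n assume n: "n \<in> {1..int N}" and nb: "n \<notin> Bad"
    have gr: "\<forall>i::int. \<eta> / 2 \<le> \<bar>Re (\<psi> n) - \<theta> - w * of_int i\<bar>"
    proof
      fix i :: int
      have "(n, True) \<notin> badset w (xre \<psi>) ({1..int N} \<times> UNIV) \<theta> (w / (16 * 4^j))"
        using nb unfolding Bad_def by force
      then have "\<not> \<bar>Re (\<psi> n) - \<theta> - w * of_int i\<bar> < w / (16 * 4^j)" using n unfolding badset_def xre_def by auto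
      moreover have "\<eta> / 2 = w / (16 * 4^j)" unfolding \<eta>_def by simp
      ultimately show "\<eta> / 2 \<le> \<bar>Re (\<psi> n) - \<theta> - w * of_int i\<bar>" by simp
    qed
    have gi: "\<forall>i::int. \<eta> / 2 \<le> \<bar>Im (\<psi> n) - \<theta> - w * of_int i\<bar>"
    proof
      fix i :: int
      have "(n, False) \<notin> badset w (xre \<psi>) ({1..int N} \<times> UNIV) \<theta> (w / (16 * 4^j))"
        using nb unfolding Bad_def by force
      then have "\<not> \<bar>Im (\<psi> n) - \<theta> - w * of_int i\<bar> < w / (16 * 4^j)" using n unfolding badset_def xre_def by auto
      moreover have "\<eta> / 2 = w / (16 * 4^j)" unfolding \<eta>_def by simp
      ultimately show "\<eta> / 2 \<le> \<bar>Im (\<psi> n) - \<theta> - w * of_int i\<bar>" by simp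
    qed
    show "v n = 0" unfolding v_def using cellfun_ind[OF e w gr gi, of a b]
      by (simp add: indicator_def Lcell_def)
  next
    have fb: "finite (badset w (xre \<psi>) ({1..int N} \<times> UNIV) \<theta> (w / (16 * 4^j)))"
      unfolding badset_def by simp
    have "card (Bad \<inter> {1..int N}) \<le> card Bad" unfolding Bad_def using fb by (intro card_mono) auto
    also have "\<dots> \<le> card (badset w (xre \<psi>) ({1..int N} \<times> UNIV) \<theta> (w / (16 * 4^j)))"
      unfolding Bad_def by (rule card_image_le[OF fb])
    finally have "real (card (Bad \<inter> {1..int N})) \<le> real (2 * N) / 2^j"
      using good[rule_format, of j] unfolding card_S by linarith
    then show "real (card (Bad \<inter> {1..int N})) \<le> 2 / 2 ^ j * real N" by simp
  next
    show "0 \<le> 2 / (2::real) ^ j" by simp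
  qed
  have "L2N N (\<lambda>n. \<psi>D n - complex_of_real (indicator (E \<inter> Lcell \<psi> w \<theta> a b) n))
       = L2r N (\<lambda>n. cmod (\<psi>D n - complex_of_real (indicator (E \<inter> Lcell \<psi> w \<theta> a b) n)))"
    by (rule L2N_L2r)
  also have "\<dots> \<le> L2r N u + L2r N v"
    by (rule L2r_mink) (use ptw in \<open>auto simp: u_def v_def\<close>)
  also have "\<dots> \<le> 1 / (2 * M) + 1 / (2 * M)" using Lu Lv jj_bound[OF M] unfolding j_def by linarith
  also have "\<dots> = 1 / M" by simp
  finally show "\<exists>\<psi>'. nilseq s (HH C0 w \<Phi> M) \<psi>' \<and> (\<forall>n. \<psi>' n \<in> complex_of_real ` {0..1}) \<and>
       L2N N (\<lambda>n. \<psi>' n - complex_of_real (indicator (E \<inter> Lcell \<psi> w \<theta> a b) n)) \<le> 1 / M"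
    using pD rD by blast
qed


definition LL :: "real \<Rightarrow> real \<Rightarrow> nat" where "LL C0 c0 = nat \<lceil>C0 / (c0 / 4)\<rceil> + 1"

lemma floor_range:
  fixes y C w \<theta> :: real
  assumes w: "0 < w" and C: "0 \<le> C" and y: "\<bar>y\<bar> \<le> C" and th: "0 \<le> \<theta>" "\<theta> < w"
  shows "\<lfloor>(y - \<theta>) / w\<rfloor> \<in> {- int (nat \<lceil>C / w\<rceil> + 1) .. int (nat \<lceil>C / w\<rceil> + 1)}"
proof -
  have "0 \<le> C / w" using C w by simp
  then have c0: "0 \<le> \<lceil>C / w\<rceil>" by (metis ceiling_mono ceiling_zero)
  have "(y - \<theta>) / w \<le> C / w" using y th w by (simp add: divide_right_mono)
  then have "\<lfloor>(y - \<theta>) / w\<rfloor> \<le> \<lceil>C / w\<rceil>" by (meson floor_le_ceiling floor_mono order_trans)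
  moreover have "- C / w - 1 \<le> (y - \<theta>) / w"
  proof -
    have "- C - w \<le> y - \<theta>" using y th by linarith
    then have "(- C - w) / w \<le> (y - \<theta>) / w" using w by (simp add: divide_right_mono)
    then show ?thesis using w by (simp add: diff_divide_distrib)
  qed
  then have "\<lfloor>- C / w - 1\<rfloor> \<le> \<lfloor>(y - \<theta>) / w\<rfloor>" by (rule floor_mono)
  moreover have "- \<lceil>C / w\<rceil> - 1 \<le> \<lfloor>- C / w - 1\<rfloor>"
    by (simp add: ceiling_def)
  ultimately show ?thesis using c0 by simp
qed

lemma cmod_cnj_diff: "cmod (cnj a - cnj b) = cmod (a - b)" by (metis complex_cnj_diff complex_mod_cnj)

lemma cmod_le_re_im: "cmod z \<le> \<bar>Re z\<bar> + \<bar>Im z\<bar>" by (rule cmod_le)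

lemma step:
  fixes \<psi> :: "int \<Rightarrow> complex"
  assumes sf: "sfactor s N K \<Phi> B" and f: "\<forall>n\<in>{1..int N}. f n \<in> {0..1}"
    and psi: "nilseq s C0 \<psi>" and c0: "0 < c0" "c0 \<le> 1"
    and corr: "c0 \<le> cmod (avgN N (\<lambda>n. complex_of_real (f n - condexp B f n) * cnj (\<psi> n)))"
  shows "\<exists>B''. sfactor s N (K * (2 * LL C0 c0 + 1)^2) (HH C0 (c0 / 4) \<Phi>) B'' \<and> refines B'' B \<and>
        (\<Sum>n\<in>{1..int N}. (condexp B f n)^2) + (c0 / (2 * (C0 + 1)))^2 * real N \<le> (\<Sum>n\<in>{1..int N}. (condexp B'' f n)^2)"
proof -
  have P: "partition N B" using sfactor_partition[OF sf] .
  have C0: "0 \<le> C0" using nilseq_C_nonneg[OF psi] .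
  have Np: "0 < N"
  proof (rule ccontr)
    assume "\<not> 0 < N" then have "N = 0" by simp
    then show False using corr c0 unfolding avgN_def by simp
  qed
  define w where "w = c0 / 4"
  have w: "0 < w" unfolding w_def using c0 by simp
  define S where "S = {1..int N} \<times> (UNIV :: bool set)"
  have fS: "finite S" unfolding S_def by simp
  obtain \<theta> where th: "0 \<le> \<theta>" "\<theta> < w"
    and good: "\<forall>j::nat. real (card (badset w (xre \<psi>) S \<theta> (w / (16 * 4^j)))) \<le> real (card S) / 2^j"
    using good_theta[OF fS w] by blast
  define Jm where "Jm = LL C0 c0"
  define J where "J = {- int Jm .. int Jm}"
  have JmE: "Jm = nat \<lceil>C0 / w\<rceil> + 1" unfolding Jm_def LL_def w_def ..
  define cell where "cell = (\<lambda>(E, a, b). E \<inter> Lcell \<psi> w \<theta> a b)"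
  define B'' where "B'' = cell ` (B \<times> J \<times> J) - {{}}"
  have inJ: "\<lfloor>(Re (\<psi> n) - \<theta>) / w\<rfloor> \<in> J" "\<lfloor>(Im (\<psi> n) - \<theta>) / w\<rfloor> \<in> J" for n
  proof -
    have b: "cmod (\<psi> n) \<le> C0" by (rule nilseq_bound[OF psi])
    have "\<bar>Re (\<psi> n)\<bar> \<le> C0" using abs_Re_le_cmod b by (rule order_trans)
    then show "\<lfloor>(Re (\<psi> n) - \<theta>) / w\<rfloor> \<in> J" unfolding J_def JmE using floor_range[OF w C0 _ th] by blast
    have "\<bar>Im (\<psi> n)\<bar> \<le> C0" using abs_Im_le_cmod b by (rule order_trans)
    then show "\<lfloor>(Im (\<psi> n) - \<theta>) / w\<rfloor> \<in> J" unfolding J_def JmE using floor_range[OF w C0 _ th] by blast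
  qed
  have fB: "finite B" using P unfolding partition_def by blast
  have fJ: "finite J" unfolding J_def by simp
  have cJ: "card J = 2 * Jm + 1" unfolding J_def by simp
  have B''fin: "finite B''" unfolding B''_def using fB fJ by simp
  have B''card: "card B'' \<le> K * (2 * LL C0 c0 + 1)^2"
  proof -
    have "card B'' \<le> card (cell ` (B \<times> J \<times> J))" unfolding B''_def using fB fJ by (intro card_mono) auto
    also have "\<dots> \<le> card (B \<times> J \<times> J)" by (rule card_image_le) (use fB fJ in simp)
    also have "\<dots> = card B * (2 * Jm + 1)^2" using cJ by (simp add: card_cartesian_product power2_eq_square)
    also have "\<dots> \<le> K * (2 * Jm + 1)^2" using sf unfolding sfactor_def by simp
    finally show ?thesis unfolding Jm_def .
  qed
  have B''ne: "{} \<notin> B''" unfolding B''_def by simp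
  have cellsub: "X \<in> B'' \<Longrightarrow> \<exists>E a b. E \<in> B \<and> a \<in> J \<and> b \<in> J \<and> X = E \<inter> Lcell \<psi> w \<theta> a b" for X
    unfolding B''_def cell_def by auto
  have B''U: "\<Union>B'' = {1..int N}"
  proof
    show "\<Union>B'' \<subseteq> {1..int N}" using cellsub part_sub[OF P] by blast
    show "{1..int N} \<subseteq> \<Union>B''"
    proof
      fix n assume n: "n \<in> {1..int N}"
      obtain E where E: "E \<in> B" "n \<in> E" using part_cover[OF P n] by blast
      define a where "a = \<lfloor>(Re (\<psi> n) - \<theta>) / w\<rfloor>"
      define b where "b = \<lfloor>(Im (\<psi> n) - \<theta>) / w\<rfloor>"
      have nin: "n \<in> E \<inter> Lcell \<psi> w \<theta> a b" using E unfolding Lcell_def a_def b_def by simp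
      have "E \<inter> Lcell \<psi> w \<theta> a b \<in> B''" unfolding B''_def cell_def using E(1) inJ nin a_def b_def by force
      then show "n \<in> \<Union>B''" using nin by blast
    qed
  qed
  have B''disj: "\<forall>X\<in>B''. \<forall>Y\<in>B''. X \<noteq> Y \<longrightarrow> X \<inter> Y = {}"
  proof (intro ballI impI)
    fix X Y assume X: "X \<in> B''" and Y: "Y \<in> B''" and XY: "X \<noteq> Y"
    obtain E a b where Xe: "E \<in> B" "X = E \<inter> Lcell \<psi> w \<theta> a b" using cellsub[OF X] by blast
    obtain E' a' b' where Ye: "E' \<in> B" "Y = E' \<inter> Lcell \<psi> w \<theta> a' b'" using cellsub[OF Y] by blast
    show "X \<inter> Y = {}"
    proof (rule ccontr)
      assume "X \<inter> Y \<noteq> {}"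
      then obtain n where n: "n \<in> X" "n \<in> Y" by blast
      have "E = E'" using part_disj[OF P Xe(1) Ye(1)] n Xe Ye by blast
      moreover have "a = a'" "b = b'" using n Xe Ye unfolding Lcell_def by auto
      ultimately show False using XY Xe Ye by simp
    qed
  qed
  have P'': "partition N B''" unfolding partition_def using B''fin B''U B''ne B''disj by blast
  have B''meas: "\<forall>X\<in>B''. smeasurable s (HH C0 w \<Phi>) N X"
  proof
    fix X assume X: "X \<in> B''"
    obtain E a b where Xe: "E \<in> B" "X = E \<inter> Lcell \<psi> w \<theta> a b" using cellsub[OF X] by blast
    have Em: "smeasurable s \<Phi> N E" using sf Xe(1) unfolding sfactor_def by blast
    show "smeasurable s (HH C0 w \<Phi>) N X" unfolding Xe(2)
      by (rule cell_meas[OF Em psi w]) (use good in \<open>simp add: S_def\<close>)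
  qed
  have SF: "sfactor s N (K * (2 * LL C0 c0 + 1)^2) (HH C0 (c0 / 4) \<Phi>) B''"
    unfolding sfactor_def using B''fin B''U B''ne B''disj B''card B''meas unfolding w_def by blast
  have R: "refines B'' B" unfolding refines_def using cellsub by blast
  define \<psi>2 where "\<psi>2 n = Complex (\<theta> + w * \<lfloor>(Re (\<psi> n) - \<theta>) / w\<rfloor>) (\<theta> + w * \<lfloor>(Im (\<psi> n) - \<theta>) / w\<rfloor>)" for n
  have close: "cmod (\<psi> n - \<psi>2 n) \<le> 2 * w" for n
  proof -
    have fr: "0 \<le> y - w * \<lfloor>y / w\<rfloor> \<and> y - w * \<lfloor>y / w\<rfloor> \<le> w" for y
    proof -
      have a1: "of_int \<lfloor>y / w\<rfloor> \<le> y / w" "y / w < of_int \<lfloor>y / w\<rfloor> + 1" by linarith+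
      have "w * of_int \<lfloor>y / w\<rfloor> \<le> w * (y / w)" using a1(1) w by (intro mult_left_mono) simp_all
      moreover have "w * (y / w) < w * (of_int \<lfloor>y / w\<rfloor> + 1)" using a1(2) w by (intro mult_strict_left_mono) simp_all
      moreover have "w * (y / w) = y" using w by simp
      ultimately have "w * of_int \<lfloor>y / w\<rfloor> \<le> y" "y < w * (of_int \<lfloor>y / w\<rfloor> + 1)" by simp_all
      then show ?thesis by (simp add: algebra_simps)
    qed
    have "cmod (\<psi> n - \<psi>2 n) \<le> \<bar>Re (\<psi> n - \<psi>2 n)\<bar> + \<bar>Im (\<psi> n - \<psi>2 n)\<bar>" by (rule cmod_le)
    also have "\<bar>Re (\<psi> n - \<psi>2 n)\<bar> \<le> w" using fr[of "Re (\<psi> n) - \<theta>"] unfolding \<psi>2_def by (simp add: algebra_simps)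
    also have "\<bar>Im (\<psi> n - \<psi>2 n)\<bar> \<le> w" using fr[of "Im (\<psi> n) - \<theta>"] unfolding \<psi>2_def by (simp add: algebra_simps)
    finally show ?thesis by simp
  qed
  have bnd2: "cmod (\<psi>2 n) \<le> C0 + 1" for n
  proof -
    have "cmod (\<psi>2 n) \<le> cmod (\<psi> n) + cmod (\<psi> n - \<psi>2 n)" using norm_triangle_ineq4[of "\<psi> n" "\<psi> n - \<psi>2 n"] by simp
    also have "\<dots> \<le> C0 + 2 * w" using nilseq_bound[OF psi] close by (rule add_mono)
    also have "2 * w \<le> 1" unfolding w_def using c0 by simp
    finally show ?thesis by simp
  qed
  define h where "h n = cnj (\<psi>2 n)" for n
  have hc: "h n = h n'" if XX: "X \<in> B''" "n \<in> X" "n' \<in> X" for X n n'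
  proof -
    obtain E a b where Xe: "E \<in> B" "X = E \<inter> Lcell \<psi> w \<theta> a b" using cellsub[OF XX(1)] by blast
    then show ?thesis using XX unfolding h_def \<psi>2_def Lcell_def by simp
  qed
  define g where "g n = f n - condexp B f n" for n
  define D where "D n = condexp B'' f n - condexp B f n" for n
  have gb: "\<bar>g n\<bar> \<le> 1" if nN: "n \<in> {1..int N}" for n
  proof -
    have "0 \<le> f n" "f n \<le> 1" using f nN by auto
    then show ?thesis using ce_range[OF P f nN] unfolding g_def by (simp add: abs_le_iff)
  qed
  have sumgD: "(\<Sum>n\<in>{1..int N}. complex_of_real (g n) * h n) = (\<Sum>n\<in>{1..int N}. complex_of_real (D n) * h n)"
  proof -
    have "(\<Sum>n\<in>{1..int N}. of_real (condexp B'' f n) * h n) = (\<Sum>n\<in>{1..int N}. of_real (f n) * h n)"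
      by (rule ce_inner[OF P'' hc])
    then show ?thesis unfolding g_def D_def by (simp add: algebra_simps sum_subtractf)
  qed
  have c1: "c0 * real N \<le> cmod (\<Sum>n\<in>{1..int N}. complex_of_real (g n) * cnj (\<psi> n))"
    using corr Np unfolding avgN_def g_def by (simp add: norm_divide field_simps)
  have c2: "cmod ((\<Sum>n\<in>{1..int N}. complex_of_real (g n) * cnj (\<psi> n)) - (\<Sum>n\<in>{1..int N}. complex_of_real (g n) * h n))
      \<le> real N * (2 * w)"
  proof -
    have "cmod ((\<Sum>n\<in>{1..int N}. complex_of_real (g n) * cnj (\<psi> n)) - (\<Sum>n\<in>{1..int N}. complex_of_real (g n) * h n))
        = cmod (\<Sum>n\<in>{1..int N}. complex_of_real (g n) * cnj (\<psi> n - \<psi>2 n))"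
      unfolding h_def by (simp add: sum_subtractf algebra_simps)
    also have "\<dots> \<le> (\<Sum>n\<in>{1..int N}. cmod (complex_of_real (g n) * cnj (\<psi> n - \<psi>2 n)))" by (rule norm_sum)
    also have "\<dots> \<le> (\<Sum>n\<in>{1..int N}. 2 * w)"
    proof (rule sum_mono)
      fix n assume n: "n \<in> {1..int N}"
      have "cmod (complex_of_real (g n) * cnj (\<psi> n - \<psi>2 n)) = \<bar>g n\<bar> * cmod (\<psi> n - \<psi>2 n)"
        by (simp add: norm_mult cmod_cnj_diff)
      also have "\<dots> \<le> 1 * (2 * w)" using gb[OF n] close w by (intro mult_mono) simp_all
      finally show "cmod (complex_of_real (g n) * cnj (\<psi> n - \<psi>2 n)) \<le> 2 * w" by simp
    qed
    also have "\<dots> = real N * (2 * w)" by simp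
    finally show ?thesis .
  qed
  have c3: "c0 * real N / 2 \<le> cmod (\<Sum>n\<in>{1..int N}. complex_of_real (D n) * h n)"
  proof -
    have "cmod (\<Sum>n\<in>{1..int N}. complex_of_real (g n) * cnj (\<psi> n)) \<le>
        cmod (\<Sum>n\<in>{1..int N}. complex_of_real (g n) * h n) + real N * (2 * w)"
      using c2 norm_triangle_sub[of "(\<Sum>n\<in>{1..int N}. complex_of_real (g n) * cnj (\<psi> n))" "(\<Sum>n\<in>{1..int N}. complex_of_real (g n) * h n)"]
      by linarith
    moreover have "real N * (2 * w) = c0 * real N / 2" unfolding w_def by simp
    ultimately have "cmod (\<Sum>n\<in>{1..int N}. complex_of_real (g n) * cnj (\<psi> n)) \<le>
        cmod (\<Sum>n\<in>{1..int N}. complex_of_real (D n) * h n) + c0 * real N / 2" using sumgD by simp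
    then show ?thesis using c1 by linarith
  qed
  define a where "a = c0 / (2 * (C0 + 1))"
  have a0: "0 < a" unfolding a_def using c0 C0 by simp
  have c4: "a * real N \<le> (\<Sum>n\<in>{1..int N}. \<bar>D n\<bar>)"
  proof -
    have "cmod (\<Sum>n\<in>{1..int N}. complex_of_real (D n) * h n) \<le> (\<Sum>n\<in>{1..int N}. cmod (complex_of_real (D n) * h n))"
      by (rule norm_sum)
    also have "\<dots> \<le> (\<Sum>n\<in>{1..int N}. \<bar>D n\<bar> * (C0 + 1))"
      by (rule sum_mono) (simp add: norm_mult h_def mult_left_mono bnd2)
    also have "\<dots> = (C0 + 1) * (\<Sum>n\<in>{1..int N}. \<bar>D n\<bar>)" by (simp add: sum_distrib_left mult.commute)
    finally have "c0 * real N / 2 \<le> (C0 + 1) * (\<Sum>n\<in>{1..int N}. \<bar>D n\<bar>)" using c3 by linarith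
    then show ?thesis unfolding a_def using C0 by (simp add: field_simps)
  qed
  have c5: "a^2 * real N \<le> (\<Sum>n\<in>{1..int N}. (D n)^2)"
  proof -
    have "(\<Sum>n\<in>{1..int N}. 2 * a * \<bar>D n\<bar> - a^2) \<le> (\<Sum>n\<in>{1..int N}. (D n)^2)"
    proof (rule sum_mono)
      fix n
      have "0 \<le> (\<bar>D n\<bar> - a)^2" by simp
      then show "2 * a * \<bar>D n\<bar> - a^2 \<le> (D n)^2" by (simp add: power2_diff power2_abs algebra_simps)
    qed
    moreover have "(\<Sum>n\<in>{1..int N}. 2 * a * \<bar>D n\<bar> - a^2) = 2 * a * (\<Sum>n\<in>{1..int N}. \<bar>D n\<bar>) - a^2 * real N"
      by (simp add: sum_subtractf sum_distrib_left)
    moreover have "2 * a * (a * real N) \<le> 2 * a * (\<Sum>n\<in>{1..int N}. \<bar>D n\<bar>)" using c4 a0 by simp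
    ultimately show ?thesis by (simp add: power2_eq_square) 
  qed
  have "(\<Sum>n\<in>{1..int N}. (D n)^2) = (\<Sum>n\<in>{1..int N}. (condexp B'' f n)^2) - (\<Sum>n\<in>{1..int N}. (condexp B f n)^2)"
    unfolding D_def by (rule energy_id[OF P P'' R])
  then have "(\<Sum>n\<in>{1..int N}. (condexp B f n)^2) + a^2 * real N \<le> (\<Sum>n\<in>{1..int N}. (condexp B'' f n)^2)"
    using c5 by linarith
  then show ?thesis using SF R unfolding a_def by blast
qed


lemma jj_mono: "0 < x \<Longrightarrow> x \<le> y \<Longrightarrow> jj x \<le> jj y"
proof -
  assume "0 < x" "x \<le> y"
  then have "8 * x^2 \<le> 8 * y^2" by (simp add: power_mono)
  then show ?thesis unfolding jj_def by (intro nat_mono ceiling_mono)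
qed

lemma XX_mono: "0 \<le> C0 \<Longrightarrow> 0 < w \<Longrightarrow> 0 < x \<Longrightarrow> x \<le> y \<Longrightarrow> XX C0 w x \<le> XX C0 w y"
proof -
  assume C0: "0 \<le> C0" and w: "0 < w" and xy: "0 < x" "x \<le> y"
  have "(4::real) ^ jj x \<le> 4 ^ jj y" using jj_mono[OF xy] by (simp add: power_increasing)
  then have "32 * 4 ^ jj x / w \<le> 32 * 4 ^ jj y / w" using w by (simp add: divide_right_mono)
  then have "(32 * 4 ^ jj x / w) * C0 \<le> (32 * 4 ^ jj y / w) * C0" using C0 by (rule mult_right_mono)
  then show ?thesis unfolding XX_def by simp
qed

lemma XX_pos: "0 \<le> C0 \<Longrightarrow> 0 < w \<Longrightarrow> 1 \<le> XX C0 w x"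
  unfolding XX_def by simp

lemma growth_HH:
  assumes g: "growth \<Phi>" and C0: "0 \<le> C0" and w: "0 < w"
  shows "growth (HH C0 w \<Phi>)"
  unfolding growth_def
proof (intro conjI allI impI)
  fix x y :: real assume x: "0 < x" and xy: "x \<le> y"
  have p1: "\<Phi> (2 * x) \<le> \<Phi> (2 * y)" using g x xy unfolding growth_def by simp
  have p0: "0 \<le> \<Phi> (2 * x)" using g x unfolding growth_def by (metis less_eq_real_def mult_pos_pos order_trans zero_less_numeral)
  have q1: "XX C0 w x \<le> XX C0 w y" by (rule XX_mono[OF C0 w x xy])
  have q0: "0 \<le> XX C0 w x" using XX_pos[OF C0 w, of x] by simp
  have "\<Phi> (2 * x) * XX C0 w x \<le> \<Phi> (2 * y) * XX C0 w y" using p1 q1 p0 q0 by (intro mult_mono) simp_all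
  then show "HH C0 w \<Phi> x \<le> HH C0 w \<Phi> y" unfolding HH_def using p1 q1 by simp
next
  fix x :: real assume x: "0 < x"
  have p: "2 * x \<le> \<Phi> (2 * x)" using g x unfolding growth_def by simp
  have q0: "0 \<le> XX C0 w x" using XX_pos[OF C0 w, of x] by simp
  have "0 \<le> \<Phi> (2 * x) * XX C0 w x" using p x q0 by simp
  then show "x \<le> HH C0 w \<Phi> x" unfolding HH_def using p x q0 by linarith
qed

lemma HH_ge: assumes g: "growth \<Phi>" and C0: "0 \<le> C0" and w: "0 < w" and x: "0 < x"
  shows "\<Phi> x \<le> HH C0 w \<Phi> x"
proof -
  have "\<Phi> x \<le> \<Phi> (2 * x)" using g x unfolding growth_def by simp
  moreover have p: "2 * x \<le> \<Phi> (2 * x)" using g x unfolding growth_def by simp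
  moreover have q0: "0 \<le> XX C0 w x" using XX_pos[OF C0 w, of x] by simp
  moreover have "0 \<le> \<Phi> (2 * x) * XX C0 w x" using p x q0 by simp
  ultimately show ?thesis unfolding HH_def by simp
qed

lemma growth_iter: "growth \<Phi> \<Longrightarrow> 0 \<le> C0 \<Longrightarrow> 0 < w \<Longrightarrow> growth ((HH C0 w ^^ k) \<Phi>)"
  by (induction k) (simp_all add: growth_HH)

lemma iter_mono: assumes "growth \<Phi>" "0 \<le> C0" "0 < w" "0 < x" "k \<le> k'"
  shows "(HH C0 w ^^ k) \<Phi> x \<le> (HH C0 w ^^ k') \<Phi> x"
  using assms(5)
proof (induction k' rule: dec_induct)
  case base then show ?case by simp
next
  case (step k')
  have "(HH C0 w ^^ k') \<Phi> x \<le> HH C0 w ((HH C0 w ^^ k') \<Phi>) x"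
    by (rule HH_ge[OF growth_iter[OF assms(1-3)] assms(2,3,4)])
  then show ?case using step by simp
qed

lemma smeasurable_mono: "smeasurable s \<Phi> N E \<Longrightarrow> (\<And>x. 1 \<le> x \<Longrightarrow> \<Phi> x \<le> \<Phi>' x) \<Longrightarrow> smeasurable s \<Phi>' N E"
  unfolding smeasurable_def using nilseq_mono by blast

lemma sfactor_mono: "sfactor s N K \<Phi> B \<Longrightarrow> K \<le> K' \<Longrightarrow> (\<And>x. 1 \<le> x \<Longrightarrow> \<Phi> x \<le> \<Phi>' x) \<Longrightarrow> sfactor s N K' \<Phi>' B"
  unfolding sfactor_def using smeasurable_mono by (meson order_trans)

lemma refines_refl: "refines B B" unfolding refines_def by blast
lemma refines_trans: "refines A B \<Longrightarrow> refines B C \<Longrightarrow> refines A C"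
  unfolding refines_def by (meson order_trans)

lemma gowersU_0: "gowersU k 0 f = 0"
  unfolding gowersU_def gsum_def by simp


lemma iter_main:
  fixes f :: "int \<Rightarrow> real"
  assumes C: "0 \<le> C" and c0: "0 < c0" "c0 \<le> 1" and g: "growth \<Phi>"
    and GIc: "\<And>B. partition N B \<Longrightarrow> \<not> gowersU (s + 1) N (\<lambda>n. complex_of_real (f n - condexp B f n)) \<le> \<epsilon> \<Longrightarrow>
       \<exists>\<psi>. nilseq s C \<psi> \<and> c0 \<le> cmod (avgN N (\<lambda>n. complex_of_real (f n - condexp B f n) * cnj (\<psi> n)))"
    and f: "\<forall>n\<in>{1..int N}. f n \<in> {0..1}"
  shows "sfactor s N (M * ((2 * LL C c0 + 1)^2)^k) ((HH C (c0 / 4) ^^ k) \<Phi>) B \<Longrightarrow> refines B B0 \<Longrightarrow>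
    real N < (\<Sum>n\<in>{1..int N}. (condexp B f n)^2) + real t * (c0 / (2 * (C + 1)))^2 * real N \<Longrightarrow>
    \<exists>B'. sfactor s N (M * ((2 * LL C c0 + 1)^2)^(k + t)) ((HH C (c0 / 4) ^^ (k + t)) \<Phi>) B' \<and> refines B' B0 \<and>
       gowersU (s + 1) N (\<lambda>n. complex_of_real (f n - condexp B' f n)) \<le> \<epsilon>"
proof (induction t arbitrary: k B)
  case 0
  have "(\<Sum>n\<in>{1..int N}. (condexp B f n)^2) \<le> real N"
    by (rule energy_le[OF sfactor_partition[OF 0(1)] f])
  then show ?case using 0(3) by simp
next
  case (Suc t)
  let ?L = "(2 * LL C c0 + 1)^2" and ?H = "HH C (c0 / 4)"
  have w: "0 < c0 / 4" using c0 by simp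
  have L1: "1 \<le> ?L" by simp
  show ?case
  proof (cases "gowersU (s + 1) N (\<lambda>n. complex_of_real (f n - condexp B f n)) \<le> \<epsilon>")
    case True
    have "sfactor s N (M * ?L^(k + Suc t)) ((?H ^^ (k + Suc t)) \<Phi>) B"
    proof (rule sfactor_mono[OF Suc(2)])
      show "M * ?L ^ k \<le> M * ?L ^ (k + Suc t)" using L1 by (intro mult_le_mono2 power_increasing) simp_all
      fix x :: real assume "1 \<le> x"
      then show "(?H ^^ k) \<Phi> x \<le> (?H ^^ (k + Suc t)) \<Phi> x" by (intro iter_mono[OF g C w]) simp_all
    qed
    then show ?thesis using True Suc(3) by blast
  next
    case False
    obtain \<psi> where psi: "nilseq s C \<psi>"
      and cor: "c0 \<le> cmod (avgN N (\<lambda>n. complex_of_real (f n - condexp B f n) * cnj (\<psi> n)))"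
      using GIc[OF sfactor_partition[OF Suc(2)] False] by blast
    obtain B'' where B'': "sfactor s N (M * ?L^k * ?L) (?H ((?H ^^ k) \<Phi>)) B''" and R: "refines B'' B"
      and en: "(\<Sum>n\<in>{1..int N}. (condexp B f n)^2) + (c0 / (2 * (C + 1)))^2 * real N \<le> (\<Sum>n\<in>{1..int N}. (condexp B'' f n)^2)"
      using step[OF Suc(2) f psi c0 cor] by blast
    have eq1: "M * ?L^k * ?L = M * ?L^(Suc k)" by (simp only: power_Suc2 mult.assoc)
    have eq2: "(?H ^^ Suc k) \<Phi> = ?H ((?H ^^ k) \<Phi>)" by simp
    have B''2: "sfactor s N (M * ?L^(Suc k)) ((?H ^^ (Suc k)) \<Phi>) B''"
      using B'' by (simp only: eq1[symmetric] eq2)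
    have R2: "refines B'' B0" using refines_trans[OF R Suc(3)] .
    have E2: "real N < (\<Sum>n\<in>{1..int N}. (condexp B'' f n)^2) + real t * (c0 / (2 * (C + 1)))^2 * real N"
      using Suc(4) en by (simp add: algebra_simps)
    obtain B' where "sfactor s N (M * ?L^(Suc k + t)) ((?H ^^ (Suc k + t)) \<Phi>) B'" "refines B' B0"
      "gowersU (s + 1) N (\<lambda>n. complex_of_real (f n - condexp B' f n)) \<le> \<epsilon>"
      using Suc.IH[OF B''2 R2 E2] by blast
    then show ?thesis by (metis add_Suc_shift)
  qed
qed

theorem mainTheorem9:
  fixes s :: nat
  assumes "1 \<le> s" and "GI s"
  shows "\<forall>(M::nat) (\<epsilon>::real). \<epsilon> > 0 \<longrightarrow>
           (\<exists>K::nat. \<forall>\<Phi>. growth \<Phi> \<longrightarrow>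
              (\<exists>\<Phi>'. growth \<Phi>' \<and>
                 (\<forall>(N::nat) B (f::int \<Rightarrow> real).
                    sfactor s N M \<Phi> B \<longrightarrow> (\<forall>n\<in>{1..int N}. f n \<in> {0..1}) \<longrightarrow>
                    (\<exists>B'. sfactor s N K \<Phi>' B' \<and> refines B' B \<and>
                       gowersU (s + 1) N (\<lambda>n. complex_of_real (f n - condexp B' f n)) \<le> \<epsilon>))))"
proof (intro allI impI)
  fix M :: nat and \<epsilon> :: real assume eps: "\<epsilon> > 0"
  obtain C c where Cc: "C > 0" "c > 0" and GIc: "\<forall>N::nat. \<forall>f::int \<Rightarrow> complex. (\<forall>n\<in>{1..int N}. cmod (f n) \<le> 1) \<longrightarrow>
        gowersU (s + 1) N f \<ge> \<epsilon> \<longrightarrow>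
        (\<exists>\<psi>. nilseq s C \<psi> \<and> cmod (avgN N (\<lambda>n. f n * cnj (\<psi> n))) \<ge> c)"
    using assms(2) eps unfolding GI_def by blast
  define c0 where "c0 = min c 1"
  have c0: "0 < c0" "c0 \<le> 1" "c0 \<le> c" unfolding c0_def using Cc by auto
  define L where "L = (2 * LL C c0 + 1)^2"
  define inc where "inc = (c0 / (2 * (C + 1)))^2"
  have inc: "0 < inc" unfolding inc_def using c0 Cc by simp
  define T where "T = nat \<lceil>1 / inc\<rceil> + 1"
  have T: "1 < real T * inc"
  proof -
    have "1 / inc \<le> real (nat \<lceil>1 / inc\<rceil>)" by (rule real_nat_ceiling_ge)
    then have "1 / inc < real T" unfolding T_def by simp
    then show ?thesis using inc by (simp add: field_simps)
  qed
  define K where "K = M * L^T"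
  show "\<exists>K::nat. \<forall>\<Phi>. growth \<Phi> \<longrightarrow>
              (\<exists>\<Phi>'. growth \<Phi>' \<and>
                 (\<forall>(N::nat) B (f::int \<Rightarrow> real).
                    sfactor s N M \<Phi> B \<longrightarrow> (\<forall>n\<in>{1..int N}. f n \<in> {0..1}) \<longrightarrow>
                    (\<exists>B'. sfactor s N K \<Phi>' B' \<and> refines B' B \<and>
                       gowersU (s + 1) N (\<lambda>n. complex_of_real (f n - condexp B' f n)) \<le> \<epsilon>)))"
  proof (intro exI[of _ K] allI impI)
    fix \<Phi> :: "real \<Rightarrow> real" assume g: "growth \<Phi>"
    have w: "0 < c0 / 4" using c0 by simp
    have C0: "0 \<le> C" using Cc by simp
    define \<Phi>' where "\<Phi>' = (HH C (c0 / 4) ^^ T) \<Phi>"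
    show "\<exists>\<Phi>'. growth \<Phi>' \<and>
                 (\<forall>(N::nat) B (f::int \<Rightarrow> real).
                    sfactor s N M \<Phi> B \<longrightarrow> (\<forall>n\<in>{1..int N}. f n \<in> {0..1}) \<longrightarrow>
                    (\<exists>B'. sfactor s N K \<Phi>' B' \<and> refines B' B \<and>
                       gowersU (s + 1) N (\<lambda>n. complex_of_real (f n - condexp B' f n)) \<le> \<epsilon>))"
    proof (intro exI[of _ \<Phi>'] conjI allI impI)
      show "growth \<Phi>'" unfolding \<Phi>'_def by (rule growth_iter[OF g C0 w])
      fix N :: nat and B and f :: "int \<Rightarrow> real"
      assume sf: "sfactor s N M \<Phi> B" and f: "\<forall>n\<in>{1..int N}. f n \<in> {0..1}"
      have sf0: "sfactor s N (M * L^0) ((HH C (c0 / 4) ^^ 0) \<Phi>) B" using sf by simp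
      show "\<exists>B'. sfactor s N K \<Phi>' B' \<and> refines B' B \<and>
                       gowersU (s + 1) N (\<lambda>n. complex_of_real (f n - condexp B' f n)) \<le> \<epsilon>"
      proof (cases "N = 0")
        case True
        have "sfactor s N K \<Phi>' B"
        proof (rule sfactor_mono[OF sf0])
          show "M * L ^ 0 \<le> K" unfolding K_def L_def by (simp add: Suc_le_eq)
          fix x :: real assume "1 \<le> x"
          then show "(HH C (c0 / 4) ^^ 0) \<Phi> x \<le> \<Phi>' x" unfolding \<Phi>'_def by (intro iter_mono[OF g C0 w]) simp_all
        qed
        then show ?thesis using True eps refines_refl gowersU_0 by (metis less_eq_real_def)
      next
        case False
        have GIc': "\<exists>\<psi>. nilseq s C \<psi> \<and> c0 \<le> cmod (avgN N (\<lambda>n. complex_of_real (f n - condexp B' f n) * cnj (\<psi> n)))"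
          if P: "partition N B'" and ng: "\<not> gowersU (s + 1) N (\<lambda>n. complex_of_real (f n - condexp B' f n)) \<le> \<epsilon>" for B'
        proof -
          have bd: "\<forall>n\<in>{1..int N}. cmod (complex_of_real (f n - condexp B' f n)) \<le> 1"
          proof
            fix n assume n: "n \<in> {1..int N}"
            have "0 \<le> f n" "f n \<le> 1" using f n by auto
            moreover have "cmod (complex_of_real (f n - condexp B' f n)) = \<bar>f n - condexp B' f n\<bar>" by (rule norm_of_real)
            ultimately show "cmod (complex_of_real (f n - condexp B' f n)) \<le> 1"
              using ce_range[OF P f n] by linarith
          qed
          have ge: "gowersU (s + 1) N (\<lambda>n. complex_of_real (f n - condexp B' f n)) \<ge> \<epsilon>" using ng by simp
          have "\<exists>\<psi>. nilseq s C \<psi> \<and> cmod (avgN N (\<lambda>n. complex_of_real (f n - condexp B' f n) * cnj (\<psi> n))) \<ge> c"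
            using GIc[THEN spec[of _ N], THEN spec[of _ "\<lambda>n. complex_of_real (f n - condexp B' f n)"]] bd ge by blast
          then obtain \<psi> where "nilseq s C \<psi>" "cmod (avgN N (\<lambda>n. complex_of_real (f n - condexp B' f n) * cnj (\<psi> n))) \<ge> c"
            by blast
          then show ?thesis using c0(3) by (meson order_trans)
        qed
        have en0: "0 \<le> (\<Sum>n\<in>{1..int N}. (condexp B f n)^2)" by (simp add: sum_nonneg)
        have "real N < real T * inc * real N" using T False by simp
        then have E: "real N < (\<Sum>n\<in>{1..int N}. (condexp B f n)^2) + real T * (c0 / (2 * (C + 1)))^2 * real N"
          using en0 unfolding inc_def by linarith
        obtain B' where "sfactor s N (M * ((2 * LL C c0 + 1)^2)^(0 + T)) ((HH C (c0 / 4) ^^ (0 + T)) \<Phi>) B'"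
          "refines B' B" "gowersU (s + 1) N (\<lambda>n. complex_of_real (f n - condexp B' f n)) \<le> \<epsilon>"
          using iter_main[OF C0 c0(1,2) g GIc' f, where M=M and k=0 and B=B and B0=B and t=T] sf0 refines_refl E unfolding L_def by blast
        then show ?thesis unfolding K_def L_def \<Phi>'_def by auto
      qed
    qed
  qed
qed


end
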